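(* Let $T'$ be a standard tableau of degree $n\ge4$ and let $u$ be the subword of its reading word formed by the letters $1,2,3,4$. Let $\Sigma_{n-4}$ denote the sum of all standard tableaux of degree $n-4$. Then $T'$ appears as a term of (a) $\mathbb B_2^{(0)}\mathbb B_2^{(0)}\Sigma_{n-4}$ iff $u\in\{1234,4123,3412\}$; (b) $\mathbb B_2^{(0)}\mathbb B_2^{(1)}\Sigma_{n-4}$ iff $u\in\{4312,3124\}$; (c) $\mathbb B_2^{(1)}\mathbb B_2^{(0)}\Sigma_{n-4}$ iff $u\in\{4213,2134\}$; (d) $\mathbb B_2^{(1)}\mathbb B_2^{(1)}\Sigma_{n-4}$ iff $u\in\{4321,3214,2413\}$.
   Context: Tableaux (French convention: rows of lengths $\lambda_1\ge\lambda_2\ge\cdots$ from bottom to top). A tableau is identified with (shape, reading word), the reading word listing the entries row by row from top row to bottom row, each row left to right; word operators act on tableaux via reading words, keeping the shape. Standard tableau of degree $n$: rows increase left to right, columns increase upwards, entries $1,\dots,n$ each once (degree $0$: the empty tableau). $T^t$ is the transpose (reflection of diagram and entries across the main diagonal). Word operators (compositions act right to left): $\tau_1$ adds $1$ to every letter; $r_{(11\to01)}$, on a word with exactly two letters $1$, replaces the first by $0$; for a word with $(\mathrm{ev}_a,\mathrm{ev}_{a+1})\in\{(1,2),(2,1)\}$ ($\mathrm{ev}_i$ = number of occurrences of $i$), $\sigma_a$ replaces the subword of letters in $\{a,b\}$, $b=a+1$, in place, via $aab\leftrightarrow abb$, $aba\leftrightarrow bba$, $baa\leftrightarrow bab$.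 For a tableau $T$ of degree $n$, $A_{n+1,n+1}T$ is the sum of all tableaux obtained by adding two cells containing $n+1$ so that the new shape is a partition diagram and the two new cells lie in different columns. Operators and transposition extend linearly to $\mathbb Z$-linear combinations of tableaux. For standard $T$ of degree $n$: $\mathbb B_2^{(0)}T=\tau_1r_{(11\to01)}\sigma_1\sigma_2\cdots\sigma_nA_{n+1,n+1}T$ and $\mathbb B_2^{(1)}T=(\mathbb B_2^{(0)}T^t)^t$. *)

theory Defs
  imports Main
begin

(* A tableau is a pair (shape, reading word).  The shape lists row lengths
   bottom to top (French convention); the reading word lists the rows from the
   top row down to the bottom row, each row left to right. *)
type_synonym tab = "nat list \<times> nat list"

(* Z-linear combinations of tableaux: coefficient functions *)
type_synonym comb = "tab \<Rightarrow> int"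

definition is_partition :: "nat list \<Rightarrow> bool" where
  "is_partition la \<longleftrightarrow> sorted_wrt (\<lambda>x y. x \<ge> y) la \<and> (\<forall>x\<in>set la. 0 < x)"

(* rows of a tableau, bottom row first *)
fun rows :: "nat list \<Rightarrow> nat list \<Rightarrow> nat list list" where
  "rows [] w = []"
| "rows (l # ls) w = drop (sum_list ls) w # rows ls (take (sum_list ls) w)"

definition word_of_rows :: "nat list list \<Rightarrow> nat list" where
  "word_of_rows rs = concat (rev rs)"

(* entry in row i (from the bottom), column j (from the left), 0-indexed *)
definition entry :: "tab \<Rightarrow> nat \<Rightarrow> nat \<Rightarrow> nat" where
  "entry t i j = rows (fst t) (snd t) ! i ! j"

definition cells :: "nat list \<Rightarrow> (nat \<times> nat) set" where
  "cells la = {(i, j). i < length la \<and> j < la ! i}"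

definition standard :: "nat \<Rightarrow> tab \<Rightarrow> bool" where
  "standard n t \<longleftrightarrow>
     (let la = fst t; w = snd t; rs = rows la w in
       is_partition la \<and> sum_list la = n \<and> length w = n \<and>
       distinct w \<and> set w = {1..n} \<and>
       (\<forall>i < length la. sorted_wrt (<) (rs ! i)) \<and>
       (\<forall>i j. Suc i < length la \<and> j < la ! Suc i \<longrightarrow> rs ! i ! j < rs ! Suc i ! j))"

definition conj_part :: "nat list \<Rightarrow> nat list" where
  "conj_part la = map (\<lambda>j. length (filter (\<lambda>l. j < l) la)) [0..<foldr max la 0]"

definition transpose_tab :: "tab \<Rightarrow> tab" where
  "transpose_tab t =
     (let mu = conj_part (fst t) in
       (mu, word_of_rows (map (\<lambda>i. map (\<lambda>j. entry t j i) [0..<mu ! i]) [0..<length mu])))"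

definition tau1 :: "nat list \<Rightarrow> nat list" where
  "tau1 w = map Suc w"

fun zero_first_one :: "nat list \<Rightarrow> nat list" where
  "zero_first_one [] = []"
| "zero_first_one (x # xs) = (if x = 1 then 0 # xs else x # zero_first_one xs)"

(* r_(11->01); identity outside its domain (never used there) *)
definition r1101 :: "nat list \<Rightarrow> nat list" where
  "r1101 w = (if count_list w 1 = 2 then zero_first_one w else w)"

definition sw3 :: "nat \<Rightarrow> nat \<Rightarrow> nat list \<Rightarrow> nat list" where
  "sw3 a b xs =
     (if xs = [a,a,b] then [a,b,b] else if xs = [a,b,b] then [a,a,b]
      else if xs = [a,b,a] then [b,b,a] else if xs = [b,b,a] then [a,b,a]
      else if xs = [b,a,a] then [b,a,b] else if xs = [b,a,b] then [b,a,a]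
      else xs)"

fun fill_sub :: "(nat \<Rightarrow> bool) \<Rightarrow> nat list \<Rightarrow> nat list \<Rightarrow> nat list" where
  "fill_sub P ys [] = []"
| "fill_sub P ys (x # xs) =
     (if P x then (case ys of [] \<Rightarrow> x # fill_sub P [] xs | y # ys' \<Rightarrow> y # fill_sub P ys' xs)
      else x # fill_sub P ys xs)"

(* sigma_a; identity outside its domain (never used there) *)
definition sigma :: "nat \<Rightarrow> nat list \<Rightarrow> nat list" where
  "sigma a w =
     (let b = Suc a; P = (\<lambda>x. x = a \<or> x = b) in
      if (count_list w a, count_list w b) \<in> {(1,2), (2,1)}
      then fill_sub P (sw3 a b (filter P w)) w else w)"

(* sigma_1 sigma_2 ... sigma_n (sigma_n applied first) *)
definition sigma_chain :: "nat \<Rightarrow> nat list \<Rightarrow> nat list" where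
  "sigma_chain n w = foldr sigma [1..<Suc n] w"

(* A_{n+1,n+1}: the set of tableaux obtained by adding two cells filled with n+1
   (new shape a partition, new cells in different columns); the operator is the
   sum of these tableaux *)
definition A_set :: "tab \<Rightarrow> tab set" where
  "A_set t =
     (let la = fst t; w = snd t; n = length w;
          oldrow = (\<lambda>i. if i < length la then rows la w ! i else []) in
      {(mu, word_of_rows (map (\<lambda>i. oldrow i @ replicate (mu ! i - length (oldrow i)) (Suc n))
                              [0..<length mu])) | mu.
         is_partition mu \<and> cells la \<subseteq> cells mu \<and> card (cells mu - cells la) = 2 \<and>
         (\<forall>c \<in> cells mu - cells la. \<forall>d \<in> cells mu - cells la. c \<noteq> d \<longrightarrow> snd c \<noteq> snd d)})"

definition delta :: "tab \<Rightarrow> comb" where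
  "delta s = (\<lambda>t. of_bool (s = t))"

definition lin :: "(tab \<Rightarrow> comb) \<Rightarrow> comb \<Rightarrow> comb" where
  "lin F c = (\<lambda>t'. \<Sum>t \<in> {t. c t \<noteq> 0}. c t * F t t')"

(* B_2^(0) T = tau_1 r_(11->01) sigma_1 ... sigma_n A_{n+1,n+1} T, n = degree of T *)
definition B0 :: "tab \<Rightarrow> comb" where
  "B0 t = (\<lambda>t'. \<Sum>s \<in> A_set t.
      of_bool ((fst s, tau1 (r1101 (sigma_chain (length (snd t)) (snd s)))) = t'))"

(* B_2^(1) T = (B_2^(0) T^t)^t, transpose extended linearly *)
definition B1 :: "tab \<Rightarrow> comb" where
  "B1 t = lin (\<lambda>s. delta (transpose_tab s)) (B0 (transpose_tab t))"

definition Sigma_std :: "nat \<Rightarrow> comb" where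
  "Sigma_std m = (\<lambda>t. of_bool (standard m t))"

end

theory Submission
  imports Defs
begin

definition idx :: "nat list \<Rightarrow> nat \<Rightarrow> nat \<Rightarrow> nat" where
  "idx la i j = sum_list (drop (Suc i) la) + j"

lemma length_rows[simp]: "length (rows la w) = length la"
  by (induction la arbitrary: w) auto

lemma rows_nth:
  assumes "length w = sum_list la" "i < length la"
  shows "rows la w ! i = take (la!i) (drop (sum_list (drop (Suc i) la)) w)"
  using assms
proof (induction la arbitrary: w i)
  case Nil thus ?case by simp
next
  case (Cons l ls)
  show ?case
  proof (cases i)
    case 0 thus ?thesis using Cons.prems by simp
  next
    case (Suc k)
    have k: "k < length ls" using Cons.prems Suc by simp
    have "rows (l#ls) w ! i = rows ls (take (sum_list ls) w) ! k" using Suc by simp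
    also have "\<dots> = take (ls!k) (drop (sum_list (drop (Suc k) ls)) (take (sum_list ls) w))"
      using Cons.IH[of "take (sum_list ls) w" k] Cons.prems k by simp
    also have "\<dots> = take (ls!k) (drop (sum_list (drop (Suc k) ls)) w)"
    proof -
      have "sum_list ls = sum_list (take (Suc k) ls) + sum_list (drop (Suc k) ls)"
        by (metis add.commute append_take_drop_id sum_list_append)
      moreover have "sum_list (take (Suc k) ls) \<ge> ls!k"
        using k by (simp add: take_Suc_conv_app_nth)
      ultimately have "sum_list (drop (Suc k) ls) + ls!k \<le> sum_list ls" by simp
      thus ?thesis by (simp add: take_drop min_def add.commute)
    qed
    finally show ?thesis using Suc by simp
  qed
qed

lemma length_rows_nth:
  assumes "length w = sum_list la" "i < length la"
  shows "length (rows la w ! i) = la!i"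
proof -
  have "sum_list la = sum_list (take (Suc i) la) + sum_list (drop (Suc i) la)"
    by (metis add.commute append_take_drop_id sum_list_append)
  moreover have "sum_list (take (Suc i) la) \<ge> la!i"
    using assms by (simp add: take_Suc_conv_app_nth)
  ultimately show ?thesis using rows_nth[OF assms] assms by simp
qed

lemma rows_nth_nth:
  assumes "length w = sum_list la" "i < length la" "j < la!i"
  shows "rows la w ! i ! j = w ! idx la i j"
  using rows_nth[OF assms(1,2)] assms length_rows_nth[OF assms(1,2)]
  by (simp add: idx_def add.commute)

lemma word_of_rows_Cons: "word_of_rows (r # rs) = word_of_rows rs @ r"
  by (simp add: word_of_rows_def)

lemma word_of_rows_Nil[simp]: "word_of_rows [] = []"
  by (simp add: word_of_rows_def)

lemma length_word_of_rows: "length (word_of_rows rs) = sum_list (map length rs)"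
  by (simp add: word_of_rows_def length_concat rev_map[symmetric] sum_list_rev)

lemma word_of_rows_rows:
  "length w = sum_list la \<Longrightarrow> word_of_rows (rows la w) = w"
  by (induction la arbitrary: w) (auto simp: word_of_rows_Cons)

lemma rows_word_of_rows:
  "length rs = length mu \<Longrightarrow> (\<forall>i<length mu. length (rs!i) = mu!i) \<Longrightarrow>
   rows mu (word_of_rows rs) = rs"
proof (induction mu arbitrary: rs)
  case Nil thus ?case by simp
next
  case (Cons m ms)
  then obtain r rs' where rs: "rs = r # rs'" by (cases rs) auto
  have l: "length rs' = length ms" "\<forall>i<length ms. length (rs'!i) = ms!i"
    using Cons.prems rs by auto
  have "sum_list (map length rs') = sum_list ms"
    using l by (metis map_nth nth_equalityI length_map nth_map)
  hence len: "length (word_of_rows rs') = sum_list ms" by (simp add: length_word_of_rows)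
  show ?case using Cons.IH[OF l] len rs by (simp add: word_of_rows_Cons)
qed

lemma sum_drop_ge:
  fixes la :: "nat list"
  assumes "k \<le> i" "i < length la"
  shows "sum_list (drop k la) \<ge> la!i + sum_list (drop (Suc i) la)"
proof -
  have "drop k la = take (i - k) (drop k la) @ drop i la"
    using assms by (metis append_take_drop_id drop_drop le_add_diff_inverse2)
  moreover have "drop i la = la!i # drop (Suc i) la" using assms by (simp add: Cons_nth_drop_Suc)
  ultimately have "sum_list (drop k la) = sum_list (take (i-k) (drop k la)) + la!i + sum_list (drop (Suc i) la)"
    by (metis add.assoc sum_list.Cons sum_list_append)
  thus ?thesis by linarith
qed

lemma idx_less_sum:
  assumes "i < length la" "j < la!i"
  shows "idx la i j < sum_list la"
  using sum_drop_ge[of 0 i la] assms by (simp add: idx_def)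

lemma idx_lt_iff:
  assumes "i < length la" "j < la!i" "i' < length la" "j' < la!i'"
  shows "idx la i j < idx la i' j' \<longleftrightarrow> i' < i \<or> (i = i' \<and> j < j')"
proof -
  have A: "idx la b d < idx la a c" if "a < b" "b < length la" "d < la!b" for a b c d
    using sum_drop_ge[of "Suc a" b la] that by (simp add: idx_def)
  show ?thesis
  proof (cases "i' < i")
    case True thus ?thesis using A[of i' i j j'] assms by simp
  next
    case False
    show ?thesis
    proof (cases "i = i'")
      case True thus ?thesis by (simp add: idx_def)
    next
      case False
      hence "i < i'" using \<open>\<not> i' < i\<close> by simp
      thus ?thesis using A[of i i' j' j] assms by simp
    qed
  qed
qed

lemma idx_inj:
  assumes "i < length la" "j < la!i" "i' < length la" "j' < la!i'"
    and "idx la i j = idx la i' j'"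
  shows "i = i' \<and> j = j'"
  using idx_lt_iff[OF assms(1-4)] idx_lt_iff[OF assms(3,4,1,2)] assms(5)
  by (metis less_irrefl nat_neq_iff)

lemma idx_surj:
  "q < sum_list la \<Longrightarrow> \<exists>i j. i < length la \<and> j < la!i \<and> q = idx la i j"
proof (induction la)
  case Nil thus ?case by simp
next
  case (Cons l ls)
  show ?case
  proof (cases "q < sum_list ls")
    case True
    then obtain i j where "i < length ls" "j < ls!i" "q = idx ls i j" using Cons.IH by blast
    thus ?thesis by (intro exI[of _ "Suc i"] exI[of _ j]) (simp add: idx_def)
  next
    case False
    thus ?thesis using Cons.prems
      by (intro exI[of _ 0] exI[of _ "q - sum_list ls"]) (auto simp: idx_def)
  qed
qed

lemma is_partition_mono:
  assumes "is_partition la" "i \<le> i'" "i' < length la"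
  shows "la!i' \<le> la!i"
  using assms unfolding is_partition_def
  by (metis antisym_conv1 dual_order.refl sorted_wrt_nth_less)

lemma is_partition_pos:
  assumes "is_partition la" "i < length la"
  shows "0 < la!i"
  using assms unfolding is_partition_def by auto

definition semistd :: "nat list \<Rightarrow> nat list \<Rightarrow> bool" where
  "semistd la w \<longleftrightarrow> is_partition la \<and> length w = sum_list la \<and>
     (\<forall>i j j'. i < length la \<and> j < j' \<and> j' < la!i \<longrightarrow> w ! idx la i j \<le> w ! idx la i j') \<and>
     (\<forall>i i' j. i < i' \<and> i' < length la \<and> j < la!i' \<longrightarrow> w ! idx la i j < w ! idx la i' j)"

lemma col_global:
  fixes f :: "nat \<Rightarrow> nat \<Rightarrow> nat"
  assumes adj: "\<And>i j. Suc i < length la \<Longrightarrow> j < la ! Suc i \<Longrightarrow> f i j < f (Suc i) j"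
    and part: "is_partition la"
  shows "i < i' \<Longrightarrow> i' < length la \<Longrightarrow> j < la!i' \<Longrightarrow> f i j < f i' j"
proof (induction i' arbitrary: i)
  case 0 thus ?case by simp
next
  case (Suc k)
  have "j < la!k" using is_partition_mono[OF part, of k "Suc k"] Suc.prems by simp
  have a: "f k j < f (Suc k) j" using adj[of k j] Suc.prems by simp
  show ?case
  proof (cases "i = k")
    case True thus ?thesis using a by simp
  next
    case False
    hence "f i j < f k j" using Suc.IH[of i] Suc.prems \<open>j < la!k\<close> by simp
    thus ?thesis using a by simp
  qed
qed

lemma standard_iff:
  "standard n (la, w) \<longleftrightarrow> is_partition la \<and> sum_list la = n \<and> length w = n \<and> distinct w \<and>
     set w = {1..n} \<and> semistd la w"
proof
  assume st: "standard n (la, w)"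
  let ?rs = "rows la w"
  have basic: "is_partition la" "sum_list la = n" "length w = n" "distinct w" "set w = {1..n}"
    and R: "\<forall>i < length la. sorted_wrt (<) (?rs ! i)"
    and C: "\<forall>i j. Suc i < length la \<and> j < la ! Suc i \<longrightarrow> ?rs ! i ! j < ?rs ! Suc i ! j"
    using st unfolding standard_def Let_def by auto
  have lw: "length w = sum_list la" using basic by simp
  have row: "w ! idx la i j \<le> w ! idx la i j'" if "i < length la" "j < j'" "j' < la!i" for i j j'
  proof -
    have "?rs!i!j < ?rs!i!j'" using R that length_rows_nth[OF lw that(1)]
      by (simp add: sorted_wrt_iff_nth_less)
    thus ?thesis using rows_nth_nth[OF lw that(1)] that by simp
  qed
  have col: "w ! idx la i j < w ! idx la i' j" if "i < i'" "i' < length la" "j < la!i'" for i i' j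
  proof (rule col_global[where f = "\<lambda>i j. w ! idx la i j", OF _ basic(1) that])
    fix i j assume a: "Suc i < length la" "j < la ! Suc i"
    have "j < la!i" using is_partition_mono[OF basic(1), of i "Suc i"] a by simp
    thus "w ! idx la i j < w ! idx la (Suc i) j"
      using C[rule_format, of i j] a rows_nth_nth[OF lw, of i j] rows_nth_nth[OF lw, of "Suc i" j] by simp
  qed
  show "is_partition la \<and> sum_list la = n \<and> length w = n \<and> distinct w \<and>
     set w = {1..n} \<and> semistd la w"
    using basic row col lw unfolding semistd_def by blast
next
  assume a: "is_partition la \<and> sum_list la = n \<and> length w = n \<and> distinct w \<and>
     set w = {1..n} \<and> semistd la w"
  hence lw: "length w = sum_list la" by simp
  have R: "sorted_wrt (<) (rows la w ! i)" if i: "i < length la" for i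
  proof -
    have "rows la w ! i ! j < rows la w ! i ! j'" if "j < j'" "j' < la!i" for j j'
    proof -
      have le: "w ! idx la i j \<le> w ! idx la i j'" using a that i unfolding semistd_def by blast
      have "idx la i j \<noteq> idx la i j'" using that by (simp add: idx_def)
      moreover have "idx la i j < length w" "idx la i j' < length w"
        using idx_less_sum[OF i] that lw by auto
      ultimately have "w ! idx la i j \<noteq> w ! idx la i j'" using a by (simp add: nth_eq_iff_index_eq)
      thus ?thesis using le rows_nth_nth[OF lw i] that by simp
    qed
    thus ?thesis using length_rows_nth[OF lw i] by (simp add: sorted_wrt_iff_nth_less)
  qed
  have C: "rows la w ! i ! j < rows la w ! Suc i ! j" if "Suc i < length la" "j < la ! Suc i" for i j
  proof -
    have "j < la!i" using is_partition_mono[of la i "Suc i"] a that by simp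
    thus ?thesis using a that rows_nth_nth[OF lw, of i j] rows_nth_nth[OF lw, of "Suc i" j]
      unfolding semistd_def by simp
  qed
  show "standard n (la, w)" unfolding standard_def Let_def using a R C by auto
qed

lemma entry_idx:
  assumes "length (snd t) = sum_list (fst t)" "i < length (fst t)" "j < fst t ! i"
  shows "entry t i j = snd t ! idx (fst t) i j"
  using rows_nth_nth[OF assms] by (simp add: entry_def)

lemma fill_sub_noP: "\<forall>x\<in>set u. \<not> P x \<Longrightarrow> fill_sub P ys (u @ v) = u @ fill_sub P ys v"
  by (induction u) auto

lemma fill_sub_noP_all: "\<forall>x\<in>set u. \<not> P x \<Longrightarrow> fill_sub P ys u = u"
  using fill_sub_noP[of u P ys "[]"] by simp

lemma length_filter_two:
  "a \<noteq> b \<Longrightarrow> length (filter (\<lambda>x. x = a \<or> x = b) w) = count_list w a + count_list w b"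
  by (induction w) auto

lemma count_filter: "P v \<Longrightarrow> count_list (filter P w) v = count_list w v"
  by (induction w) auto

lemma decomp3:
  assumes "filter P w = [x1, x2, x3]"
  shows "\<exists>u1 u2 u3 u4. w = u1 @ x1 # u2 @ x2 # u3 @ x3 # u4 \<and>
     (\<forall>x\<in>set (u1 @ u2 @ u3 @ u4). \<not> P x) \<and> P x1 \<and> P x2 \<and> P x3"
proof -
  obtain u1 v1 where 1: "w = u1 @ x1 # v1" "\<forall>u\<in>set u1. \<not> P u" "P x1" "filter P v1 = [x2,x3]"
    using assms filter_eq_Cons_iff[of P w x1 "[x2,x3]"] by metis
  obtain u2 v2 where 2: "v1 = u2 @ x2 # v2" "\<forall>u\<in>set u2. \<not> P u" "P x2" "filter P v2 = [x3]"
    using 1(4) filter_eq_Cons_iff[of P v1 x2 "[x3]"] by metis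
  obtain u3 u4 where 3: "v2 = u3 @ x3 # u4" "\<forall>u\<in>set u3. \<not> P u" "P x3" "filter P u4 = []"
    using 2(4) filter_eq_Cons_iff[of P v2 x3 "[]"] by metis
  have "\<forall>u\<in>set u4. \<not> P u" using 3(4) by (simp add: filter_empty_conv)
  hence "\<forall>x\<in>set (u1 @ u2 @ u3 @ u4). \<not> P x" using 1(2) 2(2) 3(2) by (simp only: set_append ball_Un)
  moreover have "w = u1 @ x1 # u2 @ x2 # u3 @ x3 # u4" using 1(1) 2(1) 3(1) by simp
  ultimately show ?thesis using 1(3) 2(3) 3(3) by blast
qed

definition pat6 :: "nat \<Rightarrow> nat list set" where
  "pat6 a = {[a,Suc a,Suc a],[Suc a,a,Suc a],[Suc a,Suc a,a],[a,a,Suc a],[a,Suc a,a],[Suc a,a,a]}"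

definition indom :: "nat \<Rightarrow> nat list \<Rightarrow> bool" where
  "indom a w \<longleftrightarrow> (count_list w a, count_list w (Suc a)) \<in> {(1,2),(2,1)}"

lemma pat6_intro:
  assumes "x1 = a \<or> x1 = Suc a" "x2 = a \<or> x2 = Suc a" "x3 = a \<or> x3 = Suc a"
    "(count_list [x1,x2,x3] a, count_list [x1,x2,x3] (Suc a)) \<in> {(1,2),(2,1)}"
  shows "[x1,x2,x3] \<in> pat6 a"
  using assms by (elim disjE) (simp_all add: pat6_def)

lemma pat6_xy:
  assumes "[x1,x2,x3] \<in> pat6 a" "[y1,y2,y3] = sw3 a (Suc a) [x1,x2,x3]"
  shows "(x1 = a \<and> x2 = Suc a \<and> x3 = Suc a \<and> y1 = a \<and> y2 = a \<and> y3 = Suc a) \<or>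
         (x1 = Suc a \<and> x2 = a \<and> x3 = Suc a \<and> y1 = Suc a \<and> y2 = a \<and> y3 = a) \<or>
         (x1 = Suc a \<and> x2 = Suc a \<and> x3 = a \<and> y1 = a \<and> y2 = Suc a \<and> y3 = a) \<or>
         (x1 = a \<and> x2 = a \<and> x3 = Suc a \<and> y1 = a \<and> y2 = Suc a \<and> y3 = Suc a) \<or>
         (x1 = a \<and> x2 = Suc a \<and> x3 = a \<and> y1 = Suc a \<and> y2 = Suc a \<and> y3 = a) \<or>
         (x1 = Suc a \<and> x2 = a \<and> x3 = a \<and> y1 = Suc a \<and> y2 = a \<and> y3 = Suc a)"
proof -
  have "[x1,x2,x3] = [a,Suc a,Suc a] \<or> [x1,x2,x3] = [Suc a,a,Suc a] \<or> [x1,x2,x3] = [Suc a,Suc a,a] \<or>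
        [x1,x2,x3] = [a,a,Suc a] \<or> [x1,x2,x3] = [a,Suc a,a] \<or> [x1,x2,x3] = [Suc a,a,a]"
    using assms(1) unfolding pat6_def by blast
  thus ?thesis
  proof (elim disjE)
  qed (use assms(2) in \<open>simp_all add: sw3_def\<close>)
qed

lemma pat6_sw3_ex: "xs \<in> pat6 a \<Longrightarrow> \<exists>y1 y2 y3. sw3 a (Suc a) xs = [y1,y2,y3]"
  unfolding pat6_def by (elim insertE) (simp_all add: sw3_def)

lemma sigma_decomp:
  assumes "indom a w"
  obtains u1 u2 u3 u4 x1 x2 x3 y1 y2 y3 where
    "w = u1 @ x1 # u2 @ x2 # u3 @ x3 # u4"
    "sigma a w = u1 @ y1 # u2 @ y2 # u3 @ y3 # u4"
    "\<forall>x\<in>set (u1 @ u2 @ u3 @ u4). x \<noteq> a \<and> x \<noteq> Suc a"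
    "[x1,x2,x3] \<in> pat6 a" "[y1,y2,y3] = sw3 a (Suc a) [x1,x2,x3]"
    "count_list [x1,x2,x3] a = count_list w a" "count_list [x1,x2,x3] (Suc a) = count_list w (Suc a)"
proof -
  let ?P = "\<lambda>x. x = a \<or> x = Suc a"
  have l: "length (filter ?P w) = 3" using assms length_filter_two[of a "Suc a" w]
    unfolding indom_def by auto
  then obtain x1 x2 x3 where f: "filter ?P w = [x1,x2,x3]"
    by (auto simp: numeral_3_eq_3 length_Suc_conv)
  obtain u1 u2 u3 u4 where d: "w = u1 @ x1 # u2 @ x2 # u3 @ x3 # u4"
    "\<forall>x\<in>set (u1 @ u2 @ u3 @ u4). \<not> ?P x" "?P x1" "?P x2" "?P x3"
    using decomp3[OF f] by blast
  have ca: "count_list [x1,x2,x3] a = count_list w a"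
    using count_filter[of ?P a w] f by simp
  have cb: "count_list [x1,x2,x3] (Suc a) = count_list w (Suc a)"
    using count_filter[of ?P "Suc a" w] f by simp
  have pat: "[x1,x2,x3] \<in> pat6 a" using d(3-5) ca cb assms unfolding indom_def
    by (intro pat6_intro) auto
  obtain y1 y2 y3 where y: "sw3 a (Suc a) [x1,x2,x3] = [y1,y2,y3]"
    using pat6_sw3_ex[OF pat] by blast
  have "sigma a w = fill_sub ?P [y1,y2,y3] w"
    using assms f y unfolding sigma_def indom_def Let_def by simp
  also have "\<dots> = u1 @ y1 # u2 @ y2 # u3 @ y3 # u4"
    using d by (simp add: fill_sub_noP fill_sub_noP_all)
  finally have s: "sigma a w = u1 @ y1 # u2 @ y2 # u3 @ y3 # u4" .
  have u: "\<forall>x\<in>set (u1 @ u2 @ u3 @ u4). x \<noteq> a \<and> x \<noteq> Suc a" using d(2) by blast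
  show ?thesis by (rule that[OF d(1) s u pat y[symmetric] ca cb])
qed

lemma sw3_pat6: "xs \<in> pat6 a \<Longrightarrow> sw3 a (Suc a) xs \<in> pat6 a \<and> sw3 a (Suc a) (sw3 a (Suc a) xs) = xs"
  unfolding pat6_def sw3_def by auto

lemma pat6_vals:
  assumes "[x1,x2,x3] \<in> pat6 a" "[y1,y2,y3] = sw3 a (Suc a) [x1,x2,x3]"
  shows "x1 = a \<or> x1 = Suc a" "x2 = a \<or> x2 = Suc a" "x3 = a \<or> x3 = Suc a"
        "y1 = a \<or> y1 = Suc a" "y2 = a \<or> y2 = Suc a" "y3 = a \<or> y3 = Suc a"
  using pat6_xy[OF assms] by blast+

lemma sigma_explicit:
  assumes w: "w = u1 @ x1 # u2 @ x2 # u3 @ x3 # u4"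
    and u: "\<forall>x\<in>set (u1 @ u2 @ u3 @ u4). x \<noteq> a \<and> x \<noteq> Suc a"
    and p: "[x1,x2,x3] \<in> pat6 a" and y: "sw3 a (Suc a) [x1,x2,x3] = [y1,y2,y3]"
  shows "sigma a w = u1 @ y1 # u2 @ y2 # u3 @ y3 # u4"
proof -
  let ?P = "\<lambda>x. x = a \<or> x = Suc a"
  have px: "?P x1" "?P x2" "?P x3" using p unfolding pat6_def by auto
  have f: "filter ?P w = [x1,x2,x3]" using w u px by auto
  have ca: "count_list w a = count_list [x1,x2,x3] a" "count_list w (Suc a) = count_list [x1,x2,x3] (Suc a)"
    using count_filter[of ?P a w] count_filter[of ?P "Suc a" w] f by auto
  have ind: "(count_list w a, count_list w (Suc a)) \<in> {(1,2),(2,1)}"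
    using p ca unfolding pat6_def by auto
  have "sigma a w = fill_sub ?P [y1,y2,y3] w"
    using ind f y unfolding sigma_def Let_def by simp
  also have "\<dots> = u1 @ y1 # u2 @ y2 # u3 @ y3 # u4"
    using w u px by (simp add: fill_sub_noP fill_sub_noP_all)
  finally show ?thesis .
qed

lemma sigma_invol:
  assumes "indom a w" shows "sigma a (sigma a w) = w"
proof -
  obtain u1 u2 u3 u4 x1 x2 x3 y1 y2 y3 where d:
    "w = u1 @ x1 # u2 @ x2 # u3 @ x3 # u4"
    "sigma a w = u1 @ y1 # u2 @ y2 # u3 @ y3 # u4"
    "\<forall>x\<in>set (u1 @ u2 @ u3 @ u4). x \<noteq> a \<and> x \<noteq> Suc a"
    "[x1,x2,x3] \<in> pat6 a" "[y1,y2,y3] = sw3 a (Suc a) [x1,x2,x3]"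
    using sigma_decomp[OF assms] by metis
  have "[y1,y2,y3] \<in> pat6 a" "sw3 a (Suc a) [y1,y2,y3] = [x1,x2,x3]" using sw3_pat6[OF d(4)] d(5) by auto
  thus ?thesis using sigma_explicit[OF d(2) d(3)] d(1) by simp
qed

lemma sigma_noindom: "\<not> indom a w \<Longrightarrow> sigma a w = w"
  unfolding indom_def sigma_def Let_def by auto

definition dbl :: "nat \<Rightarrow> nat \<Rightarrow> nat list \<Rightarrow> bool" where
  "dbl c N w \<longleftrightarrow> length w = Suc N \<and>
     (\<forall>v. count_list w v = (if v = c then 2 else if 1 \<le> v \<and> v \<le> N then 1 else 0))"

lemma dbl_indom1: "dbl (Suc a) N w \<Longrightarrow> 1 \<le> a \<Longrightarrow> Suc a \<le> N \<Longrightarrow> indom a w"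
  unfolding dbl_def indom_def by auto

lemma dbl_indom2: "dbl a N w \<Longrightarrow> 1 \<le> a \<Longrightarrow> Suc a \<le> N \<Longrightarrow> indom a w"
  unfolding dbl_def indom_def by auto

lemma sigma_counts:
  assumes "indom a w"
  shows "length (sigma a w) = length w"
    "\<And>v. v \<noteq> a \<Longrightarrow> v \<noteq> Suc a \<Longrightarrow> count_list (sigma a w) v = count_list w v"
    "count_list (sigma a w) a = count_list w (Suc a)"
    "count_list (sigma a w) (Suc a) = count_list w a"
proof -
  obtain u1 u2 u3 u4 x1 x2 x3 y1 y2 y3 where d:
    "w = u1 @ x1 # u2 @ x2 # u3 @ x3 # u4"
    "sigma a w = u1 @ y1 # u2 @ y2 # u3 @ y3 # u4"
    "\<forall>x\<in>set (u1 @ u2 @ u3 @ u4). x \<noteq> a \<and> x \<noteq> Suc a"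
    "[x1,x2,x3] \<in> pat6 a" "[y1,y2,y3] = sw3 a (Suc a) [x1,x2,x3]"
    using sigma_decomp[OF assms] by metis
  have p: "[x1,x2,x3] = [a,Suc a,Suc a] \<and> [y1,y2,y3] = [a,a,Suc a] \<or>
           [x1,x2,x3] = [Suc a,a,Suc a] \<and> [y1,y2,y3] = [Suc a,a,a] \<or>
           [x1,x2,x3] = [Suc a,Suc a,a] \<and> [y1,y2,y3] = [a,Suc a,a] \<or>
           [x1,x2,x3] = [a,a,Suc a] \<and> [y1,y2,y3] = [a,Suc a,Suc a] \<or>
           [x1,x2,x3] = [a,Suc a,a] \<and> [y1,y2,y3] = [Suc a,Suc a,a] \<or>
           [x1,x2,x3] = [Suc a,a,a] \<and> [y1,y2,y3] = [Suc a,a,Suc a]"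
    using pat6_xy[OF d(4,5)] by simp
  have c0: "count_list u1 a = 0" "count_list u2 a = 0" "count_list u3 a = 0" "count_list u4 a = 0"
    "count_list u1 (Suc a) = 0" "count_list u2 (Suc a) = 0" "count_list u3 (Suc a) = 0" "count_list u4 (Suc a) = 0"
    using d(3) by (auto simp: count_list_0_iff)
  show "length (sigma a w) = length w" using d by simp
  have xy: "x1 \<noteq> v \<and> x2 \<noteq> v \<and> x3 \<noteq> v \<and> y1 \<noteq> v \<and> y2 \<noteq> v \<and> y3 \<noteq> v" if "v \<noteq> a" "v \<noteq> Suc a" for v
    using pat6_vals[OF d(4,5)] that by metis
  show "\<And>v. v \<noteq> a \<Longrightarrow> v \<noteq> Suc a \<Longrightarrow> count_list (sigma a w) v = count_list w v"
  proof -
    fix v assume "v \<noteq> a" "v \<noteq> Suc a"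
    have e1: "count_list (sigma a w) v = count_list (u1 @ y1 # u2 @ y2 # u3 @ y3 # u4) v" by (simp only: d(2))
    have e2: "count_list w v = count_list (u1 @ x1 # u2 @ x2 # u3 @ x3 # u4) v" by (simp only: d(1))
    from xy[OF \<open>v \<noteq> a\<close> \<open>v \<noteq> Suc a\<close>] show "count_list (sigma a w) v = count_list w v"
      unfolding e1 e2 by simp
  qed
  have e1: "count_list (sigma a w) v = count_list (u1 @ y1 # u2 @ y2 # u3 @ y3 # u4) v" for v by (simp only: d(2))
  have e2: "count_list w v = count_list (u1 @ x1 # u2 @ x2 # u3 @ x3 # u4) v" for v by (simp only: d(1))
  have "count_list [y1,y2,y3] a = count_list [x1,x2,x3] (Suc a)" "count_list [y1,y2,y3] (Suc a) = count_list [x1,x2,x3] a"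
    using p by auto
  thus "count_list (sigma a w) a = count_list w (Suc a)" "count_list (sigma a w) (Suc a) = count_list w a"
  proof -
    have g: "count_list (u1 @ z1 # u2 @ z2 # u3 @ z3 # u4) c = count_list (u1@u2@u3@u4) c + count_list [z1,z2,z3] c"
      for c z1 z2 z3 by simp
    have "count_list (u1@u2@u3@u4) a = 0" "count_list (u1@u2@u3@u4) (Suc a) = 0" using c0 by simp_all
    thus "count_list (sigma a w) a = count_list w (Suc a)" "count_list (sigma a w) (Suc a) = count_list w a"
      unfolding e1 e2 g using \<open>count_list [y1,y2,y3] a = _\<close> \<open>count_list [y1,y2,y3] (Suc a) = _\<close> by simp_all
  qed
qed

lemma dbl_sigma_down:
  assumes "dbl (Suc a) N w" "1 \<le> a" "Suc a \<le> N"
  shows "dbl a N (sigma a w)"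
proof -
  have i: "indom a w" using dbl_indom1[OF assms] .
  note sc = sigma_counts[OF i]
  have cw: "count_list w v = (if v = Suc a then 2 else if 1 \<le> v \<and> v \<le> N then 1 else 0)" for v
    using assms(1) unfolding dbl_def by blast
  have "count_list (sigma a w) v = (if v = a then 2 else if 1 \<le> v \<and> v \<le> N then 1 else 0)" for v
  proof -
    consider "v = a" | "v = Suc a" | "v \<noteq> a \<and> v \<noteq> Suc a" by blast
    thus ?thesis
    proof cases
      case 1 thus ?thesis using sc(3) cw[of "Suc a"] by simp
    next
      case 2 thus ?thesis using sc(4) cw[of a] assms by simp
    next
      case 3 thus ?thesis using sc(2)[of v] cw[of v] by simp
    qed
  qed
  thus ?thesis using assms(1) sc(1) unfolding dbl_def by simp
qed

lemma dbl_sigma_up: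
  assumes "dbl a N w" "1 \<le> a" "Suc a \<le> N"
  shows "dbl (Suc a) N (sigma a w)"
proof -
  have i: "indom a w" using dbl_indom2[OF assms] .
  note sc = sigma_counts[OF i]
  have cw: "count_list w v = (if v = a then 2 else if 1 \<le> v \<and> v \<le> N then 1 else 0)" for v
    using assms(1) unfolding dbl_def by blast
  have "count_list (sigma a w) v = (if v = Suc a then 2 else if 1 \<le> v \<and> v \<le> N then 1 else 0)" for v
  proof -
    consider "v = a" | "v = Suc a" | "v \<noteq> a \<and> v \<noteq> Suc a" by blast
    thus ?thesis
    proof cases
      case 1 thus ?thesis using sc(3) cw[of "Suc a"] assms by simp
    next
      case 2 thus ?thesis using sc(4) cw[of a] assms by simp
    next
      case 3 thus ?thesis using sc(2)[of v] cw[of v] by simp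
    qed
  qed
  thus ?thesis using assms(1) sc(1) unfolding dbl_def by simp
qed

lemma filter_sigma_in:
  assumes "\<And>v. v = a \<or> v = Suc a \<Longrightarrow> Q v"
  shows "filter Q (sigma a w) = sigma a (filter Q w)"
proof (cases "indom a w")
  case True
  obtain u1 u2 u3 u4 x1 x2 x3 y1 y2 y3 where d:
    "w = u1 @ x1 # u2 @ x2 # u3 @ x3 # u4"
    "sigma a w = u1 @ y1 # u2 @ y2 # u3 @ y3 # u4"
    "\<forall>x\<in>set (u1 @ u2 @ u3 @ u4). x \<noteq> a \<and> x \<noteq> Suc a"
    "[x1,x2,x3] \<in> pat6 a" "[y1,y2,y3] = sw3 a (Suc a) [x1,x2,x3]"
    using sigma_decomp[OF True] by metis
  have px: "Q x1" "Q x2" "Q x3" "Q y1" "Q y2" "Q y3"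
    using pat6_vals[OF d(4) d(5)] assms by blast+
  have fw: "filter Q w = filter Q u1 @ x1 # filter Q u2 @ x2 # filter Q u3 @ x3 # filter Q u4"
    using d(1) px by simp
  have "sigma a (filter Q w) = filter Q u1 @ y1 # filter Q u2 @ y2 # filter Q u3 @ y3 # filter Q u4"
    by (rule sigma_explicit[OF fw _ d(4) d(5)[symmetric]]) (use d(3) in auto)
  thus ?thesis using d(2) px by simp
next
  case False
  have "count_list (filter Q w) a = count_list w a" "count_list (filter Q w) (Suc a) = count_list w (Suc a)"
    using count_filter[of Q] assms by auto
  hence "\<not> indom a (filter Q w)" using False unfolding indom_def by simp
  thus ?thesis using False sigma_noindom by simp
qed

lemma filter_sigma_out:
  assumes "\<And>v. v = a \<or> v = Suc a \<Longrightarrow> \<not> Q v"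
  shows "filter Q (sigma a w) = filter Q w"
proof (cases "indom a w")
  case True
  obtain u1 u2 u3 u4 x1 x2 x3 y1 y2 y3 where d:
    "w = u1 @ x1 # u2 @ x2 # u3 @ x3 # u4"
    "sigma a w = u1 @ y1 # u2 @ y2 # u3 @ y3 # u4"
    "\<forall>x\<in>set (u1 @ u2 @ u3 @ u4). x \<noteq> a \<and> x \<noteq> Suc a"
    "[x1,x2,x3] \<in> pat6 a" "[y1,y2,y3] = sw3 a (Suc a) [x1,x2,x3]"
    using sigma_decomp[OF True] by metis
  have px: "\<not> Q x1" "\<not> Q x2" "\<not> Q x3" "\<not> Q y1" "\<not> Q y2" "\<not> Q y3"
    using pat6_vals[OF d(4) d(5)] assms by blast+
  thus ?thesis using d(1,2) by simp
next
  case False thus ?thesis using sigma_noindom by simp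
qed

lemma chain_down:
  assumes "dbl (Suc n) (Suc n) w" "P w"
    and step: "\<And>a x. 1 \<le> a \<Longrightarrow> a \<le> n \<Longrightarrow> dbl (Suc a) (Suc n) x \<Longrightarrow> P x \<Longrightarrow> P (sigma a x)"
    and "1 \<le> k" "k \<le> Suc n"
  shows "dbl k (Suc n) (foldr sigma [k..<Suc n] w) \<and> P (foldr sigma [k..<Suc n] w)"
  using assms(5)
proof (induction k rule: inc_induct)
  case base thus ?case using assms by simp
next
  case (step m)
  have e: "[m..<Suc n] = m # [Suc m..<Suc n]" using step.hyps by (simp add: upt_rec)
  have "1 \<le> m" using assms(4) step.hyps by simp
  thus ?case using step.IH e dbl_sigma_down[of m "Suc n"] assms(3)[of m] step.hyps by auto
qed

lemma chain_up:
  assumes "1 \<le> k" "k \<le> Suc n"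
   and that: "\<And>a x. 1 \<le> a \<Longrightarrow> a \<le> n \<Longrightarrow> dbl a (Suc n) x \<Longrightarrow> P x \<Longrightarrow> P (sigma a x)"
  shows "\<forall>x. dbl k (Suc n) x \<and> P x \<longrightarrow> dbl (Suc n) (Suc n) (fold sigma [k..<Suc n] x) \<and> P (fold sigma [k..<Suc n] x)"
  using assms(2)
proof (induction k rule: inc_induct)
  case base thus ?case by simp
next
  case (step m)
  have e: "[m..<Suc n] = m # [Suc m..<Suc n]" using step.hyps by (simp add: upt_rec)
  have "1 \<le> m" using assms(1) step.hyps by simp
  show ?case
  proof (intro allI impI)
    fix x assume x: "dbl m (Suc n) x \<and> P x"
    have "dbl (Suc m) (Suc n) (sigma m x)" using dbl_sigma_up[of m "Suc n" x] x \<open>1 \<le> m\<close> step.hyps by simp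
    moreover have "P (sigma m x)" using that[of m x] x \<open>1 \<le> m\<close> step.hyps by simp
    ultimately show "dbl (Suc n) (Suc n) (fold sigma [m..<Suc n] x) \<and> P (fold sigma [m..<Suc n] x)"
      using step.IH e by simp
  qed
qed

lemma chain_inv1:
  assumes "1 \<le> k" "k \<le> Suc n"
  shows "\<forall>x. dbl k (Suc n) x \<longrightarrow> foldr sigma [k..<Suc n] (fold sigma [k..<Suc n] x) = x"
  using assms(2)
proof (induction k rule: inc_induct)
  case base thus ?case by simp
next
  case (step m)
  have e: "[m..<Suc n] = m # [Suc m..<Suc n]" using step.hyps by (simp add: upt_rec)
  have "1 \<le> m" using assms(1) step.hyps by simp
  show ?case
  proof (intro allI impI)
    fix x assume x: "dbl m (Suc n) x"
    have "dbl (Suc m) (Suc n) (sigma m x)" using dbl_sigma_up[of m "Suc n" x] x \<open>1 \<le> m\<close> step.hyps by simp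
    hence "foldr sigma [Suc m..<Suc n] (fold sigma [Suc m..<Suc n] (sigma m x)) = sigma m x"
      using step.IH by simp
    moreover have "indom m x" using dbl_indom2[of m "Suc n" x] x \<open>1 \<le> m\<close> step.hyps by simp
    ultimately show "foldr sigma [m..<Suc n] (fold sigma [m..<Suc n] x) = x"
      using e sigma_invol by simp
  qed
qed

lemma chain_inv2:
  assumes "dbl (Suc n) (Suc n) z" "1 \<le> k" "k \<le> Suc n"
  shows "fold sigma [k..<Suc n] (foldr sigma [k..<Suc n] z) = z"
  using assms(3)
proof (induction k rule: inc_induct)
  case base thus ?case by simp
next
  case (step m)
  have e: "[m..<Suc n] = m # [Suc m..<Suc n]" using step.hyps by (simp add: upt_rec)
  have "1 \<le> m" using assms(2) step.hyps by simp
  have "dbl (Suc m) (Suc n) (foldr sigma [Suc m..<Suc n] z)"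
    using chain_down[of n z "\<lambda>_. True" "Suc m"] assms step.hyps by simp
  hence "indom m (foldr sigma [Suc m..<Suc n] z)"
    using dbl_indom1 \<open>1 \<le> m\<close> step.hyps by simp
  thus ?case using e step.IH sigma_invol by simp
qed

lemma pat_check:
  fixes a x1 x2 x3 y1 y2 y3 :: nat
  assumes pat: "[x1,x2,x3] \<in> pat6 a" and y: "[y1,y2,y3] = sw3 a (Suc a) [x1,x2,x3]"
   and old: "A12 \<longrightarrow> x1 \<le> x2" "A13 \<longrightarrow> x1 \<le> x3" "A23 \<longrightarrow> x2 \<le> x3"
            "B12 \<longrightarrow> x2 < x1" "B13 \<longrightarrow> x3 < x1" "B23 \<longrightarrow> x3 < x2"
   and geo: "A13 \<longrightarrow> A12 \<and> A23" "B13 \<longrightarrow> x1 = Suc a \<longrightarrow> x3 = a \<longrightarrow> False"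
  shows "(A12 \<longrightarrow> y1 \<le> y2) \<and> (A13 \<longrightarrow> y1 \<le> y3) \<and> (A23 \<longrightarrow> y2 \<le> y3) \<and>
         (B12 \<longrightarrow> y2 < y1) \<and> (B13 \<longrightarrow> y3 < y1) \<and> (B23 \<longrightarrow> y3 < y2)"
  using pat6_xy[OF pat y]
proof (elim disjE conjE)
qed (use old geo in auto)

lemma semistd_triple:
  fixes w w' :: "nat list"
  assumes ss: "semistd la w" and len: "length w' = length w"
    and ps: "p1 < p2" "p2 < p3" "p3 < length w"
    and out: "\<And>q. q < length w \<Longrightarrow> q \<noteq> p1 \<Longrightarrow> q \<noteq> p2 \<Longrightarrow> q \<noteq> p3 \<Longrightarrow>
                 w'!q = w!q \<and> w!q \<noteq> a \<and> w!q \<noteq> Suc a"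
    and pat: "[w!p1, w!p2, w!p3] \<in> pat6 a"
    and y: "[w'!p1, w'!p2, w'!p3] = sw3 a (Suc a) [w!p1, w!p2, w!p3]"
  shows "semistd la w'"
proof -
  have part: "is_partition la" and lw: "length w = sum_list la"
    and row: "\<And>i j j'. i < length la \<Longrightarrow> j < j' \<Longrightarrow> j' < la!i \<Longrightarrow> w ! idx la i j \<le> w ! idx la i j'"
    and col: "\<And>i i' j. i < i' \<Longrightarrow> i' < length la \<Longrightarrow> j < la!i' \<Longrightarrow> w ! idx la i j < w ! idx la i' j"
    using ss unfolding semistd_def by blast+
  have cellpos: "\<exists>r s. r < length la \<and> s < la!r \<and> p = idx la r s" if "p < length w" for p
    using idx_surj[of p la] that lw by simp
  obtain r1 s1 where c1: "r1 < length la" "s1 < la!r1" "p1 = idx la r1 s1" using cellpos[of p1] ps by auto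
  obtain r2 s2 where c2: "r2 < length la" "s2 < la!r2" "p2 = idx la r2 s2" using cellpos[of p2] ps by auto
  obtain r3 s3 where c3: "r3 < length la" "s3 < la!r3" "p3 = idx la r3 s3" using cellpos[of p3] ps by auto
  note vals = pat6_vals[OF pat y]
  have o12: "r2 < r1 \<or> (r1 = r2 \<and> s1 < s2)" using idx_lt_iff[OF c1(1,2) c2(1,2)] c1(3) c2(3) ps by simp
  have o23: "r3 < r2 \<or> (r2 = r3 \<and> s2 < s3)" using idx_lt_iff[OF c2(1,2) c3(1,2)] c2(3) c3(3) ps by simp
  have o13: "r3 < r1 \<or> (r1 = r3 \<and> s1 < s3)" using idx_lt_iff[OF c1(1,2) c3(1,2)] c1(3) c3(3) ps by simp
  have pm: "\<And>i i'. i \<le> i' \<Longrightarrow> i' < length la \<Longrightarrow> la!i' \<le> la!i" using is_partition_mono[OF part] by blast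
  have A12: "r1 = r2 \<longrightarrow> w!p1 \<le> w!p2" using o12 row[of r1 s1 s2] c1 c2 by auto
  have A13: "r1 = r3 \<longrightarrow> w!p1 \<le> w!p3" using o13 row[of r1 s1 s3] c1 c3 by auto
  have A23: "r2 = r3 \<longrightarrow> w!p2 \<le> w!p3" using o23 row[of r2 s2 s3] c2 c3 by auto
  have B12: "s1 = s2 \<longrightarrow> w!p2 < w!p1" using o12 col[of r2 r1 s1] c1 c2 by auto
  have B13: "s1 = s3 \<longrightarrow> w!p3 < w!p1" using o13 col[of r3 r1 s1] c1 c3 by auto
  have B23: "s2 = s3 \<longrightarrow> w!p3 < w!p2" using o23 col[of r3 r2 s2] c2 c3 by auto
  have geo1: "r1 = r3 \<longrightarrow> r1 = r2 \<and> r2 = r3" using o12 o23 o13 by auto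
  have geo2: "s1 = s3 \<longrightarrow> w!p1 = Suc a \<longrightarrow> w!p3 = a \<longrightarrow> False"
  proof (intro impI)
    assume e: "s1 = s3" "w!p1 = Suc a" "w!p3 = a"
    have r31: "r3 < r1" using o13 e by auto
    show False
    proof (cases "Suc r3 < r1")
      case True
      have l: "s1 < la!(Suc r3)" using pm[of "Suc r3" r1] True c1 by simp
      have "w ! idx la r3 s1 < w ! idx la (Suc r3) s1" using col[of r3 "Suc r3" s1] l True c1 by simp
      moreover have "w ! idx la (Suc r3) s1 < w ! idx la r1 s1" using col[of "Suc r3" r1 s1] True c1 by simp
      ultimately show False using e c1(3) c3(3) by simp
    next
      case False
      hence r1: "r1 = Suc r3" using r31 by simp
      have "(r2 = r1 \<and> s1 < s2) \<or> (r2 = r3 \<and> s2 < s3)" using o12 o23 r1 by auto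
      thus False
      proof
        assume h: "r2 = r1 \<and> s1 < s2"
        have l: "s2 < la!r3" using pm[of r3 r1] c2 h r31 c1 by simp
        let ?q = "idx la r3 s2"
        have ql: "?q < length w" using idx_less_sum[OF c3(1) l] lw by simp
        have "?q \<noteq> p1" using idx_inj[OF c3(1) l c1(1) c1(2)] c1(3) r31 by auto
        moreover have "?q \<noteq> p2" using idx_inj[OF c3(1) l c2(1) c2(2)] c2(3) r31 h by auto
        moreover have "?q \<noteq> p3" using idx_inj[OF c3(1) l c3(1) c3(2)] c3(3) e h by auto
        ultimately have nq: "w!?q \<noteq> a" "w!?q \<noteq> Suc a" using out[OF ql] by auto
        have "w!p3 \<le> w!?q" using row[of r3 s1 s2] c3 e h l by simp
        moreover have "w!?q < w!p2" using col[of r3 r1 s2] c2 h r31 by simp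
        ultimately show False using nq e vals(2) by auto
      next
        assume h: "r2 = r3 \<and> s2 < s3"
        have l: "s2 < la!r1" using c1 h e by simp
        let ?q = "idx la r1 s2"
        have ql: "?q < length w" using idx_less_sum[OF c1(1) l] lw by simp
        have "?q \<noteq> p1" using idx_inj[OF c1(1) l c1(1) c1(2)] c1(3) e h by auto
        moreover have "?q \<noteq> p2" using idx_inj[OF c1(1) l c2(1) c2(2)] c2(3) r31 h by auto
        moreover have "?q \<noteq> p3" using idx_inj[OF c1(1) l c3(1) c3(2)] c3(3) r31 by auto
        ultimately have nq: "w!?q \<noteq> a" "w!?q \<noteq> Suc a" using out[OF ql] by auto
        have "w!?q \<le> w!p1" using row[of r1 s2 s1] c1 e h by simp
        moreover have "w!p2 < w!?q" using col[of r3 r1 s2] c1 c2 h r31 l by simp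
        ultimately show False using nq e vals(2) by auto
      qed
    qed
  qed
  have new: "(r1 = r2 \<longrightarrow> w'!p1 \<le> w'!p2) \<and> (r1 = r3 \<longrightarrow> w'!p1 \<le> w'!p3) \<and> (r2 = r3 \<longrightarrow> w'!p2 \<le> w'!p3) \<and>
         (s1 = s2 \<longrightarrow> w'!p2 < w'!p1) \<and> (s1 = s3 \<longrightarrow> w'!p3 < w'!p1) \<and> (s2 = s3 \<longrightarrow> w'!p3 < w'!p2)"
    by (rule pat_check[OF pat y A12 A13 A23 B12 B13 B23 geo1 geo2])
  have id1: "i = r1 \<and> j = s1" if "i < length la" "j < la!i" "idx la i j = p1" for i j
    using idx_inj[OF that(1,2) c1(1,2)] that(3) c1(3) by simp
  have id2: "i = r2 \<and> j = s2" if "i < length la" "j < la!i" "idx la i j = p2" for i j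
    using idx_inj[OF that(1,2) c2(1,2)] that(3) c2(3) by simp
  have id3: "i = r3 \<and> j = s3" if "i < length la" "j < la!i" "idx la i j = p3" for i j
    using idx_inj[OF that(1,2) c3(1,2)] that(3) c3(3) by simp
  have inT: "w!q \<in> {a, Suc a} \<and> w'!q \<in> {a, Suc a}" if "q = p1 \<or> q = p2 \<or> q = p3" for q
    using that vals by auto
  have row': "w' ! idx la i j \<le> w' ! idx la i j'" if h: "i < length la" "j < j'" "j' < la!i" for i j j'
  proof -
    let ?q = "idx la i j" and ?q' = "idx la i j'"
    have hj: "j < la!i" using h by simp
    have ql: "?q < length w" "?q' < length w" using idx_less_sum[OF h(1)] h lw by auto
    have old: "w!?q \<le> w!?q'" using row[OF h] .
    have qq: "?q < ?q'" using h by (simp add: idx_def)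
    show ?thesis
    proof (cases "?q = p1 \<or> ?q = p2 \<or> ?q = p3")
      case qT: True
      show ?thesis
      proof (cases "?q' = p1 \<or> ?q' = p2 \<or> ?q' = p3")
        case True
        have "(?q = p1 \<and> ?q' = p2) \<or> (?q = p1 \<and> ?q' = p3) \<or> (?q = p2 \<and> ?q' = p3)"
          using qT True qq ps by auto
        thus ?thesis
        proof (elim disjE conjE)
          assume "?q = p1" "?q' = p2"
          thus ?thesis using id1[OF h(1) hj] id2[OF h(1) h(3)] new by auto
        next
          assume "?q = p1" "?q' = p3"
          thus ?thesis using id1[OF h(1) hj] id3[OF h(1) h(3)] new by auto
        next
          assume "?q = p2" "?q' = p3"
          thus ?thesis using id2[OF h(1) hj] id3[OF h(1) h(3)] new by auto
        qed
      next
        case False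
        hence "w'!?q' = w!?q'" "w!?q' \<noteq> a" "w!?q' \<noteq> Suc a" using out[OF ql(2)] by auto
        thus ?thesis using inT[OF qT] old by auto
      qed
    next
      case qF: False
      hence o: "w'!?q = w!?q" "w!?q \<noteq> a" "w!?q \<noteq> Suc a" using out[OF ql(1)] by auto
      show ?thesis
      proof (cases "?q' = p1 \<or> ?q' = p2 \<or> ?q' = p3")
        case True
        thus ?thesis using inT[OF True] old o by auto
      next
        case False
        hence "w'!?q' = w!?q'" using out[OF ql(2)] by auto
        thus ?thesis using o old by simp
      qed
    qed
  qed
  have col': "w' ! idx la i j < w' ! idx la i' j" if h: "i < i'" "i' < length la" "j < la!i'" for i i' j
  proof -
    let ?q = "idx la i j" and ?q' = "idx la i' j"
    have hi: "i < length la" using h by simp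
    have hj: "j < la!i" using pm[of i i'] h by simp
    have ql: "?q < length w" "?q' < length w" using idx_less_sum[OF hi hj] idx_less_sum[OF h(2,3)] lw by auto
    have old: "w!?q < w!?q'" using col[OF h] .
    have qq: "?q' < ?q" using idx_lt_iff[OF h(2,3) hi hj] h by simp
    show ?thesis
    proof (cases "?q = p1 \<or> ?q = p2 \<or> ?q = p3")
      case qT: True
      show ?thesis
      proof (cases "?q' = p1 \<or> ?q' = p2 \<or> ?q' = p3")
        case True
        have "(?q' = p1 \<and> ?q = p2) \<or> (?q' = p1 \<and> ?q = p3) \<or> (?q' = p2 \<and> ?q = p3)"
          using qT True qq ps by auto
        thus ?thesis
        proof (elim disjE conjE)
          assume "?q' = p1" "?q = p2"
          thus ?thesis using id1[OF h(2,3)] id2[OF hi hj] new by auto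
        next
          assume "?q' = p1" "?q = p3"
          thus ?thesis using id1[OF h(2,3)] id3[OF hi hj] new by auto
        next
          assume "?q' = p2" "?q = p3"
          thus ?thesis using id2[OF h(2,3)] id3[OF hi hj] new by auto
        qed
      next
        case False
        hence "w'!?q' = w!?q'" "w!?q' \<noteq> a" "w!?q' \<noteq> Suc a" using out[OF ql(2)] by auto
        thus ?thesis using inT[OF qT] old by auto
      qed
    next
      case qF: False
      hence o: "w'!?q = w!?q" "w!?q \<noteq> a" "w!?q \<noteq> Suc a" using out[OF ql(1)] by auto
      show ?thesis
      proof (cases "?q' = p1 \<or> ?q' = p2 \<or> ?q' = p3")
        case True
        thus ?thesis using inT[OF True] old o by auto
      next
        case False
        hence "w'!?q' = w!?q'" using out[OF ql(2)] by auto
        thus ?thesis using o old by simp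
      qed
    qed
  qed
  show ?thesis unfolding semistd_def using part len lw row' col' by auto
qed

lemma nth_decomp2:
  assumes "q \<noteq> length u1" "q \<noteq> Suc (length u1 + length u2)"
    "q \<noteq> Suc (Suc (length u1 + length u2 + length u3))"
    "q < length (u1 @ x1 # u2 @ x2 # u3 @ x3 # u4)"
  shows "(u1 @ x1 # u2 @ x2 # u3 @ x3 # u4) ! q = (u1 @ y1 # u2 @ y2 # u3 @ y3 # u4) ! q \<and>
         (u1 @ x1 # u2 @ x2 # u3 @ x3 # u4) ! q \<in> set (u1 @ u2 @ u3 @ u4)"
  using assms by (auto simp: nth_append nth_Cons')

lemma sigma_semistd:
  assumes i: "indom a w" and ss: "semistd la w"
  shows "semistd la (sigma a w)"
proof -
  obtain u1 u2 u3 u4 x1 x2 x3 y1 y2 y3 where d: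
    "w = u1 @ x1 # u2 @ x2 # u3 @ x3 # u4"
    "sigma a w = u1 @ y1 # u2 @ y2 # u3 @ y3 # u4"
    "\<forall>x\<in>set (u1 @ u2 @ u3 @ u4). x \<noteq> a \<and> x \<noteq> Suc a"
    "[x1,x2,x3] \<in> pat6 a" "[y1,y2,y3] = sw3 a (Suc a) [x1,x2,x3]"
    using sigma_decomp[OF i] by metis
  let ?p1 = "length u1" and ?p2 = "Suc (length u1 + length u2)"
    and ?p3 = "Suc (Suc (length u1 + length u2 + length u3))"
  have wx: "w!?p1 = x1" "w!?p2 = x2" "w!?p3 = x3" using d(1) by (simp_all add: nth_append)
  have wy: "sigma a w!?p1 = y1" "sigma a w!?p2 = y2" "sigma a w!?p3 = y3" using d(2) by (simp_all add: nth_append)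
  show ?thesis
  proof (rule semistd_triple[OF ss, of _ ?p1 ?p2 ?p3 a])
    show "length (sigma a w) = length w" using d(1,2) by simp
    show "?p1 < ?p2" "?p2 < ?p3" "?p3 < length w" using d(1) by simp_all
    show "sigma a w ! q = w ! q \<and> w ! q \<noteq> a \<and> w ! q \<noteq> Suc a"
      if "q < length w" "q \<noteq> ?p1" "q \<noteq> ?p2" "q \<noteq> ?p3" for q
      using nth_decomp2[of q u1 u2 u3 x1 x2 x3 u4 y1 y2 y3] that d(1,2,3) by auto
    show "[w ! ?p1, w ! ?p2, w ! ?p3] \<in> pat6 a" using wx d(4) by simp
    show "[sigma a w ! ?p1, sigma a w ! ?p2, sigma a w ! ?p3] = sw3 a (Suc a) [w ! ?p1, w ! ?p2, w ! ?p3]"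
      using wx wy d(5) by simp
  qed
qed

lemma chain_semistd:
  assumes "semistd la w" "dbl (Suc n) (Suc n) w"
  shows "semistd la (sigma_chain n w) \<and> dbl 1 (Suc n) (sigma_chain n w)"
proof -
  have "dbl 1 (Suc n) (foldr sigma [1..<Suc n] w) \<and> semistd la (foldr sigma [1..<Suc n] w)"
  proof (rule chain_down[of n w "semistd la"])
    fix a x assume "1 \<le> a" "a \<le> n" "dbl (Suc a) (Suc n) x" "semistd la x"
    thus "semistd la (sigma a x)" using sigma_semistd dbl_indom1[of a "Suc n" x] by simp
  qed (use assms in auto)
  thus ?thesis unfolding sigma_chain_def by simp
qed

lemma unchain_semistd:
  assumes "semistd la x" "dbl 1 (Suc n) x"
  shows "semistd la (fold sigma [1..<Suc n] x) \<and> dbl (Suc n) (Suc n) (fold sigma [1..<Suc n] x)"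
proof -
  have "\<forall>x. dbl 1 (Suc n) x \<and> semistd la x \<longrightarrow> dbl (Suc n) (Suc n) (fold sigma [1..<Suc n] x) \<and> semistd la (fold sigma [1..<Suc n] x)"
  proof (rule chain_up)
    fix a x assume "1 \<le> a" "a \<le> n" "dbl a (Suc n) x" "semistd la x"
    thus "semistd la (sigma a x)" using sigma_semistd dbl_indom2[of a "Suc n" x] by simp
  qed auto
  thus ?thesis using assms by blast
qed

lemma chain_inverse1:
  "dbl 1 (Suc n) x \<Longrightarrow> sigma_chain n (fold sigma [1..<Suc n] x) = x"
  using chain_inv1[of 1 n] unfolding sigma_chain_def by simp

lemma chain_inverse2:
  "dbl (Suc n) (Suc n) z \<Longrightarrow> fold sigma [1..<Suc n] (sigma_chain n z) = z"
  using chain_inv2[of n z 1] unfolding sigma_chain_def by simp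

lemma chain_dbl:
  "dbl (Suc n) (Suc n) z \<Longrightarrow> dbl 1 (Suc n) (sigma_chain n z)"
  using chain_down[of n z "\<lambda>_. True" 1] unfolding sigma_chain_def by simp

lemma count_distinct: "distinct xs \<Longrightarrow> count_list xs v = (if v \<in> set xs then 1 else 0)"
  by (induction xs) auto

lemma distinct_count: "(\<And>v. count_list xs v \<le> 1) \<Longrightarrow> distinct xs"
proof (induction xs)
  case Nil thus ?case by simp
next
  case (Cons x xs)
  have "count_list (x#xs) x \<le> 1" using Cons.prems by blast
  hence "x \<notin> set xs" by (simp add: count_list_0_iff)
  moreover have "count_list xs v \<le> 1" for v using Cons.prems[of v] by (simp split: if_splits)
  ultimately show ?case using Cons.IH by simp
qed

lemma count_map: "count_list (map f xs) v = length (filter (\<lambda>u. f u = v) xs)"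
  by (induction xs) auto

lemma zfo_split: "1 \<notin> set u \<Longrightarrow> zero_first_one (u @ 1 # v) = u @ 0 # v"
  by (induction u) auto

lemma filter_eq_repl: "filter ((=) c) v = replicate (count_list v c) c"
  by (induction v) auto

lemma standard_counts:
  "standard n (la, w) \<Longrightarrow> count_list w v = (if 1 \<le> v \<and> v \<le> n then 1 else 0)"
  using count_distinct[of w v] by (auto simp: standard_iff)

lemma end_forward:
  assumes ss: "semistd la x" and d: "dbl 1 (Suc m) x"
  shows "standard (Suc (Suc m)) (la, tau1 (r1101 x)) \<and>
         filter (\<lambda>v. v = 1 \<or> v = 2) (tau1 (r1101 x)) = [1,2]"
proof -
  have cx: "count_list x v = (if v = 1 then 2 else if 1 \<le> v \<and> v \<le> Suc m then 1 else 0)" for v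
    using d unfolding dbl_def by blast
  have lx: "length x = Suc (Suc m)" using d unfolding dbl_def by simp
  have "1 \<in> set x" using cx[of 1] by (metis count_notin zero_neq_numeral)
  then obtain u v where x: "x = u @ 1 # v" "1 \<notin> set u" using split_list_first by metis
  have cv: "count_list v 1 = 1" using cx[of 1] x by simp
  have n0: "0 \<notin> set x" using cx[of 0] by (simp add: count_list_0_iff)
  have r: "r1101 x = u @ 0 # v" using cx[of 1] x zfo_split unfolding r1101_def by simp
  let ?z = "map Suc (u @ 0 # v)"
  have t: "tau1 (r1101 x) = ?z" using r by (simp add: tau1_def)
  let ?p = "length u"
  have zq: "?z ! q = (if q = ?p then 1 else Suc (x!q))" if "q < length x" for q
    using that x by (auto simp: nth_append nth_Cons')
  have xq1: "x!q \<noteq> 1" if "q < ?p" for q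
  proof -
    have "x!q = u!q" using that x(1) by (simp add: nth_append)
    moreover have "u!q \<in> set u" using that by simp
    ultimately show ?thesis using x(2) by auto
  qed
  have xpos: "x!q \<ge> 1" if "q < length x" for q using n0 that by (metis less_one not_le nth_mem)
  have xp: "x!?p = 1" using x by simp
  have lz: "length ?z = length x" using x by simp
  have cz: "count_list ?z c = (if 1 \<le> c \<and> c \<le> Suc (Suc m) then 1 else 0)" for c
  proof -
    have cu: "count_list u 1 = 0" using x by (simp add: count_list_0_iff)
    have c0: "count_list u 0 = 0" "count_list v 0 = 0" using n0 x by (auto simp: count_list_0_iff)
    have ci: "count_list (map Suc l) (Suc k) = count_list l k" for l k
      by (induction l) auto
    show ?thesis
    proof (cases c)
      case 0 thus ?thesis by (simp add: count_list_0_iff)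
    next
      case (Suc k)
      consider "k = 0" | "k = 1" | "k \<noteq> 0 \<and> k \<noteq> 1" by blast
      thus ?thesis
      proof cases
        case 1 thus ?thesis using Suc c0 ci by simp
      next
        case 2 thus ?thesis using Suc ci cv cu by simp
      next
        case 3
        have "count_list x k = count_list u k + count_list v k" using x 3 by simp
        thus ?thesis using Suc ci cx[of k] 3 by auto
      qed
    qed
  qed
  have dz: "distinct ?z" using cz by (intro distinct_count) simp
  have sz: "set ?z = {1..Suc (Suc m)}"
  proof -
    have h: "c \<in> set ?z \<longleftrightarrow> 1 \<le> c \<and> c \<le> Suc (Suc m)" for c
      using cz[of c] count_list_0_iff[of ?z c] by (auto split: if_splits)
    show ?thesis by (rule set_eqI) (unfold atLeastAtMost_iff, rule h)
  qed
  have part: "is_partition la" and lw: "length x = sum_list la"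
    and row: "\<And>i j j'. i < length la \<Longrightarrow> j < j' \<Longrightarrow> j' < la!i \<Longrightarrow> x ! idx la i j \<le> x ! idx la i j'"
    and col: "\<And>i i' j. i < i' \<Longrightarrow> i' < length la \<Longrightarrow> j < la!i' \<Longrightarrow> x ! idx la i j < x ! idx la i' j"
    using ss unfolding semistd_def by blast+
  have ssz: "semistd la ?z"
    unfolding semistd_def
  proof (intro conjI allI impI)
    show "is_partition la" by (rule part)
    show "length ?z = sum_list la" using lz lw by simp
  next
    fix i j j' assume h: "i < length la \<and> j < j' \<and> j' < la ! i"
    let ?q = "idx la i j" and ?q' = "idx la i j'"
    have ql: "?q < length x" "?q' < length x" using idx_less_sum[of i la] h lw by auto
    have qq: "?q < ?q'" using h by (simp add: idx_def)
    have o: "x!?q \<le> x!?q'" using row h by blast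
    show "?z ! ?q \<le> ?z ! ?q'"
    proof (cases "?q' = ?p")
      case True
      thus ?thesis using xq1[of ?q] qq o xp xpos[OF ql(1)] by simp
    next
      case False thus ?thesis using zq ql o by simp
    qed
  next
    fix i i' j assume h: "i < i' \<and> i' < length la \<and> j < la ! i'"
    let ?q = "idx la i j" and ?q' = "idx la i' j"
    have hj: "j < la!i" using is_partition_mono[OF part, of i i'] h by simp
    have ql: "?q < length x" "?q' < length x" using idx_less_sum[of i la] idx_less_sum[of i' la] h hj lw by auto
    have o: "x!?q < x!?q'" using col h by blast
    show "?z ! ?q < ?z ! ?q'"
    proof (cases "?q' = ?p")
      case True
      thus ?thesis using o xp xpos[OF ql(1)] by simp
    next
      case False thus ?thesis using zq ql o by auto
    qed
  qed
  have st: "standard (Suc (Suc m)) (la, ?z)"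
    unfolding standard_iff using ssz dz sz lz lx lw part by simp
  have "filter (\<lambda>c. c = 1 \<or> c = 2) ?z = [1,2]"
  proof -
    have "0 \<notin> set u" using n0 x by simp
    hence "\<forall>c\<in>set u. c \<noteq> 0 \<and> c \<noteq> 1" using x(2) by metis
    hence "filter (\<lambda>c. c = 1 \<or> c = 2) (map Suc u) = []" by (auto simp: filter_empty_conv)
    moreover have "filter (\<lambda>c. c = 1 \<or> c = 2) (map Suc v) = map Suc (filter ((=) 1) v)"
    proof -
      have "filter (\<lambda>c. c = 1 \<or> c = 2) (map Suc v) = map Suc (filter (\<lambda>c. c = 0 \<or> c = 1) v)"
        by (induction v) auto
      also have "filter (\<lambda>c. c = 0 \<or> c = 1) v = filter ((=) 1) v"
        using n0 x by (intro filter_cong) auto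
      finally show ?thesis .
    qed
    moreover have "filter ((=) 1) v = [1]" using filter_eq_repl[of 1 v] cv by simp
    ultimately show ?thesis by simp
  qed
  thus ?thesis using st t by simp
qed

definition ush :: "nat \<Rightarrow> nat" where "ush v = (if v = 1 then 1 else v - 1)"

lemma begin_backward:
  assumes st: "standard (Suc (Suc m)) (la, w)" and f: "filter (\<lambda>v. v = 1 \<or> v = 2) w = [1,2]"
  shows "semistd la (map ush w) \<and> dbl 1 (Suc m) (map ush w) \<and> tau1 (r1101 (map ush w)) = w"
proof -
  let ?Q = "\<lambda>v::nat. v = 1 \<or> v = 2"
  obtain a b c where w: "w = a @ 1 # b @ 2 # c" "\<forall>u\<in>set a. \<not> ?Q u" "\<forall>u\<in>set b. \<not> ?Q u" "\<forall>u\<in>set c. \<not> ?Q u"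
  proof -
    obtain a v1 where 1: "w = a @ 1 # v1" "\<forall>u\<in>set a. \<not> ?Q u" "filter ?Q v1 = [2]"
      using f filter_eq_Cons_iff[of ?Q w 1 "[2]"] by metis
    obtain b c where 2: "v1 = b @ 2 # c" "\<forall>u\<in>set b. \<not> ?Q u" "filter ?Q c = []"
      using 1(3) filter_eq_Cons_iff[of ?Q v1 2 "[]"] by metis
    show ?thesis using that[of a b c] 1 2 by (simp add: filter_empty_conv)
  qed
  have sw: "set w = {1..Suc (Suc m)}" "distinct w" "length w = Suc (Suc m)" "length w = sum_list la"
    and ss: "semistd la w" and part: "is_partition la"
    using st by (auto simp: standard_iff)
  have pos: "v \<in> set w \<Longrightarrow> 1 \<le> v" for v using sw by auto
  have cw: "count_list w v = (if 1 \<le> v \<and> v \<le> Suc (Suc m) then 1 else 0)" for v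
    using standard_counts[OF st] .
  let ?x = "map ush w"
  have ua: "1 \<notin> set (map ush a)" using w pos by (auto simp: ush_def)
  have xw: "?x = map ush a @ 1 # map ush b @ 1 # map ush c" using w by (simp add: ush_def)
  have c1: "count_list ?x 1 = 2"
  proof -
    have g: "count_list (map ush l) 1 = 0" if "set l \<subseteq> set w" "\<forall>u\<in>set l. \<not> ?Q u" for l
      using that pos by (auto simp: count_list_0_iff ush_def)
    have "count_list (map ush a) 1 = 0" "count_list (map ush b) 1 = 0" "count_list (map ush c) 1 = 0"
      by (rule g; use w in auto)+
    thus ?thesis using xw by simp
  qed
  have "r1101 ?x = map ush a @ 0 # map ush b @ 1 # map ush c"
    using c1 xw zfo_split[OF ua] unfolding r1101_def by simp
  moreover have "map (Suc \<circ> ush) l = l" if "set l \<subseteq> set w" "\<forall>u\<in>set l. \<not> ?Q u" for l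
  proof -
    have "Suc (ush u) = u" if "u \<in> set l" for u
      using that \<open>set l \<subseteq> set w\<close> \<open>\<forall>u\<in>set l. \<not> ?Q u\<close> pos[of u] by (auto simp: ush_def)
    thus ?thesis by (simp add: map_idI)
  qed
  ultimately have t: "tau1 (r1101 ?x) = w"
  proof -
    assume r: "r1101 ?x = map ush a @ 0 # map ush b @ 1 # map ush c"
      and g: "\<And>l. set l \<subseteq> set w \<Longrightarrow> \<forall>u\<in>set l. \<not> ?Q u \<Longrightarrow> map (Suc \<circ> ush) l = l"
    have "map (Suc \<circ> ush) a = a" "map (Suc \<circ> ush) b = b" "map (Suc \<circ> ush) c = c"
      by (rule g; use w in auto)+
    thus ?thesis using r w(1) by (simp add: tau1_def)
  qed
  have cx: "count_list ?x v = (if v = 1 then 2 else if 1 \<le> v \<and> v \<le> Suc m then 1 else 0)" for v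
  proof (cases "v = 1 \<or> v = 0")
    case True
    moreover have "count_list ?x 0 = 0" using pos by (fastforce simp: count_list_0_iff ush_def)
    ultimately show ?thesis using c1 by auto
  next
    case False
    have "filter (\<lambda>u. ush u = v) w = filter ((=) (Suc v)) w"
    proof (rule filter_cong)
      fix u assume "u \<in> set w"
      thus "(ush u = v) = (Suc v = u)" using pos[of u] False by (auto simp: ush_def)
    qed simp
    hence "count_list ?x v = count_list w (Suc v)"
    proof -
      assume filt: "filter (\<lambda>u. ush u = v) w = filter ((=) (Suc v)) w"
      have "count_list ?x v = length (filter (\<lambda>u. ush u = v) w)" by (rule count_map)
      also have "\<dots> = length (filter ((=) (Suc v)) w)" by (simp only: filt)
      also have "\<dots> = count_list w (Suc v)" by (rule count_list_eq_length_filter[symmetric])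
      finally show ?thesis .
    qed
    thus ?thesis using cw[of "Suc v"] False by auto
  qed
  have d: "dbl 1 (Suc m) ?x" unfolding dbl_def using cx sw by simp
  have mono: "ush u \<le> ush u'" if "u \<le> u'" for u u' using that by (auto simp: ush_def)
  have strict: "ush u < ush u'" if "u < u'" "1 \<le> u" "\<not> (u = 1 \<and> u' = 2)" for u u'
    using that by (auto simp: ush_def)
  have lw: "length w = sum_list la" using sw by simp
  have row: "\<And>i j j'. i < length la \<Longrightarrow> j < j' \<Longrightarrow> j' < la!i \<Longrightarrow> w ! idx la i j \<le> w ! idx la i j'"
    and col: "\<And>i i' j. i < i' \<Longrightarrow> i' < length la \<Longrightarrow> j < la!i' \<Longrightarrow> w ! idx la i j < w ! idx la i' j"
    using ss unfolding semistd_def by blast+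
  have p1: "w ! length a = 1" and p2: "w ! Suc (length a + length b) = 2" using w by (simp_all add: nth_append)
  have uniq: "q = q'" if "q < length w" "q' < length w" "w!q = w!q'" for q q'
    using that sw(2) by (simp add: nth_eq_iff_index_eq)
  have "semistd la ?x"
    unfolding semistd_def
  proof (intro conjI allI impI)
    show "is_partition la" by (rule part)
    show "length ?x = sum_list la" using lw by simp
  next
    fix i j j' assume h: "i < length la \<and> j < j' \<and> j' < la ! i"
    have ql: "idx la i j < length w" "idx la i j' < length w" using idx_less_sum[of i la] h lw by auto
    show "?x ! idx la i j \<le> ?x ! idx la i j'" using row[of i j j'] h ql mono by simp
  next
    fix i i' j assume h: "i < i' \<and> i' < length la \<and> j < la ! i'"
    let ?q = "idx la i j" and ?q' = "idx la i' j"
    have hj: "j < la!i" using is_partition_mono[OF part, of i i'] h by simp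
    have ql: "?q < length w" "?q' < length w" using idx_less_sum[of i la] idx_less_sum[of i' la] h hj lw by auto
    have qq: "?q' < ?q" using idx_lt_iff[of i' la j i j] h hj by simp
    have o: "w!?q < w!?q'" using col h by blast
    have "\<not> (w!?q = 1 \<and> w!?q' = 2)"
    proof
      assume e: "w!?q = 1 \<and> w!?q' = 2"
      have "?q = length a" using uniq[of ?q "length a"] ql e p1 w by simp
      moreover have "?q' = Suc (length a + length b)" using uniq[of ?q' "Suc (length a + length b)"] ql e p2 w by simp
      ultimately show False using qq by simp
    qed
    thus "?x ! ?q < ?x ! ?q'" using strict[OF o] pos[of "w!?q"] ql by simp
  qed
  thus ?thesis using d t by simp
qed

lemma cells_bij: "bij_betw (\<lambda>(i,j). idx la i j) (cells la) {..<sum_list la}"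
proof (rule bij_betwI')
  fix x y assume "x \<in> cells la" "y \<in> cells la"
  thus "((\<lambda>(i,j). idx la i j) x = (\<lambda>(i,j). idx la i j) y) = (x = y)"
    using idx_inj by (auto simp: cells_def)
next
  fix x assume "x \<in> cells la"
  thus "(\<lambda>(i,j). idx la i j) x \<in> {..<sum_list la}" using idx_less_sum by (auto simp: cells_def)
next
  fix q assume "q \<in> {..<sum_list la}"
  thus "\<exists>x\<in>cells la. q = (\<lambda>(i,j). idx la i j) x" using idx_surj[of q la] by (auto simp: cells_def)
qed

lemma card_cells: "card (cells la) = sum_list la"
  using bij_betw_same_card[OF cells_bij] by simp

lemma finite_cells: "finite (cells la)"
  using bij_betw_finite[OF cells_bij] by simp

lemma card_cells_val:
  assumes lz: "length z = sum_list la"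
  shows "card {c \<in> cells la. P (z ! idx la (fst c) (snd c))} = length (filter P z)"
proof -
  let ?f = "\<lambda>(i,j). idx la i j"
  let ?A = "{c \<in> cells la. P (z ! idx la (fst c) (snd c))}"
  have inj: "inj_on ?f ?A" using bij_betw_imp_inj_on[OF cells_bij[of la]] by (rule inj_on_subset) auto
  have "?f ` ?A = {q. q < length z \<and> P (z!q)}"
  proof
    show "?f ` ?A \<subseteq> {q. q < length z \<and> P (z!q)}" using idx_less_sum lz by (auto simp: cells_def)
    show "{q. q < length z \<and> P (z!q)} \<subseteq> ?f ` ?A"
    proof
      fix q assume "q \<in> {q. q < length z \<and> P (z!q)}"
      then obtain i j where "i < length la" "j < la!i" "q = idx la i j" "P (z!q)"
        using idx_surj[of q la] lz by auto
      thus "q \<in> ?f ` ?A" by (auto simp: cells_def image_iff intro!: bexI[of _ "(i,j)"])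
    qed
  qed
  hence "card ?A = card {q. q < length z \<and> P (z!q)}" using card_image[OF inj] by simp
  thus ?thesis by (simp add: length_filter_conv_card)
qed

lemma word_of_rows_append: "word_of_rows (xs @ ys) = word_of_rows ys @ word_of_rows xs"
  by (simp add: word_of_rows_def)

lemma word_of_rows_empties: "\<forall>r\<in>set ys. r = [] \<Longrightarrow> word_of_rows ys = []"
  by (simp add: word_of_rows_def)

lemma filter_word_of_rows: "filter P (word_of_rows rs) = word_of_rows (map (filter P) rs)"
  by (simp add: word_of_rows_def filter_concat rev_map)

lemma count_word_of_rows_sum: "length (word_of_rows rs) = sum_list (map length rs)"
  by (rule length_word_of_rows)

lemma A_forward:
  assumes st: "standard m (la, w)" and s: "s \<in> A_set (la, w)"
  shows "semistd (fst s) (snd s) \<and> dbl (Suc m) (Suc m) (snd s) \<and>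
         filter (\<lambda>v. v \<noteq> Suc m) (snd s) = w"
proof -
  have lw: "length w = m" using st by (simp add: standard_iff)
  define oldrow where "oldrow i = (if i < length la then rows la w ! i else [])" for i
  have "s \<in> {(mu, word_of_rows (map (\<lambda>i. oldrow i @ replicate (mu ! i - length (oldrow i)) (Suc m)) [0..<length mu])) | mu.
         is_partition mu \<and> cells la \<subseteq> cells mu \<and> card (cells mu - cells la) = 2 \<and>
         (\<forall>c \<in> cells mu - cells la. \<forall>d \<in> cells mu - cells la. c \<noteq> d \<longrightarrow> snd c \<noteq> snd d)}"
    using s lw unfolding A_set_def Let_def oldrow_def fst_conv snd_conv by simp
  then obtain mu where s_def: "s = (mu, word_of_rows (map (\<lambda>i. oldrow i @ replicate (mu ! i - length (oldrow i)) (Suc m)) [0..<length mu]))"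
    and mu: "is_partition mu" "cells la \<subseteq> cells mu" "card (cells mu - cells la) = 2"
    "\<forall>c \<in> cells mu - cells la. \<forall>d \<in> cells mu - cells la. c \<noteq> d \<longrightarrow> snd c \<noteq> snd d"
    by blast
  define R where "R = map (\<lambda>i. oldrow i @ replicate (mu ! i - length (oldrow i)) (Suc m)) [0..<length mu]"
  have sR: "s = (mu, word_of_rows R)" using s_def R_def by simp
  have part: "is_partition la" and sl: "sum_list la = m" and ssw: "semistd la w" and dw: "distinct w"
    and setw: "set w = {1..m}"
    using st by (auto simp: standard_iff)
  have lwl: "length w = sum_list la" using lw sl by simp
  have lla: "length la \<le> length mu"
  proof (rule ccontr)
    assume "\<not> length la \<le> length mu"
    hence "(length mu, 0) \<in> cells la" using is_partition_pos[OF part, of "length mu"] by (auto simp: cells_def)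
    thus False using mu(2) by (auto simp: cells_def)
  qed
  have lai: "la!i \<le> mu!i" if "i < length la" for i
  proof -
    have "0 < la!i" using is_partition_pos[OF part that] .
    hence "(i, la!i - 1) \<in> cells la" using that by (auto simp: cells_def)
    thus ?thesis using mu(2) by (auto simp: cells_def)
  qed
  define lo where "lo i = (if i < length la then la!i else 0)" for i
  have lold: "length (oldrow i) = lo i" for i
    using length_rows_nth[OF lwl] by (simp add: oldrow_def lo_def)
  have lomu: "lo i \<le> mu!i" if "i < length mu" for i using lai by (simp add: lo_def)
  have lR: "length R = length mu" "\<forall>i<length mu. length (R!i) = mu!i"
    using lomu lold by (auto simp: R_def)
  have rowsR: "rows mu (word_of_rows R) = R" using rows_word_of_rows[OF lR] .
  have lz: "length (word_of_rows R) = sum_list mu"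
  proof -
    have "map length R = mu" using lR by (intro nth_equalityI) auto
    thus ?thesis by (simp add: length_word_of_rows)
  qed
  let ?z = "word_of_rows R"
  have ent: "?z ! idx mu i j = (if j < lo i then w ! idx la i j else Suc m)"
    if "i < length mu" "j < mu!i" for i j
  proof -
    have "?z ! idx mu i j = R!i!j" using rows_nth_nth[OF lz that] rowsR by simp
    also have "\<dots> = (if j < lo i then oldrow i ! j else Suc m)"
      using that lold by (simp add: R_def nth_append)
    also have "\<dots> = (if j < lo i then w ! idx la i j else Suc m)"
      using rows_nth_nth[OF lwl] by (simp add: oldrow_def lo_def)
    finally show ?thesis .
  qed
  have fR: "filter (\<lambda>v. v \<noteq> Suc m) ?z = w"
  proof -
    have nsm: "Suc m \<notin> set (oldrow i)" for i
    proof
      assume "Suc m \<in> set (oldrow i)"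
      hence "i < length la" "Suc m \<in> set (rows la w ! i)" by (auto simp: oldrow_def split: if_splits)
      hence "Suc m \<in> set w"
      proof -
        assume a: "i < length la" "Suc m \<in> set (rows la w ! i)"
        hence "Suc m \<in> set (take (la!i) (drop (sum_list (drop (Suc i) la)) w))" using rows_nth[OF lwl a(1)] by simp
        hence "Suc m \<in> set (drop (sum_list (drop (Suc i) la)) w)" by (rule in_set_takeD)
        thus ?thesis by (rule in_set_dropD)
      qed
      thus False using setw by auto
    qed
    have "map (filter (\<lambda>v. v \<noteq> Suc m)) R = map oldrow [0..<length mu]"
      using nsm by (auto simp: R_def filter_empty_conv intro!: filter_True)
    also have "\<dots> = rows la w @ replicate (length mu - length la) []"
    proof (rule nth_equalityI)
      show "length (map oldrow [0..<length mu]) = length (rows la w @ replicate (length mu - length la) [])"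
        using lla by simp
    next
      fix i assume "i < length (map oldrow [0..<length mu])"
      thus "map oldrow [0..<length mu] ! i = (rows la w @ replicate (length mu - length la) []) ! i"
        by (auto simp: oldrow_def nth_append)
    qed
    finally show ?thesis
      by (simp add: filter_word_of_rows word_of_rows_append word_of_rows_empties word_of_rows_rows[OF lwl])
  qed
  have "card (cells mu - cells la) = card (cells mu) - card (cells la)"
    using card_Diff_subset[OF _ mu(2)] finite_cells by auto
  hence smu: "sum_list mu = Suc (Suc m)" using mu(3) card_cells[of mu] card_cells[of la] sl by simp
  have cz: "count_list ?z v = (if v = Suc (Suc m) - 1 then 2 else if 1 \<le> v \<and> v \<le> Suc m then 1 else 0)" for v
  proof (cases "v = Suc m")
    case True
    have "length (filter (\<lambda>v. v \<noteq> Suc m) ?z) + length (filter (\<lambda>v. \<not> v \<noteq> Suc m) ?z) = length ?z"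
      by (rule sum_length_filter_compl)
    hence "length (filter (\<lambda>v. \<not> v \<noteq> Suc m) ?z) = 2" using fR lw lz smu by simp
    moreover have "filter (\<lambda>v. \<not> v \<noteq> Suc m) ?z = filter ((=) (Suc m)) ?z" by (rule filter_cong) auto
    ultimately have "length (filter ((=) (Suc m)) ?z) = 2" by simp
    thus ?thesis using True by (simp add: count_list_eq_length_filter)
  next
    case False
    have "count_list ?z v = count_list w v" using count_filter[of "\<lambda>v. v \<noteq> Suc m" v ?z] fR False by simp
    thus ?thesis using standard_counts[OF st, of v] False by auto
  qed
  have d: "dbl (Suc m) (Suc m) ?z" unfolding dbl_def using cz lz smu by auto
  have wle: "w!q \<le> m" if "q < length w" for q using setw that nth_mem by fastforce
  have rowL: "\<And>i j j'. i < length la \<Longrightarrow> j < j' \<Longrightarrow> j' < la!i \<Longrightarrow> w ! idx la i j \<le> w ! idx la i j'"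
    and colL: "\<And>i i' j. i < i' \<Longrightarrow> i' < length la \<Longrightarrow> j < la!i' \<Longrightarrow> w ! idx la i j < w ! idx la i' j"
    using ssw unfolding semistd_def by blast+
  have "semistd mu ?z"
    unfolding semistd_def
  proof (intro conjI allI impI)
    show "is_partition mu" by (rule mu(1))
    show "length ?z = sum_list mu" by (rule lz)
  next
    fix i j j' assume h: "i < length mu \<and> j < j' \<and> j' < mu ! i"
    show "?z ! idx mu i j \<le> ?z ! idx mu i j'"
    proof (cases "j' < lo i")
      case True
      hence "i < length la" "j' < la!i" by (auto simp: lo_def split: if_splits)
      thus ?thesis using ent[of i j] ent[of i j'] h True rowL by auto
    next
      case False
      have "j < lo i \<Longrightarrow> w ! idx la i j \<le> m"
        using wle idx_less_sum[of i la j] lwl by (auto simp: lo_def split: if_splits)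
      thus ?thesis using ent[of i j] ent[of i j'] h False by auto
    qed
  next
    fix i i' j assume h: "i < i' \<and> i' < length mu \<and> j < mu ! i'"
    have hj: "j < mu!i" using is_partition_mono[OF mu(1), of i i'] h by simp
    have hi: "i < length mu" using h by simp
    show "?z ! idx mu i j < ?z ! idx mu i' j"
    proof (cases "j < lo i'")
      case True
      hence a: "i' < length la" "j < la!i'" by (auto simp: lo_def split: if_splits)
      hence b: "i < length la" "j < la!i" using h is_partition_mono[OF part, of i i'] by auto
      hence "j < lo i" by (simp add: lo_def)
      thus ?thesis using ent[OF hi hj] ent[of i' j] h True colL[of i i' j] a by auto
    next
      case False
      have "j < lo i"
      proof (rule ccontr)
        assume nj: "\<not> j < lo i"
        have "(i,j) \<in> cells mu - cells la" using nj hi hj by (auto simp: cells_def lo_def split: if_splits)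
        moreover have "(i',j) \<in> cells mu - cells la" using False h by (auto simp: cells_def lo_def split: if_splits)
        ultimately show False using mu(4)[rule_format, of "(i,j)" "(i',j)"] h by simp
      qed
      moreover have "w ! idx la i j \<le> m"
        using wle idx_less_sum[of i la j] lwl \<open>j < lo i\<close> by (auto simp: lo_def split: if_splits)
      ultimately show ?thesis using ent[OF hi hj] ent[of i' j] h False by auto
    qed
  qed
  thus ?thesis using d fR sR by simp
qed

lemma sorted_max_split:
  fixes r :: "nat list"
  assumes "sorted r" "\<forall>x\<in>set r. x \<le> M"
  shows "r = filter (\<lambda>x. x \<noteq> M) r @ replicate (length r - length (filter (\<lambda>x. x \<noteq> M) r)) M"
  using assms
proof (induction r)
  case Nil thus ?case by simp
next
  case (Cons x r)
  show ?case
  proof (cases "x = M")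
    case True
    have "\<forall>y\<in>set r. y = M" using Cons.prems True by (auto intro: antisym)
    hence "filter (\<lambda>x. x \<noteq> M) r = []" "r = replicate (length r) M"
      by (auto simp: filter_empty_conv intro: replicate_eqI)
    thus ?thesis using True by simp
  next
    case False
    have "length (filter (\<lambda>x. x \<noteq> M) r) \<le> length r" by (rule length_filter_le)
    thus ?thesis using Cons False by (simp add: Suc_diff_le)
  qed
qed

lemma A_backward:
  assumes ss: "semistd mu z" and d: "dbl (Suc m) (Suc m) z"
  shows "\<exists>T. standard m T \<and> (mu, z) \<in> A_set T"
proof -
  let ?M = "Suc m"
  let ?P = "\<lambda>v. v \<noteq> ?M"
  have part: "is_partition mu" and lz: "length z = sum_list mu"
    and row: "\<And>i j j'. i < length mu \<Longrightarrow> j < j' \<Longrightarrow> j' < mu!i \<Longrightarrow> z ! idx mu i j \<le> z ! idx mu i j'"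
    and col: "\<And>i i' j. i < i' \<Longrightarrow> i' < length mu \<Longrightarrow> j < mu!i' \<Longrightarrow> z ! idx mu i j < z ! idx mu i' j"
    using ss unfolding semistd_def by blast+
  have cz: "count_list z v = (if v = ?M then 2 else if 1 \<le> v \<and> v \<le> ?M then 1 else 0)" for v
    using d unfolding dbl_def by blast
  have lz2: "length z = Suc (Suc m)" using d unfolding dbl_def by simp
  have zle: "x \<le> ?M" if "x \<in> set z" for x
    using cz[of x] that count_list_0_iff[of z x] by (auto split: if_splits)
  define rz where "rz = rows mu z"
  have lrz: "length rz = length mu" by (simp add: rz_def)
  have lrzi: "length (rz!i) = mu!i" if "i < length mu" for i
    using length_rows_nth[OF lz that] by (simp add: rz_def)
  have erz: "rz!i!j = z ! idx mu i j" if "i < length mu" "j < mu!i" for i j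
    using rows_nth_nth[OF lz that] by (simp add: rz_def)
  have setrz: "set (rz!i) \<subseteq> set z" if i: "i < length mu" for i
  proof
    fix x assume "x \<in> set (rz!i)"
    then obtain j where "j < mu!i" "x = rz!i!j" using lrzi[OF i] by (auto simp: in_set_conv_nth)
    thus "x \<in> set z" using erz[OF i] idx_less_sum[OF i] lz by simp
  qed
  define FR where "FR = map (filter ?P) rz"
  define L where "L = map length FR"
  have lL: "length L = length mu" "length FR = length mu" by (simp_all add: L_def FR_def lrz)
  have LFR: "L!i = length (FR!i)" if "i < length mu" for i using that lL by (simp add: L_def)
  have F1: "rz!i = FR!i @ replicate (mu!i - L!i) ?M" if i: "i < length mu" for i
  proof -
    have "sorted (rz!i)"
    proof (rule sorted_iff_nth_mono[THEN iffD2], intro allI impI)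
      fix j j' assume "j \<le> j'" "j' < length (rz!i)"
      thus "rz!i!j \<le> rz!i!j'" using row[OF i, of j j'] erz[OF i] lrzi[OF i]
        by (cases "j = j'") auto
    qed
    moreover have "\<forall>x\<in>set (rz!i). x \<le> ?M" using setrz[OF i] zle by blast
    ultimately show ?thesis using sorted_max_split[of "rz!i" ?M] lrzi[OF i] i
      by (simp add: FR_def L_def lrz)
  qed
  have Lle: "L!i \<le> mu!i" if "i < length mu" for i
    using LFR[OF that] lrzi[OF that] length_filter_le[of ?P "rz!i"] that by (simp add: FR_def lrz)
  have ent1: "z ! idx mu i j \<noteq> ?M \<longleftrightarrow> j < L!i" if "i < length mu" "j < mu!i" for i j
  proof -
    have "rz!i!j = (FR!i @ replicate (mu!i - L!i) ?M) ! j" using F1[OF that(1)] by simp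
    moreover have "\<forall>x\<in>set (FR!i). x \<noteq> ?M" using that(1) lL by (simp add: FR_def lrz)
    ultimately show ?thesis using erz[OF that] LFR[OF that(1)] that Lle[OF that(1)]
      by (auto simp: nth_append)
  qed
  have ent2: "FR!i!j = z ! idx mu i j" if "i < length mu" "j < L!i" for i j
  proof -
    have jm: "j < mu!i" using Lle[OF that(1)] that by simp
    have "rz!i!j = FR!i!j" using F1[OF that(1)] LFR[OF that(1)] that by (simp add: nth_append)
    thus ?thesis using erz[OF that(1) jm] by simp
  qed
  have Ldec: "L!(Suc i) \<le> L!i" if "Suc i < length mu" for i
  proof (rule ccontr)
    assume "\<not> L!(Suc i) \<le> L!i"
    hence j: "L!i < L!(Suc i)" by simp
    let ?j = "L!i"
    have jm: "?j < mu!(Suc i)" using j Lle[OF that] by simp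
    have jm': "?j < mu!i" using jm is_partition_mono[OF part, of i "Suc i"] that by simp
    have "z ! idx mu (Suc i) ?j \<noteq> ?M" using ent1[OF that jm] j by simp
    moreover have "z ! idx mu (Suc i) ?j \<le> ?M" using zle idx_less_sum[OF that jm] lz by simp
    moreover have "z ! idx mu i ?j < z ! idx mu (Suc i) ?j" using col[OF _ that jm] by simp
    ultimately have "z ! idx mu i ?j \<noteq> ?M" by simp
    thus False using ent1[of i ?j] jm' that by simp
  qed
  have Ldec2: "L!i' \<le> L!i" if "i \<le> i'" "i' < length mu" for i i'
    using that
  proof (induction i')
    case 0 thus ?case by simp
  next
    case (Suc k)
    show ?case
    proof (cases "i = Suc k")
      case True thus ?thesis by simp
    next
      case False
      hence "L!k \<le> L!i" using Suc by simp
      thus ?thesis using Ldec[of k] Suc.prems by simp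
    qed
  qed
  define la where "la = takeWhile (\<lambda>l. 0 < l) L"
  define k where "k = length la"
  have kle: "k \<le> length mu" using lL length_takeWhile_le[of "\<lambda>l. 0 < l" L] by (simp add: k_def la_def)
  have lai: "la!i = L!i" if "i < k" for i using that by (simp add: la_def k_def takeWhile_nth)
  have Lz: "L!i = 0" if "k \<le> i" "i < length mu" for i
  proof -
    have "k < length L" using that lL by simp
    hence "\<not> 0 < L!k" using nth_length_takeWhile[of "\<lambda>l. 0 < l" L] by (simp add: la_def k_def)
    thus ?thesis using Ldec2[of k i] that by simp
  qed
  have part_la: "is_partition la"
    unfolding is_partition_def
  proof
    show "sorted_wrt (\<lambda>x y. y \<le> x) la"
      using Ldec2 lai kle by (auto simp: sorted_wrt_iff_nth_less k_def)
    show "\<forall>x\<in>set la. 0 < x" by (auto simp: la_def dest: set_takeWhileD)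
  qed
  define w where "w = filter ?P z"
  have FRe: "FR!i = []" if "k \<le> i" "i < length mu" for i using Lz[OF that] LFR[OF that(2)] by simp
  have wFR: "w = word_of_rows FR"
    using filter_word_of_rows[of ?P rz] word_of_rows_rows[OF lz] by (simp add: w_def FR_def rz_def)
  have "FR = take k FR @ drop k FR" by simp
  moreover have "\<forall>r\<in>set (drop k FR). r = []"
  proof
    fix r assume "r \<in> set (drop k FR)"
    then obtain t where "t < length (drop k FR)" "r = drop k FR ! t" by (auto simp: in_set_conv_nth)
    thus "r = []" using FRe[of "k + t"] lL kle by simp
  qed
  ultimately have wtk: "w = word_of_rows (take k FR)"
  proof -
    assume e: "FR = take k FR @ drop k FR" and em: "\<forall>r\<in>set (drop k FR). r = []"
    have "word_of_rows (drop k FR) = []" using word_of_rows_empties[OF em] .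
    hence "word_of_rows (take k FR @ drop k FR) = word_of_rows (take k FR)"
      using word_of_rows_append[of "take k FR" "drop k FR"] by simp
    thus ?thesis using wFR e by simp
  qed
  have mtk: "map length (take k FR) = la"
    by (rule nth_equalityI) (use lL kle LFR lai in \<open>auto simp: k_def\<close>)
  have lwla: "length w = sum_list la" using wtk mtk by (simp add: length_word_of_rows)
  have h1: "length (take k FR) = length la" using mtk by (metis length_map)
  have h2: "\<forall>i<length la. length (take k FR ! i) = la!i" using mtk by (metis length_map nth_map)
  have rw: "rows la w = take k FR"
    using rows_word_of_rows[OF h1 h2] wtk by simp
  have cw: "count_list w v = (if 1 \<le> v \<and> v \<le> m then 1 else 0)" for v
  proof (cases "v = ?M")
    case True thus ?thesis by (simp add: w_def count_list_0_iff)
  next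
    case False thus ?thesis using count_filter[of ?P v z] cz[of v] by (auto simp: w_def)
  qed
  have lw: "length w = m"
  proof -
    have "length (filter ?P z) + length (filter (\<lambda>v. \<not> ?P v) z) = length z" by (rule sum_length_filter_compl)
    moreover have "filter (\<lambda>v. \<not> ?P v) z = filter ((=) ?M) z" by (rule filter_cong) auto
    moreover have "length (filter ((=) ?M) z) = 2" using cz[of ?M] by (simp add: count_list_eq_length_filter)
    ultimately show ?thesis using lz2 by (simp add: w_def)
  qed
  have dw: "distinct w" using cw by (intro distinct_count) simp
  have sw: "set w = {1..m}"
  proof (rule set_eqI)
    fix c show "c \<in> set w \<longleftrightarrow> c \<in> {1..m}"
      using cw[of c] count_list_0_iff[of w c] by (auto split: if_splits)
  qed
  have entw: "w ! idx la i j = z ! idx mu i j" if "i < length la" "j < la!i" for i j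
  proof -
    have "w ! idx la i j = rows la w ! i ! j" using rows_nth_nth[OF lwla that] by simp
    also have "\<dots> = FR!i!j" using rw that by (simp add: k_def)
    also have "\<dots> = z ! idx mu i j" using ent2[of i j] that lai kle by (simp add: k_def)
    finally show ?thesis .
  qed
  have lamu: "la!i \<le> mu!i" if "i < length la" for i using lai Lle that kle by (simp add: k_def)
  have ssw: "semistd la w"
    unfolding semistd_def
  proof (intro conjI allI impI)
    show "is_partition la" by (rule part_la)
    show "length w = sum_list la" by (rule lwla)
  next
    fix i j j' assume h: "i < length la \<and> j < j' \<and> j' < la ! i"
    thus "w ! idx la i j \<le> w ! idx la i j'"
      using entw[of i j] entw[of i j'] row[of i j j'] lamu[of i] kle by (auto simp: k_def)
  next
    fix i i' j assume h: "i < i' \<and> i' < length la \<and> j < la ! i'"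
    have "j < la!i" using is_partition_mono[OF part_la, of i i'] h by simp
    thus "w ! idx la i j < w ! idx la i' j"
      using entw[of i j] entw[of i' j] col[of i i' j] lamu[of i'] h kle by (auto simp: k_def)
  qed
  have st: "standard m (la, w)" unfolding standard_iff using part_la lwla lw dw sw ssw by simp
  define oldrow where "oldrow i = (if i < length la then rows la w ! i else [])" for i
  have old: "oldrow i = FR!i" if "i < length mu" for i
    using rw FRe[of i] that kle by (auto simp: oldrow_def k_def)
  have zrec: "z = word_of_rows (map (\<lambda>i. oldrow i @ replicate (mu ! i - length (oldrow i)) (Suc m)) [0..<length mu])"
  proof -
    have "map (\<lambda>i. oldrow i @ replicate (mu ! i - length (oldrow i)) (Suc m)) [0..<length mu] = rz"
      by (rule nth_equalityI) (use lrz old F1 LFR in auto)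
    thus ?thesis using word_of_rows_rows[OF lz] by (simp add: rz_def)
  qed
  have cin: "cells la \<subseteq> cells mu"
  proof
    fix c assume "c \<in> cells la"
    then obtain a b where "c = (a,b)" "a < length la" "b < la!a" by (auto simp: cells_def)
    thus "c \<in> cells mu" using lamu[of a] kle by (auto simp: cells_def k_def)
  qed
  have cdiff: "cells mu - cells la = {c \<in> cells mu. z ! idx mu (fst c) (snd c) = ?M}"
  proof (rule set_eqI)
    fix c show "c \<in> cells mu - cells la \<longleftrightarrow> c \<in> {c \<in> cells mu. z ! idx mu (fst c) (snd c) = ?M}"
    proof (cases c)
      case (Pair i j)
      have "i < length mu \<Longrightarrow> j < mu!i \<Longrightarrow> (i,j) \<notin> cells la \<longleftrightarrow> \<not> j < L!i"
        using lai Lz kle by (cases "i < k") (auto simp: cells_def k_def)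
      thus ?thesis using Pair ent1[of i j] by (auto simp: cells_def)
    qed
  qed
  have ccard: "card (cells mu - cells la) = 2"
  proof -
    have "filter (\<lambda>v. v = ?M) z = filter ((=) ?M) z" by (rule filter_cong) auto
    thus ?thesis using cdiff card_cells_val[OF lz, of "\<lambda>v. v = ?M"] cz[of ?M]
      by (simp add: count_list_eq_length_filter)
  qed
  have ccol: "\<forall>c \<in> cells mu - cells la. \<forall>d \<in> cells mu - cells la. c \<noteq> d \<longrightarrow> snd c \<noteq> snd d"
  proof (intro ballI impI)
    fix c d assume c: "c \<in> cells mu - cells la" and dd: "d \<in> cells mu - cells la" and ne: "c \<noteq> d"
    obtain i j i' j' where cd: "c = (i,j)" "d = (i',j')" by (cases c, cases d) auto
    show "snd c \<noteq> snd d"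
    proof
      assume "snd c = snd d"
      hence jj: "j' = j" using cd by simp
      have v: "z ! idx mu i j = ?M" "z ! idx mu i' j = ?M" "i < length mu" "j < mu!i" "i' < length mu" "j < mu!i'"
      proof -
        have "c \<in> cells mu \<and> z ! idx mu (fst c) (snd c) = ?M" "d \<in> cells mu \<and> z ! idx mu (fst d) (snd d) = ?M"
          using c dd unfolding cdiff by blast+
        thus "z ! idx mu i j = ?M" "z ! idx mu i' j = ?M" "i < length mu" "j < mu!i" "i' < length mu" "j < mu!i'"
          using cd jj by (auto simp: cells_def)
      qed
      have "i \<noteq> i'" using ne cd jj by simp
      thus False using col[of i i' j] col[of i' i j] v by (cases "i < i'") auto
    qed
  qed
  have "(mu, z) \<in> A_set (la, w)"
    unfolding A_set_def Let_def fst_conv snd_conv lw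
    using zrec part cin ccard ccol unfolding oldrow_def lw by blast
  thus ?thesis using st by blast
qed

definition Fw :: "nat \<Rightarrow> tab \<Rightarrow> tab" where
  "Fw m s = (fst s, tau1 (r1101 (sigma_chain m (snd s))))"

definition inv_word :: "nat \<Rightarrow> nat list \<Rightarrow> nat list" where
  "inv_word m w = filter (\<lambda>v. v \<noteq> Suc m) (fold sigma [1..<Suc m] (map ush w))"

definition f12 :: "nat list \<Rightarrow> nat list" where
  "f12 w = filter (\<lambda>v. v = 1 \<or> v = 2) w"

lemma ush_shift:
  assumes "dbl 1 N x" shows "map ush (tau1 (r1101 x)) = x"
proof -
  have cx: "count_list x v = (if v = 1 then 2 else if 1 \<le> v \<and> v \<le> N then 1 else 0)" for v
    using assms unfolding dbl_def by blast
  have "1 \<in> set x" using cx[of 1] by (metis count_notin zero_neq_numeral)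
  then obtain u v where x: "x = u @ 1 # v" "1 \<notin> set u" using split_list_first by metis
  have n0: "0 \<notin> set x" using cx[of 0] by (simp add: count_list_0_iff)
  have r: "r1101 x = u @ 0 # v" using cx[of 1] x zfo_split unfolding r1101_def by simp
  have "map ush (map Suc l) = l" if "0 \<notin> set l" for l
  proof -
    have "ush (Suc c) = c" if "c \<in> set l" for c
    proof -
      have "c \<noteq> 0" using that \<open>0 \<notin> set l\<close> by metis
      thus ?thesis by (cases c) (simp_all add: ush_def)
    qed
    thus ?thesis by (induction l) auto
  qed
  moreover have "0 \<notin> set u" "0 \<notin> set v" using n0 x by auto
  ultimately show ?thesis using r x by (simp add: tau1_def ush_def)
qed

lemma B0_forward:
  assumes st: "standard m T" and s: "s \<in> A_set T"
  shows "standard (Suc (Suc m)) (Fw m s) \<and> f12 (snd (Fw m s)) = [1,2] \<and>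
         snd T = inv_word m (snd (Fw m s))"
proof -
  obtain la w where T: "T = (la, w)" by (cases T)
  have a: "semistd (fst s) (snd s)" "dbl (Suc m) (Suc m) (snd s)" "filter (\<lambda>v. v \<noteq> Suc m) (snd s) = w"
    using A_forward[of m la w s] st s T by auto
  have c: "semistd (fst s) (sigma_chain m (snd s))" "dbl 1 (Suc m) (sigma_chain m (snd s))"
    using chain_semistd[OF a(1,2)] by auto
  have e: "standard (Suc (Suc m)) (fst s, tau1 (r1101 (sigma_chain m (snd s)))) \<and>
         filter (\<lambda>v. v = 1 \<or> v = 2) (tau1 (r1101 (sigma_chain m (snd s)))) = [1,2]"
    using end_forward[OF c] .
  have "map ush (tau1 (r1101 (sigma_chain m (snd s)))) = sigma_chain m (snd s)"
    using ush_shift[OF c(2)] .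
  hence "inv_word m (tau1 (r1101 (sigma_chain m (snd s)))) = w"
    using chain_inverse2[OF a(2)] a(3) by (simp add: inv_word_def)
  thus ?thesis using e T by (simp add: Fw_def f12_def)
qed

lemma B0_backward:
  assumes st: "standard (Suc (Suc m)) T'" and f: "f12 (snd T') = [1,2]"
  shows "\<exists>T s. standard m T \<and> s \<in> A_set T \<and> T' = Fw m s"
proof -
  obtain la w' where T': "T' = (la, w')" by (cases T')
  let ?x = "map ush w'"
  have b: "semistd la ?x" "dbl 1 (Suc m) ?x" "tau1 (r1101 ?x) = w'"
    using begin_backward[of m la w'] st f T' by (auto simp: f12_def)
  let ?z = "fold sigma [1..<Suc m] ?x"
  have u: "semistd la ?z" "dbl (Suc m) (Suc m) ?z" using unchain_semistd[OF b(1,2)] by auto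
  obtain T where T: "standard m T" "(la, ?z) \<in> A_set T" using A_backward[OF u] by blast
  have "sigma_chain m ?z = ?x" using chain_inverse1[OF b(2)] .
  hence "T' = Fw m (la, ?z)" using b(3) T' by (simp add: Fw_def)
  thus ?thesis using T by blast
qed

lemma length_le_sum_pos: "\<forall>x\<in>set xs. 0 < x \<Longrightarrow> length xs \<le> sum_list (xs::nat list)"
  by (induction xs) auto

lemma finite_partitions_sum: "finite {mu. is_partition mu \<and> sum_list mu = K}"
proof (rule finite_subset)
  show "{mu. is_partition mu \<and> sum_list mu = K} \<subseteq> {xs. set xs \<subseteq> {0..K} \<and> length xs \<le> K}"
    using length_le_sum_pos member_le_sum_list by (fastforce simp: is_partition_def)
  show "finite {xs. set xs \<subseteq> {0..K} \<and> length xs \<le> K}" by (rule finite_lists_length_le) simp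
qed

lemma finite_A_set: "finite (A_set t)"
proof -
  obtain la w where t: "t = (la, w)" by (cases t)
  let ?P = "\<lambda>mu. is_partition mu \<and> cells la \<subseteq> cells mu \<and> card (cells mu - cells la) = 2 \<and>
         (\<forall>c \<in> cells mu - cells la. \<forall>d \<in> cells mu - cells la. c \<noteq> d \<longrightarrow> snd c \<noteq> snd d)"
  have fin: "finite {mu. ?P mu}"
  proof (rule finite_subset[OF _ finite_partitions_sum[of "sum_list la + 2"]])
    show "{mu. ?P mu} \<subseteq> {mu. is_partition mu \<and> sum_list mu = sum_list la + 2}"
    proof
      fix mu assume "mu \<in> {mu. ?P mu}"
      hence p: "?P mu" by simp
      have "card (cells mu - cells la) = card (cells mu) - card (cells la)"
        using card_Diff_subset[OF finite_cells] p by blast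
      moreover have "card (cells la) \<le> card (cells mu)" using card_mono[OF finite_cells] p by blast
      ultimately have "sum_list mu = sum_list la + 2" using p card_cells[of mu] card_cells[of la] by simp
      thus "mu \<in> {mu. is_partition mu \<and> sum_list mu = sum_list la + 2}" using p by simp
    qed
  qed
  have "A_set t \<subseteq> (\<lambda>mu. (mu, word_of_rows (map (\<lambda>i. (if i < length la then rows la w ! i else []) @
            replicate (mu ! i - length (if i < length la then rows la w ! i else [])) (Suc (length w)))
            [0..<length mu]))) ` {mu. ?P mu}"
    unfolding A_set_def Let_def t fst_conv snd_conv by blast
  thus ?thesis using finite_surj[OF fin] by blast
qed

lemma B0_nonneg: "0 \<le> B0 t t'"
  unfolding B0_def by (simp add: sum_nonneg)

lemma B0_ne: "B0 t t' \<noteq> 0 \<longleftrightarrow> (\<exists>s\<in>A_set t. Fw (length (snd t)) s = t')"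
proof -
  have "B0 t t' = (\<Sum>s \<in> A_set t. of_bool (Fw (length (snd t)) s = t'))"
    unfolding B0_def Fw_def by simp
  moreover have "(\<Sum>s \<in> A_set t. (of_bool (Fw (length (snd t)) s = t') :: int)) = 0 \<longleftrightarrow>
      (\<forall>s\<in>A_set t. (of_bool (Fw (length (snd t)) s = t') :: int) = 0)"
    by (rule sum_nonneg_eq_0_iff[OF finite_A_set]) simp
  ultimately show ?thesis by simp
qed

lemma B0_fin: "finite {t'. B0 t t' \<noteq> 0}"
proof (rule finite_subset)
  show "{t'. B0 t t' \<noteq> 0} \<subseteq> Fw (length (snd t)) ` A_set t"
  proof
    fix t' assume "t' \<in> {t'. B0 t t' \<noteq> 0}"
    hence "\<exists>s\<in>A_set t. Fw (length (snd t)) s = t'" by (simp only: B0_ne mem_Collect_eq)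
    thus "t' \<in> Fw (length (snd t)) ` A_set t" by (metis image_eqI)
  qed
  show "finite (Fw (length (snd t)) ` A_set t)" using finite_A_set by simp
qed

lemma lin_nonneg:
  assumes "\<And>t. 0 \<le> c t" "\<And>t t'. 0 \<le> F t t'"
  shows "0 \<le> lin F c t'"
  unfolding lin_def using assms by (simp add: sum_nonneg)

lemma lin_ne:
  assumes fin: "finite {t. c t \<noteq> 0}" and nn: "\<And>t. 0 \<le> c t" "\<And>t t'. 0 \<le> F t t'"
  shows "lin F c t' \<noteq> 0 \<longleftrightarrow> (\<exists>t. c t \<noteq> 0 \<and> F t t' \<noteq> 0)"
proof -
  have "lin F c t' = 0 \<longleftrightarrow> (\<forall>t\<in>{t. c t \<noteq> 0}. c t * F t t' = 0)"
    unfolding lin_def by (rule sum_nonneg_eq_0_iff[OF fin]) (simp add: nn)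
  thus ?thesis by (metis (mono_tags, lifting) mem_Collect_eq mult_eq_0_iff)
qed

lemma lin_fin:
  assumes fin: "finite {t. c t \<noteq> 0}" and fF: "\<And>t. finite {t'. F t t' \<noteq> 0}"
  shows "finite {t'. lin F c t' \<noteq> 0}"
proof (rule finite_subset)
  show "{t'. lin F c t' \<noteq> 0} \<subseteq> (\<Union>t\<in>{t. c t \<noteq> 0}. {t'. F t t' \<noteq> 0})"
  proof
    fix t' assume "t' \<in> {t'. lin F c t' \<noteq> 0}"
    hence "(\<Sum>t \<in> {t. c t \<noteq> 0}. c t * F t t') \<noteq> 0" by (simp add: lin_def)
    then obtain t where "t \<in> {t. c t \<noteq> 0}" "c t * F t t' \<noteq> 0" by (meson sum.neutral)
    thus "t' \<in> (\<Union>t\<in>{t. c t \<noteq> 0}. {t'. F t t' \<noteq> 0})" by (metis (mono_tags, lifting) UN_iff mem_Collect_eq mult_eq_0_iff)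
  qed
  show "finite (\<Union>t\<in>{t. c t \<noteq> 0}. {t'. F t t' \<noteq> 0})" using fin fF by simp
qed

lemma delta_fin: "finite {t'. delta s t' \<noteq> 0}"
proof -
  have "{t'. delta s t' \<noteq> 0} = {s}" by (auto simp: delta_def)
  thus ?thesis by simp
qed

lemma B1_nonneg: "0 \<le> B1 t t'"
  unfolding B1_def by (rule lin_nonneg) (auto simp: B0_nonneg delta_def)

lemma B1_ne: "B1 t t' \<noteq> 0 \<longleftrightarrow> (\<exists>s. B0 (transpose_tab t) s \<noteq> 0 \<and> transpose_tab s = t')"
  unfolding B1_def by (subst lin_ne) (auto simp: B0_fin B0_nonneg delta_def)

lemma B1_fin: "finite {t'. B1 t t' \<noteq> 0}"
  unfolding B1_def by (rule lin_fin) (auto simp: B0_fin delta_fin)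

lemma finite_standard: "finite {t. standard m t}"
proof (rule finite_subset)
  show "{t. standard m t} \<subseteq> {mu. is_partition mu \<and> sum_list mu = m} \<times> {xs. set xs \<subseteq> {0..m} \<and> length xs \<le> m}"
    by (auto simp: standard_iff)
  show "finite ({mu. is_partition mu \<and> sum_list mu = m} \<times> {xs. set xs \<subseteq> {0..m} \<and> length xs \<le> m})"
    using finite_partitions_sum by (auto intro: finite_lists_length_le)
qed

lemma Sigma_fin: "finite {t. Sigma_std m t \<noteq> 0}"
  using finite_standard[of m] by (simp add: Sigma_std_def)

lemma Sigma_ne: "Sigma_std m t \<noteq> 0 \<longleftrightarrow> standard m t" by (simp add: Sigma_std_def)

lemma Sigma_nonneg: "0 \<le> Sigma_std m t" by (simp add: Sigma_std_def)

lemma lin_B0_props: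
  assumes "finite {t. c t \<noteq> 0}" "\<And>t. 0 \<le> c t"
  shows "finite {t'. lin B0 c t' \<noteq> 0}" "\<And>t'. 0 \<le> lin B0 c t'"
    "\<And>t'. lin B0 c t' \<noteq> 0 \<longleftrightarrow> (\<exists>t. c t \<noteq> 0 \<and> B0 t t' \<noteq> 0)"
  using lin_fin[OF assms(1) B0_fin] lin_nonneg[OF assms(2) B0_nonneg] lin_ne[OF assms B0_nonneg] by auto

lemma lin_B1_props:
  assumes "finite {t. c t \<noteq> 0}" "\<And>t. 0 \<le> c t"
  shows "finite {t'. lin B1 c t' \<noteq> 0}" "\<And>t'. 0 \<le> lin B1 c t'"
    "\<And>t'. lin B1 c t' \<noteq> 0 \<longleftrightarrow> (\<exists>t. c t \<noteq> 0 \<and> B1 t t' \<noteq> 0)"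
  using lin_fin[OF assms(1) B1_fin] lin_nonneg[OF assms(2) B1_nonneg] lin_ne[OF assms B1_nonneg] by auto

lemma B0_std_ne:
  assumes "standard m t"
  shows "B0 t t' \<noteq> 0 \<longleftrightarrow> (\<exists>s\<in>A_set t. Fw m s = t')"
  using B0_ne[of t t'] assms by (cases t) (simp add: standard_iff)

lemma supp_B0_Sigma:
  "lin B0 (Sigma_std m) t' \<noteq> 0 \<longleftrightarrow> standard (Suc (Suc m)) t' \<and> f12 (snd t') = [1,2]"
proof -
  have "lin B0 (Sigma_std m) t' \<noteq> 0 \<longleftrightarrow> (\<exists>t. Sigma_std m t \<noteq> 0 \<and> B0 t t' \<noteq> 0)"
    by (rule lin_B0_props(3)[OF Sigma_fin Sigma_nonneg])
  also have "\<dots> \<longleftrightarrow> (\<exists>t. standard m t \<and> (\<exists>s\<in>A_set t. Fw m s = t'))"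
    using B0_std_ne Sigma_ne by metis
  also have "\<dots> \<longleftrightarrow> standard (Suc (Suc m)) t' \<and> f12 (snd t') = [1,2]"
    using B0_forward B0_backward by metis
  finally show ?thesis .
qed

lemma foldr_max_less: "j < foldr max la (0::nat) \<longleftrightarrow> (\<exists>l\<in>set la. j < l)"
  by (induction la) (auto simp: less_max_iff_disj)

lemma is_partition_Cons: "is_partition (l # ls) \<longleftrightarrow> is_partition ls \<and> 0 < l \<and> (\<forall>x\<in>set ls. x \<le> l)"
  unfolding is_partition_def by auto

lemma conj_key:
  "is_partition la \<Longrightarrow> i < length (filter (\<lambda>l. j < l) la) \<longleftrightarrow> i < length la \<and> j < la!i"
proof (induction la arbitrary: i)
  case Nil thus ?case by simp
next
  case (Cons l ls)
  have p: "is_partition ls" "0 < l" "\<forall>x\<in>set ls. x \<le> l" using Cons.prems by (auto simp: is_partition_Cons)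
  show ?case
  proof (cases "j < l")
    case False
    hence "filter (\<lambda>l. j < l) ls = []" using p by (force simp: filter_empty_conv)
    moreover have "\<not> j < (l#ls)!i" if "i < length (l#ls)" for i
    proof (cases i)
      case 0 thus ?thesis using False by simp
    next
      case (Suc k)
      hence "ls!k \<in> set ls" using that by simp
      hence "ls!k \<le> l" using p by blast
      thus ?thesis using False Suc by simp
    qed
    ultimately show ?thesis using False by auto
  next
    case True
    show ?thesis
    proof (cases i)
      case 0 thus ?thesis using True by simp
    next
      case (Suc i')
      thus ?thesis using True Cons.IH[OF p(1), of i'] by simp
    qed
  qed
qed

lemma length_filter_mono':
  "(\<And>x. P x \<Longrightarrow> Q x) \<Longrightarrow> length (filter P xs) \<le> length (filter Q xs)"
  by (induction xs) auto

lemma conj_part_len: "length (conj_part la) = foldr max la 0"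
  by (simp add: conj_part_def)

lemma conj_part_nth: "j < length (conj_part la) \<Longrightarrow> conj_part la ! j = length (filter (\<lambda>l. j < l) la)"
  by (simp add: conj_part_def)

lemma cells_conj:
  assumes p: "is_partition la"
  shows "(j, i) \<in> cells (conj_part la) \<longleftrightarrow> (i, j) \<in> cells la"
proof
  assume "(j, i) \<in> cells (conj_part la)"
  hence "j < length (conj_part la)" "i < conj_part la ! j" by (auto simp: cells_def)
  thus "(i, j) \<in> cells la" using conj_key[OF p] conj_part_nth by (auto simp: cells_def)
next
  assume "(i, j) \<in> cells la"
  hence a: "i < length la" "j < la!i" by (auto simp: cells_def)
  hence "j < length (conj_part la)" using conj_part_len foldr_max_less nth_mem by metis
  thus "(j, i) \<in> cells (conj_part la)" using a conj_key[OF p] conj_part_nth by (auto simp: cells_def)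
qed

lemma conj_part_partition:
  assumes p: "is_partition la" shows "is_partition (conj_part la)"
  unfolding is_partition_def
proof
  show "sorted_wrt (\<lambda>x y. y \<le> x) (conj_part la)"
  proof (rule sorted_wrt_iff_nth_less[THEN iffD2], intro allI impI)
    fix j j' assume h0: "j < j'" "j' < length (conj_part la)"
    hence h: "j < j' \<and> j' < length (conj_part la)" by simp
    have "length (filter (\<lambda>l. j' < l) la) \<le> length (filter (\<lambda>l. j < l) la)"
      by (rule length_filter_mono') (use h in auto)
    thus "conj_part la ! j' \<le> conj_part la ! j" using h conj_part_nth by simp
  qed
  show "\<forall>x\<in>set (conj_part la). 0 < x"
  proof
    fix x assume "x \<in> set (conj_part la)"
    then obtain j where j: "j < length (conj_part la)" "x = conj_part la ! j" by (auto simp: in_set_conv_nth)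
    then obtain l where "l \<in> set la" "j < l" using conj_part_len foldr_max_less by metis
    hence "filter (\<lambda>l. j < l) la \<noteq> []" by (auto simp: filter_empty_conv)
    thus "0 < x" using j conj_part_nth by simp
  qed
qed

lemma partition_cells_eq:
  assumes "is_partition a" "is_partition b" "cells a = cells b"
  shows "a = b"
proof -
  have len: "i < length a \<longleftrightarrow> i < length b" for i
  proof -
    have "i < length a \<longleftrightarrow> (i, 0) \<in> cells a" using is_partition_pos[OF assms(1)] by (auto simp: cells_def)
    moreover have "i < length b \<longleftrightarrow> (i, 0) \<in> cells b" using is_partition_pos[OF assms(2)] by (auto simp: cells_def)
    ultimately show ?thesis using assms(3) by simp
  qed
  hence l: "length a = length b" by (metis linorder_neqE_nat less_irrefl)
  show ?thesis
  proof (rule nth_equalityI[OF l])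
    fix i assume i: "i < length a"
    have "j < a!i \<longleftrightarrow> j < b!i" for j using assms(3) i l by (auto simp: cells_def set_eq_iff)
    thus "a!i = b!i" by (metis linorder_neqE_nat less_irrefl)
  qed
qed

lemma conj_conj:
  assumes p: "is_partition la" shows "conj_part (conj_part la) = la"
proof (rule partition_cells_eq[OF conj_part_partition[OF conj_part_partition[OF p]] p])
  show "cells (conj_part (conj_part la)) = cells la"
    using cells_conj[OF conj_part_partition[OF p]] cells_conj[OF p] by auto
qed

lemma sum_conj:
  assumes p: "is_partition la" shows "sum_list (conj_part la) = sum_list la"
proof -
  have e: "cells (conj_part la) = (\<lambda>(i,j). (j,i)) ` cells la"
  proof (rule set_eqI)
    fix c :: "nat \<times> nat"
    obtain a b where c: "c = (a,b)" by (cases c)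
    have "(a,b) \<in> (\<lambda>(i,j). (j,i)) ` cells la \<longleftrightarrow> (b,a) \<in> cells la" by force
    thus "c \<in> cells (conj_part la) \<longleftrightarrow> c \<in> (\<lambda>(i,j). (j,i)) ` cells la" using cells_conj[OF p, of a b] c by simp
  qed
  have "inj_on (\<lambda>(i,j). (j,i)) (cells la)" by (auto simp: inj_on_def)
  hence "card (cells la) = card (cells (conj_part la))" using e card_image by metis
  thus ?thesis using card_cells by metis
qed

lemma transpose_entries:
  assumes p: "is_partition la" and lw: "length w = sum_list la"
  defines "mu \<equiv> conj_part la"
  shows "fst (transpose_tab (la, w)) = mu"
    "length (snd (transpose_tab (la, w))) = sum_list mu"
    "\<And>i j. i < length mu \<Longrightarrow> j < mu!i \<Longrightarrow> snd (transpose_tab (la, w)) ! idx mu i j = w ! idx la j i"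
proof -
  let ?R = "map (\<lambda>i. map (\<lambda>j. entry (la, w) j i) [0..<mu!i]) [0..<length mu]"
  have tt: "transpose_tab (la, w) = (mu, word_of_rows ?R)" by (simp add: transpose_tab_def mu_def Let_def)
  show "fst (transpose_tab (la, w)) = mu" using tt by simp
  have lR: "length ?R = length mu" "\<forall>i<length mu. length (?R!i) = mu!i" by auto
  have "map length ?R = mu" by (rule nth_equalityI) auto
  hence lz: "length (word_of_rows ?R) = sum_list mu" by (simp add: length_word_of_rows)
  thus "length (snd (transpose_tab (la, w))) = sum_list mu" using tt by simp
  fix i j assume h: "i < length mu" "j < mu!i"
  have "snd (transpose_tab (la, w)) ! idx mu i j = rows mu (word_of_rows ?R) ! i ! j"
    using rows_nth_nth[OF lz h] tt by simp
  also have "\<dots> = entry (la, w) j i" using rows_word_of_rows[OF lR] h by simp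
  also have "\<dots> = w ! idx la j i"
  proof -
    have "(i, j) \<in> cells mu" using h by (simp add: cells_def)
    hence "(j, i) \<in> cells la" using cells_conj[OF p] mu_def
      by (metis cells_conj conj_conj conj_part_partition p)
    thus ?thesis using entry_idx[of "(la, w)" j i] lw by (simp add: cells_def)
  qed
  finally show "snd (transpose_tab (la, w)) ! idx mu i j = w ! idx la j i" .
qed

lemma transpose_standard:
  assumes st: "standard n (la, w)"
  shows "standard n (transpose_tab (la, w))"
proof -
  have p: "is_partition la" and sl: "sum_list la = n" and lw: "length w = n" and dw: "distinct w"
    and sw: "set w = {1..n}" and ss: "semistd la w"
    using st by (auto simp: standard_iff)
  have lwl: "length w = sum_list la" using sl lw by simp
  let ?mu = "conj_part la"
  obtain w' where tt: "transpose_tab (la, w) = (?mu, w')" using transpose_entries(1)[OF p lwl] by (metis prod.collapse)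
  have lw': "length w' = sum_list ?mu" using transpose_entries(2)[OF p lwl] tt by simp
  have ent: "w' ! idx ?mu i j = w ! idx la j i" if "i < length ?mu" "j < ?mu!i" for i j
    using transpose_entries(3)[OF p lwl that] tt by simp
  have pm: "is_partition ?mu" by (rule conj_part_partition[OF p])
  have smu: "sum_list ?mu = n" using sum_conj[OF p] sl by simp
  have cc: "i < length ?mu \<and> j < ?mu!i \<longleftrightarrow> j < length la \<and> i < la!j" for i j
    using cells_conj[OF p, of i j] by (simp add: cells_def)
  have row: "\<And>i j j'. i < length la \<Longrightarrow> j < j' \<Longrightarrow> j' < la!i \<Longrightarrow> w ! idx la i j \<le> w ! idx la i j'"
    and col: "\<And>i i' j. i < i' \<Longrightarrow> i' < length la \<Longrightarrow> j < la!i' \<Longrightarrow> w ! idx la i j < w ! idx la i' j"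
    using ss unfolding semistd_def by blast+
  have wne: "w ! idx la i j \<noteq> w ! idx la i' j'"
    if "i < length la" "j < la!i" "i' < length la" "j' < la!i'" "(i,j) \<noteq> (i',j')" for i j i' j'
  proof -
    have "idx la i j \<noteq> idx la i' j'" using idx_inj[OF that(1-4)] that(5) by auto
    moreover have "idx la i j < length w" "idx la i' j' < length w" using idx_less_sum that lwl by auto
    ultimately show ?thesis using dw by (simp add: nth_eq_iff_index_eq)
  qed
  have pos: "\<exists>i j. i < length ?mu \<and> j < ?mu!i \<and> q = idx ?mu i j" if "q < length w'" for q
    using idx_surj[of q ?mu] that lw' by simp
  have dw': "distinct w'"
  proof (rule distinct_conv_nth[THEN iffD2], intro allI impI)
    fix q q' assume h: "q < length w'" "q' < length w'" "q \<noteq> q'"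
    obtain i j where a: "i < length ?mu" "j < ?mu!i" "q = idx ?mu i j" using pos h by blast
    obtain i' j' where b: "i' < length ?mu" "j' < ?mu!i'" "q' = idx ?mu i' j'" using pos h by blast
    have "(i,j) \<noteq> (i',j')" using a b h by auto
    thus "w'!q \<noteq> w'!q'" using ent a b wne[of j i j' i'] cc by auto
  qed
  have sw': "set w' = set w"
  proof
    show "set w' \<subseteq> set w"
    proof
      fix x assume "x \<in> set w'"
      then obtain q where "q < length w'" "x = w'!q" by (auto simp: in_set_conv_nth)
      then obtain i j where a: "i < length ?mu" "j < ?mu!i" "x = w' ! idx ?mu i j" using pos by blast
      hence "x = w ! idx la j i" "idx la j i < length w" using ent[OF a(1,2)] cc[of i j] idx_less_sum[of j la i] lwl by auto
      thus "x \<in> set w" by simp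
    qed
    show "set w \<subseteq> set w'"
    proof
      fix x assume "x \<in> set w"
      then obtain q where "q < length w" "x = w!q" by (auto simp: in_set_conv_nth)
      then obtain i j where a: "i < length la" "j < la!i" "x = w ! idx la i j" using idx_surj[of q la] lwl by auto
      hence "x = w' ! idx ?mu j i" "idx ?mu j i < length w'" using ent[of j i] cc[of j i] idx_less_sum[of j ?mu i] lw' by auto
      thus "x \<in> set w'" by simp
    qed
  qed
  have "semistd ?mu w'"
    unfolding semistd_def
  proof (intro conjI allI impI)
    show "is_partition ?mu" by (rule pm)
    show "length w' = sum_list ?mu" by (rule lw')
  next
    fix i j j' assume h: "i < length ?mu \<and> j < j' \<and> j' < ?mu ! i"
    have "j < ?mu!i" using h by simp
    hence a: "j < length la" "i < la!j" "j' < length la" "i < la!j'" using cc h by blast+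
    thus "w' ! idx ?mu i j \<le> w' ! idx ?mu i j'" using ent h col[of j j' i] \<open>j < ?mu!i\<close> by simp
  next
    fix i i' j assume h: "i < i' \<and> i' < length ?mu \<and> j < ?mu ! i'"
    have hi: "i < length ?mu" "j < ?mu!i" using is_partition_mono[OF pm, of i i'] h by auto
    have a: "j < length la" "i' < la!j" using cc h by blast+
    have "w ! idx la j i \<le> w ! idx la j i'" using row[of j i i'] a h by simp
    moreover have "w ! idx la j i \<noteq> w ! idx la j i'" using wne[of j i j i'] a h by simp
    ultimately show "w' ! idx ?mu i j < w' ! idx ?mu i' j" using ent hi h by simp
  qed
  hence "standard n (?mu, w')" unfolding standard_iff using pm smu lw' dw' sw' sw by simp
  thus ?thesis using tt by simp
qed

lemma transpose_entry:
  assumes st: "standard n (la, w)" and c: "j < length la" "i < la!j"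
  shows "entry (transpose_tab (la, w)) i j = entry (la, w) j i"
proof -
  have p: "is_partition la" and lwl: "length w = sum_list la" using st by (auto simp: standard_iff)
  have cc: "i < length (conj_part la)" "j < conj_part la ! i" using cells_conj[OF p, of i j] c by (auto simp: cells_def)
  have "entry (transpose_tab (la, w)) i j = snd (transpose_tab (la, w)) ! idx (conj_part la) i j"
    using entry_idx[of "transpose_tab (la, w)" i j] transpose_entries[OF p lwl] cc by simp
  also have "\<dots> = w ! idx la j i" using transpose_entries(3)[OF p lwl cc] .
  also have "\<dots> = entry (la, w) j i" using entry_idx[of "(la, w)" j i] lwl c by simp
  finally show ?thesis .
qed

lemma transpose_cells:
  assumes "standard n (la, w)"
  shows "(i, j) \<in> cells (fst (transpose_tab (la, w))) \<longleftrightarrow> (j, i) \<in> cells la"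
  using cells_conj[of la] assms transpose_entries(1)[of la w] by (auto simp: standard_iff)

lemma transpose_invol:
  assumes st: "standard n T" shows "transpose_tab (transpose_tab T) = T"
proof -
  obtain la w where T: "T = (la, w)" by (cases T)
  have p: "is_partition la" and lwl: "length w = sum_list la" using st T by (auto simp: standard_iff)
  let ?mu = "conj_part la"
  obtain w' where tt: "transpose_tab (la, w) = (?mu, w')" using transpose_entries(1)[OF p lwl] by (metis prod.collapse)
  have lw': "length w' = sum_list ?mu" using transpose_entries(2)[OF p lwl] tt by simp
  have pm: "is_partition ?mu" by (rule conj_part_partition[OF p])
  have cc: "conj_part ?mu = la" by (rule conj_conj[OF p])
  obtain w'' where tt2: "transpose_tab (?mu, w') = (la, w'')" using transpose_entries(1)[OF pm lw'] cc by (metis prod.collapse)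
  have lw'': "length w'' = sum_list la" using transpose_entries(2)[OF pm lw'] tt2 cc by simp
  have e1: "w' ! idx ?mu i j = w ! idx la j i" if "i < length ?mu" "j < ?mu!i" for i j
    using transpose_entries(3)[OF p lwl that] tt by simp
  have e2: "w'' ! idx la i j = w' ! idx ?mu j i" if "i < length la" "j < la!i" for i j
    using transpose_entries(3)[OF pm lw', of i j] tt2 cc that by simp
  have ccl: "i < length ?mu \<and> j < ?mu!i \<longleftrightarrow> j < length la \<and> i < la!j" for i j
    using cells_conj[OF p, of i j] by (simp add: cells_def)
  have "w'' = w"
  proof (rule nth_equalityI)
    show "length w'' = length w" using lw'' lwl by simp
    fix q assume "q < length w''"
    then obtain i j where a: "i < length la" "j < la!i" "q = idx la i j" using idx_surj[of q la] lw'' by auto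
    thus "w''!q = w!q" using e2[OF a(1,2)] e1[of j i] ccl[of j i] by simp
  qed
  thus ?thesis using T tt tt2 by simp
qed

lemma filter_positions4:
  assumes d: "distinct w" and q: "q1 < q2" "q2 < q3" "q3 < q4" "q4 < length w"
    and P: "\<And>q. q < length w \<Longrightarrow> P (w!q) \<longleftrightarrow> q = q1 \<or> q = q2 \<or> q = q3 \<or> q = q4"
  shows "filter P w = [w!q1, w!q2, w!q3, w!q4]"
proof -
  have "filter P w = filter P (map (nth w) [0..<length w])" by (simp add: map_nth)
  also have "\<dots> = map (nth w) (filter (\<lambda>q. P (w!q)) [0..<length w])" by (simp add: filter_map o_def)
  also have "filter (\<lambda>q. P (w!q)) [0..<length w] = [q1,q2,q3,q4]"
  proof (rule sorted_distinct_set_unique)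
    show "sorted (filter (\<lambda>q. P (w!q)) [0..<length w])" by (rule sorted_wrt_filter) simp
    show "distinct (filter (\<lambda>q. P (w!q)) [0..<length w])" by simp
    show "sorted [q1,q2,q3,q4]" using q by simp
    show "distinct [q1,q2,q3,q4]" using q by simp
    show "set (filter (\<lambda>q. P (w!q)) [0..<length w]) = set [q1,q2,q3,q4]" using P q by auto
  qed
  finally show ?thesis by simp
qed

lemma pattern4:
  assumes st: "standard n (la, w)"
    and ca: "fst a < length la" "snd a < la ! fst a" and cb: "fst b < length la" "snd b < la ! fst b"
    and cc: "fst c < length la" "snd c < la ! fst c" and cd: "fst d < length la" "snd d < la ! fst d"
    and v: "w ! idx la (fst a) (snd a) = x1" "w ! idx la (fst b) (snd b) = x2"
           "w ! idx la (fst c) (snd c) = x3" "w ! idx la (fst d) (snd d) = x4"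
    and o: "idx la (fst a) (snd a) < idx la (fst b) (snd b)" "idx la (fst b) (snd b) < idx la (fst c) (snd c)"
           "idx la (fst c) (snd c) < idx la (fst d) (snd d)"
    and s: "{x1,x2,x3,x4} = {1,2,3,4}"
  shows "filter (\<lambda>x. 1 \<le> x \<and> x \<le> 4) w = [x1,x2,x3,x4]"
proof -
  have dw: "distinct w" and lw: "length w = sum_list la" and sw: "set w = {1..n}" using st by (auto simp: standard_iff)
  let ?qa = "idx la (fst a) (snd a)" and ?qb = "idx la (fst b) (snd b)"
    and ?qc = "idx la (fst c) (snd c)" and ?qd = "idx la (fst d) (snd d)"
  have ql: "?qd < length w" using idx_less_sum[OF cd] lw by simp
  have qls: "?qa < length w" "?qb < length w" "?qc < length w" using o ql by auto
  have "filter (\<lambda>x. 1 \<le> x \<and> x \<le> 4) w = [w!?qa, w!?qb, w!?qc, w!?qd]"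
  proof (rule filter_positions4[OF dw o ql])
    fix q assume q: "q < length w"
    show "(1 \<le> w!q \<and> w!q \<le> 4) \<longleftrightarrow> q = ?qa \<or> q = ?qb \<or> q = ?qc \<or> q = ?qd"
    proof
      assume "1 \<le> w!q \<and> w!q \<le> 4"
      hence "w!q \<in> {1,2,3,4}" by auto
      hence "w!q = w!?qa \<or> w!q = w!?qb \<or> w!q = w!?qc \<or> w!q = w!?qd" using s v by auto
      thus "q = ?qa \<or> q = ?qb \<or> q = ?qc \<or> q = ?qd" using dw q qls ql by (auto simp: nth_eq_iff_index_eq)
    next
      assume "q = ?qa \<or> q = ?qb \<or> q = ?qc \<or> q = ?qd"
      hence "w!q \<in> {1,2,3,4}" using s v by auto
      thus "1 \<le> w!q \<and> w!q \<le> 4" by auto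
    qed
  qed
  thus ?thesis using v by simp
qed

definition std10 :: "nat list list" where
  "std10 = [[1,2,3,4],[4,1,2,3],[3,1,2,4],[2,1,3,4],[3,4,1,2],[2,4,1,3],[4,3,1,2],[4,2,1,3],[3,2,1,4],[4,3,2,1]]"

definition cfg :: "nat list \<Rightarrow> (nat \<times> nat) list" where
  "cfg p = (if p = [1,2,3,4] then [(0,0),(0,1),(0,2),(0,3)]
     else if p = [4,1,2,3] then [(0,0),(0,1),(0,2),(1,0)]
     else if p = [3,1,2,4] then [(0,0),(0,1),(1,0),(0,2)]
     else if p = [2,1,3,4] then [(0,0),(1,0),(0,1),(0,2)]
     else if p = [3,4,1,2] then [(0,0),(0,1),(1,0),(1,1)]
     else if p = [2,4,1,3] then [(0,0),(1,0),(0,1),(1,1)]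
     else if p = [4,3,1,2] then [(0,0),(0,1),(1,0),(2,0)]
     else if p = [4,2,1,3] then [(0,0),(1,0),(0,1),(2,0)]
     else if p = [3,2,1,4] then [(0,0),(1,0),(2,0),(0,1)]
     else [(0,0),(1,0),(2,0),(3,0)])"

definition cfg_ok :: "nat list \<Rightarrow> nat list \<Rightarrow> nat list \<Rightarrow> bool" where
  "cfg_ok la w p \<longleftrightarrow> (\<forall>k<4. fst (cfg p ! k) < length la \<and> snd (cfg p ! k) < la ! fst (cfg p ! k) \<and>
       w ! idx la (fst (cfg p ! k)) (snd (cfg p ! k)) = Suc k)"

lemma cfg_ok_D:
  assumes "cfg_ok la w p"
  shows "\<And>k. k < 4 \<Longrightarrow> fst (cfg p ! k) < length la \<and> snd (cfg p ! k) < la ! fst (cfg p ! k) \<and>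
       w ! idx la (fst (cfg p ! k)) (snd (cfg p ! k)) = Suc k"
  using assms unfolding cfg_ok_def by blast

lemma cfg_pattern:
  assumes st: "standard n (la, w)" and p: "p \<in> set std10" and ok: "cfg_ok la w p"
  shows "filter (\<lambda>x. 1 \<le> x \<and> x \<le> 4) w = p"
proof -
  note h0 = cfg_ok_D[OF ok, of 0] and h1 = cfg_ok_D[OF ok, of 1]
    and h2 = cfg_ok_D[OF ok, of 2] and h3 = cfg_ok_D[OF ok, of 3]
  have "p = [1,2,3,4] \<or> p = [4,1,2,3] \<or> p = [3,1,2,4] \<or> p = [2,1,3,4] \<or> p = [3,4,1,2] \<or>
        p = [2,4,1,3] \<or> p = [4,3,1,2] \<or> p = [4,2,1,3] \<or> p = [3,2,1,4] \<or> p = [4,3,2,1]"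
    using p by (simp add: std10_def)
  thus ?thesis
  proof (elim disjE)
    assume e: "p = [1,2,3,4]"
    hence c: "cfg p = [(0,0),(0,1),(0,2),(0,3)]" by (simp add: cfg_def)
    show ?thesis unfolding e
      by (rule pattern4[OF st, of "(0,0)" "(0,1)" "(0,2)" "(0,3)"])
         (use h0 h1 h2 h3 c in \<open>auto simp: idx_lt_iff\<close>)
  next
    assume e: "p = [4,1,2,3]"
    hence c: "cfg p = [(0,0),(0,1),(0,2),(1,0)]" by (simp add: cfg_def)
    show ?thesis unfolding e
      by (rule pattern4[OF st, of "(1,0)" "(0,0)" "(0,1)" "(0,2)"])
         (use h0 h1 h2 h3 c in \<open>auto simp: idx_lt_iff\<close>)
  next
    assume e: "p = [3,1,2,4]"
    hence c: "cfg p = [(0,0),(0,1),(1,0),(0,2)]" by (simp add: cfg_def)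
    show ?thesis unfolding e
      by (rule pattern4[OF st, of "(1,0)" "(0,0)" "(0,1)" "(0,2)"])
         (use h0 h1 h2 h3 c in \<open>auto simp: idx_lt_iff\<close>)
  next
    assume e: "p = [2,1,3,4]"
    hence c: "cfg p = [(0,0),(1,0),(0,1),(0,2)]" by (simp add: cfg_def)
    show ?thesis unfolding e
      by (rule pattern4[OF st, of "(1,0)" "(0,0)" "(0,1)" "(0,2)"])
         (use h0 h1 h2 h3 c in \<open>auto simp: idx_lt_iff\<close>)
  next
    assume e: "p = [3,4,1,2]"
    hence c: "cfg p = [(0,0),(0,1),(1,0),(1,1)]" by (simp add: cfg_def)
    show ?thesis unfolding e
      by (rule pattern4[OF st, of "(1,0)" "(1,1)" "(0,0)" "(0,1)"])
         (use h0 h1 h2 h3 c in \<open>auto simp: idx_lt_iff\<close>)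
  next
    assume e: "p = [2,4,1,3]"
    hence c: "cfg p = [(0,0),(1,0),(0,1),(1,1)]" by (simp add: cfg_def)
    show ?thesis unfolding e
      by (rule pattern4[OF st, of "(1,0)" "(1,1)" "(0,0)" "(0,1)"])
         (use h0 h1 h2 h3 c in \<open>auto simp: idx_lt_iff\<close>)
  next
    assume e: "p = [4,3,1,2]"
    hence c: "cfg p = [(0,0),(0,1),(1,0),(2,0)]" by (simp add: cfg_def)
    show ?thesis unfolding e
      by (rule pattern4[OF st, of "(2,0)" "(1,0)" "(0,0)" "(0,1)"])
         (use h0 h1 h2 h3 c in \<open>auto simp: idx_lt_iff\<close>)
  next
    assume e: "p = [4,2,1,3]"
    hence c: "cfg p = [(0,0),(1,0),(0,1),(2,0)]" by (simp add: cfg_def)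
    show ?thesis unfolding e
      by (rule pattern4[OF st, of "(2,0)" "(1,0)" "(0,0)" "(0,1)"])
         (use h0 h1 h2 h3 c in \<open>auto simp: idx_lt_iff\<close>)
  next
    assume e: "p = [3,2,1,4]"
    hence c: "cfg p = [(0,0),(1,0),(2,0),(0,1)]" by (simp add: cfg_def)
    show ?thesis unfolding e
      by (rule pattern4[OF st, of "(2,0)" "(1,0)" "(0,0)" "(0,1)"])
         (use h0 h1 h2 h3 c in \<open>auto simp: idx_lt_iff\<close>)
  next
    assume e: "p = [4,3,2,1]"
    hence c: "cfg p = [(0,0),(1,0),(2,0),(3,0)]" by (simp add: cfg_def)
    show ?thesis unfolding e
      by (rule pattern4[OF st, of "(3,0)" "(2,0)" "(1,0)" "(0,0)"])
         (use h0 h1 h2 h3 c in \<open>auto simp: idx_lt_iff\<close>)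
  qed
qed

lemma config_exists:
  assumes st: "standard n (la, w)" and n4: "4 \<le> n"
  shows "\<exists>p\<in>set std10. cfg_ok la w p"
proof -
  define E where "E c = w ! idx la (fst c) (snd c)" for c :: "nat \<times> nat"
  define cl where "cl c \<longleftrightarrow> fst c < length la \<and> snd c < la ! fst c" for c :: "nat \<times> nat"
  have part: "is_partition la" and lw: "length w = sum_list la" and dw: "distinct w"
    and sw: "set w = {1..n}" and ss: "semistd la w" and ln: "length w = n"
    using st by (auto simp: standard_iff)
  have row: "\<And>i j j'. i < length la \<Longrightarrow> j < j' \<Longrightarrow> j' < la!i \<Longrightarrow> w ! idx la i j \<le> w ! idx la i j'"
    and col: "\<And>i i' j. i < i' \<Longrightarrow> i' < length la \<Longrightarrow> j < la!i' \<Longrightarrow> w ! idx la i j < w ! idx la i' j"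
    using ss unfolding semistd_def by blast+
  have inj: "a = b" if "cl a" "cl b" "E a = E b" for a b
  proof -
    have "idx la (fst a) (snd a) < length w" "idx la (fst b) (snd b) < length w"
      using that idx_less_sum lw by (auto simp: cl_def)
    hence "idx la (fst a) (snd a) = idx la (fst b) (snd b)"
      using that dw by (simp add: E_def nth_eq_iff_index_eq)
    thus ?thesis using idx_inj[of "fst a" la "snd a" "fst b" "snd b"] that by (auto simp: cl_def prod_eq_iff)
  qed
  have ran: "1 \<le> E a \<and> E a \<le> n" if "cl a" for a
  proof -
    have "idx la (fst a) (snd a) < length w" using that idx_less_sum lw by (auto simp: cl_def)
    hence "E a \<in> set w" by (simp add: E_def)
    thus ?thesis using sw by auto
  qed
  have surj: "\<exists>c. cl c \<and> E c = v" if "1 \<le> v" "v \<le> n" for v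
  proof -
    have "v \<in> set w" using sw that by auto
    then obtain q where q: "q < length w" "w!q = v" by (auto simp: in_set_conv_nth)
    then obtain i j where "i < length la" "j < la!i" "q = idx la i j" using idx_surj[of q la] lw by auto
    thus ?thesis using q by (intro exI[of _ "(i,j)"]) (simp add: cl_def E_def)
  qed
  have mono: "cl (i,j) \<and> E (i,j) < E (r,s)" if "cl (r,s)" "i \<le> r" "j \<le> s" "(i,j) \<noteq> (r,s)" for i j r s
  proof -
    have r: "r < length la" "s < la!r" using that by (auto simp: cl_def)
    have "la!r \<le> la!i" using is_partition_mono[OF part that(2) r(1)] .
    hence ci: "cl (i,j)" "cl (i,s)" using r that by (auto simp: cl_def)
    have "E (i,j) \<le> E (i,s)" using row[of i j s] ci that by (cases "j = s") (auto simp: E_def cl_def)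
    moreover have "E (i,s) \<le> E (r,s)" using col[of i r s] r that by (cases "i = r") (auto simp: E_def cl_def)
    moreover have "E (i,j) \<noteq> E (r,s)" using inj[OF ci(1) that(1)] that(4) by blast
    ultimately show ?thesis using ci by simp
  qed
  define c where "c v = (SOME x. cl x \<and> E x = v)" for v
  have cc: "cl (c v) \<and> E (c v) = v" if "1 \<le> v" "v \<le> n" for v
    using someI_ex[OF surj[OF that]] by (simp add: c_def)
  have sm: "\<exists>k. 1 \<le> k \<and> k < v \<and> c k = (i,j)"
    if "c v = (r,s)" "1 \<le> v" "v \<le> 4" "i \<le> r" "j \<le> s" "(i,j) \<noteq> (r,s)" for v r s i j
  proof -
    have crs: "cl (r,s)" "E (r,s) = v" using cc[of v] that n4 by auto
    have m: "cl (i,j)" "E (i,j) < v" using mono[OF crs(1) that(4,5,6)] crs by auto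
    let ?k = "E (i,j)"
    have "1 \<le> ?k" using ran[OF m(1)] by simp
    moreover have "(i,j) = c ?k" using inj[OF m(1), of "c ?k"] cc[of ?k] \<open>1 \<le> ?k\<close> m n4 that by auto
    ultimately show ?thesis using m by (metis)
  qed
  have cne: "c u \<noteq> c v" if "u \<noteq> v" "1 \<le> u" "u \<le> 4" "1 \<le> v" "v \<le> 4" for u v
    using cc[of u] cc[of v] that n4 by auto
  have c1: "c 1 = (0,0)"
  proof (rule ccontr)
    obtain r s where rs: "c 1 = (r,s)" by (cases "c 1")
    assume "c 1 \<noteq> (0,0)"
    thus False using sm[OF rs, of 0 0] rs by auto
  qed
  have c2: "c 2 = (0,1) \<or> c 2 = (1,0)"
  proof -
    obtain r s where rs: "c 2 = (r,s)" by (cases "c 2")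
    have "(r,s) \<noteq> (0,0)" using cne[of 1 2] c1 rs by auto
    moreover have "\<not> (1 \<le> r \<and> 1 \<le> s)" using sm[OF rs, of 0 1] c1 by (auto simp: less_Suc_eq numeral_eq_Suc)
    moreover have "\<not> 2 \<le> r" using sm[OF rs, of 1 0] c1 by (auto simp: less_Suc_eq numeral_eq_Suc)
    moreover have "\<not> 2 \<le> s" using sm[OF rs, of 0 1] c1 by (auto simp: less_Suc_eq numeral_eq_Suc)
    ultimately show ?thesis using rs by auto
  qed
  have c3: "(c 2 = (0,1) \<and> (c 3 = (0,2) \<or> c 3 = (1,0))) \<or> (c 2 = (1,0) \<and> (c 3 = (0,1) \<or> c 3 = (2,0)))"
  proof -
    obtain r s where rs: "c 3 = (r,s)" by (cases "c 3")
    have ne: "(r,s) \<noteq> (0,0)" "(r,s) \<noteq> c 2" using cne[of 1 3] cne[of 2 3] c1 rs by auto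
    have a1: "\<not> (1 \<le> r \<and> 1 \<le> s)"
    proof
      assume h: "1 \<le> r \<and> 1 \<le> s"
      obtain k where "1 \<le> k" "k < 3" "c k = (0,1)" using sm[OF rs, of 0 1] h by auto
      moreover obtain k' where "1 \<le> k'" "k' < 3" "c k' = (1,0)" using sm[OF rs, of 1 0] h by auto
      ultimately show False using c1 by (auto simp: less_Suc_eq numeral_eq_Suc)
    qed
    have a2: "\<not> 3 \<le> r"
    proof
      assume h: "3 \<le> r"
      obtain k where "1 \<le> k" "k < 3" "c k = (1,0)" using sm[OF rs, of 1 0] h by auto
      moreover obtain k' where "1 \<le> k'" "k' < 3" "c k' = (2,0)" using sm[OF rs, of 2 0] h by auto
      ultimately show False using c1 by (auto simp: less_Suc_eq numeral_eq_Suc)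
    qed
    have a3: "\<not> 3 \<le> s"
    proof
      assume h: "3 \<le> s"
      obtain k where "1 \<le> k" "k < 3" "c k = (0,1)" using sm[OF rs, of 0 1] h by auto
      moreover obtain k' where "1 \<le> k'" "k' < 3" "c k' = (0,2)" using sm[OF rs, of 0 2] h by auto
      ultimately show False using c1 by (auto simp: less_Suc_eq numeral_eq_Suc)
    qed
    have a4: "r = 2 \<Longrightarrow> c 2 = (1,0)"
    proof -
      assume h: "r = 2"
      obtain k where "1 \<le> k" "k < 3" "c k = (1,0)" using sm[OF rs, of 1 0] h by auto
      thus ?thesis using c1 by (auto simp: less_Suc_eq numeral_eq_Suc)
    qed
    have a5: "s = 2 \<Longrightarrow> c 2 = (0,1)"
    proof -
      assume h: "s = 2"
      obtain k where "1 \<le> k" "k < 3" "c k = (0,1)" using sm[OF rs, of 0 1] h by auto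
      thus ?thesis using c1 by (auto simp: less_Suc_eq numeral_eq_Suc)
    qed
    have "r \<in> {0,1,2}" "s \<in> {0,1,2}" using a2 a3 by auto
    thus ?thesis using a1 a4 a5 ne c2 rs by auto
  qed
  obtain r s where rs: "c 4 = (r,s)" by (cases "c 4")
  have ne4: "(r,s) \<noteq> c 1" "(r,s) \<noteq> c 2" "(r,s) \<noteq> c 3" using cne[of 1 4] cne[of 2 4] cne[of 3 4] rs by auto
  have below: "c 1 = (i,j) \<or> c 2 = (i,j) \<or> c 3 = (i,j)" if h: "i \<le> r" "j \<le> s" "(i,j) \<noteq> (r,s)" for i j
  proof -
    obtain k where "1 \<le> k" "k < 4" "c k = (i,j)" using sm[OF rs, of i j] h by auto
    thus ?thesis by (auto simp: less_Suc_eq numeral_eq_Suc)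
  qed
  have b1: "\<not> 4 \<le> r"
  proof
    assume h: "4 \<le> r"
    have "c 1 = (1,0) \<or> c 2 = (1,0) \<or> c 3 = (1,0)" "c 1 = (2,0) \<or> c 2 = (2,0) \<or> c 3 = (2,0)"
      "c 1 = (3,0) \<or> c 2 = (3,0) \<or> c 3 = (3,0)" using below h by auto
    thus False using c1 by auto
  qed
  have b2: "\<not> 4 \<le> s"
  proof
    assume h: "4 \<le> s"
    have "c 1 = (0,1) \<or> c 2 = (0,1) \<or> c 3 = (0,1)" "c 1 = (0,2) \<or> c 2 = (0,2) \<or> c 3 = (0,2)"
      "c 1 = (0,3) \<or> c 2 = (0,3) \<or> c 3 = (0,3)" using below h by auto
    thus False using c1 by auto
  qed
  have rr: "r \<in> {0,1,2,3}" "s \<in> {0,1,2,3}" using b1 b2 by auto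
  have bl: "\<And>i j. i \<le> r \<Longrightarrow> j \<le> s \<Longrightarrow> (i,j) \<noteq> (r,s) \<Longrightarrow> c 1 = (i,j) \<or> c 2 = (i,j) \<or> c 3 = (i,j)"
    using below by blast
  have c4: "(c 2 = (0,1) \<and> c 3 = (0,2) \<and> (c 4 = (0,3) \<or> c 4 = (1,0))) \<or>
            (c 2 = (0,1) \<and> c 3 = (1,0) \<and> (c 4 = (0,2) \<or> c 4 = (1,1) \<or> c 4 = (2,0))) \<or>
            (c 2 = (1,0) \<and> c 3 = (0,1) \<and> (c 4 = (0,2) \<or> c 4 = (1,1) \<or> c 4 = (2,0))) \<or>
            (c 2 = (1,0) \<and> c 3 = (2,0) \<and> (c 4 = (0,1) \<or> c 4 = (3,0)))"
  proof -
    have f10: "1 \<le> r \<Longrightarrow> (1,0) \<noteq> (r,s) \<Longrightarrow> c 1 = (1,0) \<or> c 2 = (1,0) \<or> c 3 = (1,0)" using bl[of 1 0] by simp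
    have f01: "1 \<le> s \<Longrightarrow> (0,1) \<noteq> (r,s) \<Longrightarrow> c 1 = (0,1) \<or> c 2 = (0,1) \<or> c 3 = (0,1)" using bl[of 0 1] by simp
    have f20: "2 \<le> r \<Longrightarrow> (2,0) \<noteq> (r,s) \<Longrightarrow> c 1 = (2,0) \<or> c 2 = (2,0) \<or> c 3 = (2,0)" using bl[of 2 0] by simp
    have f02: "2 \<le> s \<Longrightarrow> (0,2) \<noteq> (r,s) \<Longrightarrow> c 1 = (0,2) \<or> c 2 = (0,2) \<or> c 3 = (0,2)" using bl[of 0 2] by simp
    have f11: "1 \<le> r \<Longrightarrow> 1 \<le> s \<Longrightarrow> (1,1) \<noteq> (r,s) \<Longrightarrow> c 1 = (1,1) \<or> c 2 = (1,1) \<or> c 3 = (1,1)" using bl[of 1 1] by simp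
    have f30: "3 \<le> r \<Longrightarrow> (3,0) \<noteq> (r,s) \<Longrightarrow> c 1 = (3,0) \<or> c 2 = (3,0) \<or> c 3 = (3,0)" using bl[of 3 0] by simp
    have f03: "3 \<le> s \<Longrightarrow> (0,3) \<noteq> (r,s) \<Longrightarrow> c 1 = (0,3) \<or> c 2 = (0,3) \<or> c 3 = (0,3)" using bl[of 0 3] by simp
    from c3 show ?thesis
    proof (elim disjE conjE)
      assume a: "c 2 = (0,1)" "c 3 = (0,2)"
      show ?thesis using rr f10 f01 f20 f02 f11 f30 f03 ne4 a c1 rs by auto
    next
      assume a: "c 2 = (0,1)" "c 3 = (1,0)"
      show ?thesis using rr f10 f01 f20 f02 f11 f30 f03 ne4 a c1 rs by auto
    next
      assume a: "c 2 = (1,0)" "c 3 = (0,1)"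
      show ?thesis using rr f10 f01 f20 f02 f11 f30 f03 ne4 a c1 rs by auto
    next
      assume a: "c 2 = (1,0)" "c 3 = (2,0)"
      show ?thesis using rr f10 f01 f20 f02 f11 f30 f03 ne4 a c1 rs by auto
    qed
  qed
  have ok: "cfg_ok la w p" if "cfg p = [c 1, c 2, c 3, c 4]" for p
    unfolding cfg_ok_def
  proof (intro allI impI)
    fix k :: nat assume k: "k < 4"
    have "cl (c (Suc k)) \<and> E (c (Suc k)) = Suc k" using cc[of "Suc k"] k n4 by simp
    moreover have "cfg p ! k = c (Suc k)" using that k by (auto simp: less_Suc_eq numeral_eq_Suc)
    ultimately show "fst (cfg p ! k) < length la \<and> snd (cfg p ! k) < la ! fst (cfg p ! k) \<and>
       w ! idx la (fst (cfg p ! k)) (snd (cfg p ! k)) = Suc k" by (simp add: cl_def E_def)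
  qed
  have "\<exists>p\<in>set std10. cfg p = [c 1, c 2, c 3, c 4]"
    using c1 c4 by (elim disjE conjE) (simp_all add: std10_def cfg_def)
  thus ?thesis using ok by blast
qed

lemma std_config:
  assumes st: "standard n (la, w)" and n4: "4 \<le> n"
  shows "\<exists>p\<in>set std10. filter (\<lambda>x. 1 \<le> x \<and> x \<le> 4) w = p \<and> cfg_ok la w p"
  using config_exists[OF assms] cfg_pattern[OF st] by blast

lemma std_inj:
  assumes st: "standard n (la, w)" and a: "i < length la" "j < la!i" and b: "i' < length la" "j' < la!i'"
    and e: "w ! idx la i j = w ! idx la i' j'"
  shows "i = i' \<and> j = j'"
proof -
  have lw: "length w = sum_list la" and dw: "distinct w" using st by (auto simp: standard_iff)
  have "idx la i j < length w" "idx la i' j' < length w" using idx_less_sum a b lw by auto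
  hence "idx la i j = idx la i' j'" using e dw by (simp add: nth_eq_iff_index_eq)
  thus ?thesis using idx_inj[OF a b] by simp
qed

lemma std_ran:
  assumes st: "standard n (la, w)" and a: "i < length la" "j < la!i"
  shows "1 \<le> w ! idx la i j \<and> w ! idx la i j \<le> n"
proof -
  have lw: "length w = sum_list la" and sw: "set w = {1..n}" using st by (auto simp: standard_iff)
  have "idx la i j < length w" using idx_less_sum a lw by auto
  hence "w ! idx la i j \<in> set w" by simp
  thus ?thesis using sw by auto
qed

lemma std_surj:
  assumes st: "standard n (la, w)" and v: "1 \<le> v" "v \<le> n"
  shows "\<exists>i j. i < length la \<and> j < la!i \<and> w ! idx la i j = v"
proof -
  have lw: "length w = sum_list la" and sw: "set w = {1..n}" using st by (auto simp: standard_iff)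
  have "v \<in> set w" using sw v by auto
  then obtain q where q: "q < length w" "w!q = v" by (auto simp: in_set_conv_nth)
  then obtain i j where "i < length la" "j < la!i" "q = idx la i j" using idx_surj[of q la] lw by auto
  thus ?thesis using q by blast
qed

lemma std_mono:
  assumes st: "standard n (la, w)" and c: "r < length la" "s < la!r" and le: "i \<le> r" "j \<le> s" "(i,j) \<noteq> (r,s)"
  shows "i < length la \<and> j < la!i \<and> w ! idx la i j < w ! idx la r s"
proof -
  have part: "is_partition la" and ss: "semistd la w" using st by (auto simp: standard_iff)
  have row: "\<And>i j j'. i < length la \<Longrightarrow> j < j' \<Longrightarrow> j' < la!i \<Longrightarrow> w ! idx la i j \<le> w ! idx la i j'"
    and col: "\<And>i i' j. i < i' \<Longrightarrow> i' < length la \<Longrightarrow> j < la!i' \<Longrightarrow> w ! idx la i j < w ! idx la i' j"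
    using ss unfolding semistd_def by blast+
  have "la!r \<le> la!i" using is_partition_mono[OF part le(1) c(1)] .
  hence ci: "i < length la" "j < la!i" "s < la!i" using c le by auto
  have "w ! idx la i j \<le> w ! idx la i s" using row[of i j s] ci le by (cases "j = s") auto
  moreover have "w ! idx la i s \<le> w ! idx la r s" using col[of i r s] c le by (cases "i = r") auto
  moreover have "w ! idx la i j \<noteq> w ! idx la r s" using std_inj[OF st ci(1,2) c] le(3) by auto
  ultimately show ?thesis using ci by simp
qed

lemma filter_positions2:
  assumes d: "distinct w" and q: "q1 < q2" "q2 < length w"
    and P: "\<And>q. q < length w \<Longrightarrow> P (w!q) \<longleftrightarrow> q = q1 \<or> q = q2"
  shows "filter P w = [w!q1, w!q2]"
proof -
  have "filter P w = filter P (map (nth w) [0..<length w])" by (simp add: map_nth)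
  also have "\<dots> = map (nth w) (filter (\<lambda>q. P (w!q)) [0..<length w])" by (simp add: filter_map o_def)
  also have "filter (\<lambda>q. P (w!q)) [0..<length w] = [q1,q2]"
  proof (rule sorted_distinct_set_unique)
    show "sorted (filter (\<lambda>q. P (w!q)) [0..<length w])" by (rule sorted_wrt_filter) simp
    show "distinct (filter (\<lambda>q. P (w!q)) [0..<length w])" by simp
    show "sorted [q1,q2]" using q by simp
    show "distinct [q1,q2]" using q by simp
    show "set (filter (\<lambda>q. P (w!q)) [0..<length w]) = set [q1,q2]" using P q by auto
  qed
  finally show ?thesis by simp
qed

lemma std_two:
  assumes st: "standard n (la, w)" and n2: "2 \<le> n"
  shows "0 < length la \<and> 0 < la!0 \<and> w ! idx la 0 0 = 1 \<and>
    ((1 < la!0 \<and> w ! idx la 0 1 = 2 \<and> f12 w = [1,2]) \<or>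
     (1 < length la \<and> 0 < la!1 \<and> w ! idx la 1 0 = 2 \<and> f12 w = [2,1]))"
proof -
  have dw: "distinct w" and lw: "length w = sum_list la" using st by (auto simp: standard_iff)
  obtain r1 s1 where c1: "r1 < length la" "s1 < la!r1" "w ! idx la r1 s1 = 1" using std_surj[OF st, of 1] n2 by auto
  obtain r2 s2 where c2: "r2 < length la" "s2 < la!r2" "w ! idx la r2 s2 = 2" using std_surj[OF st, of 2] n2 by auto
  have z: "r1 = 0 \<and> s1 = 0"
  proof (rule ccontr)
    assume "\<not> (r1 = 0 \<and> s1 = 0)"
    hence "w ! idx la 0 0 < 1" using std_mono[OF st c1(1,2), of 0 0] c1 by auto
    moreover have "1 \<le> w ! idx la 0 0" using std_mono[OF st c1(1,2), of 0 0] std_ran[OF st] \<open>\<not> (r1 = 0 \<and> s1 = 0)\<close> by auto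
    ultimately show False by simp
  qed
  have c00: "0 < length la" "0 < la!0" "w ! idx la 0 0 = 1" using c1 z by auto
  have sm: "i = 0 \<and> j = 0" if "i \<le> r2" "j \<le> s2" "(i,j) \<noteq> (r2,s2)" for i j
  proof -
    have m: "i < length la" "j < la!i" "w ! idx la i j < 2" using std_mono[OF st c2(1,2) that] c2 by auto
    have "1 \<le> w ! idx la i j" using std_ran[OF st m(1,2)] by simp
    hence "w ! idx la i j = w ! idx la 0 0" using m c00 by simp
    thus ?thesis using std_inj[OF st m(1,2) c00(1,2)] by simp
  qed
  have ne: "(r2,s2) \<noteq> (0,0)"
  proof
    assume "(r2,s2) = (0,0)"
    thus False using c2(3) c00(3) by simp
  qed
  have "\<not> (1 \<le> r2 \<and> 1 \<le> s2)" using sm[of 0 1] by auto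
  moreover have "\<not> 2 \<le> r2" using sm[of 1 0] by auto
  moreover have "\<not> 2 \<le> s2" using sm[of 0 1] by auto
  moreover have "r2 \<noteq> 0 \<or> s2 \<noteq> 0" using ne by auto
  ultimately have "r2 = 0 \<and> s2 = 1 \<or> r2 = 1 \<and> s2 = 0" by arith
  hence "(r2,s2) = (0,1) \<or> (r2,s2) = (1,0)" by auto
  thus ?thesis
  proof
    assume e: "(r2,s2) = (0,1)"
    have "f12 w = [w ! idx la 0 0, w ! idx la 0 1]"
      unfolding f12_def
    proof (rule filter_positions2[OF dw])
      show "idx la 0 0 < idx la 0 1" by (simp add: idx_def)
      show "idx la 0 1 < length w" using idx_less_sum[of 0 la 1] c2 e lw by auto
      fix q assume q: "q < length w"
      have i0: "idx la 0 0 < length w" "idx la 0 1 < length w"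
        using idx_less_sum[of 0 la 0] idx_less_sum[of 0 la 1] c00 c2 e lw by auto
      have u: "w!q = w!q' \<longleftrightarrow> q = q'" if "q' < length w" for q'
        using nth_eq_iff_index_eq[OF dw q that] .
      show "(w!q = 1 \<or> w!q = 2) \<longleftrightarrow> q = idx la 0 0 \<or> q = idx la 0 1"
        using u[OF i0(1)] u[OF i0(2)] c00 c2 e by auto
    qed
    thus ?thesis using c00 c2 e by auto
  next
    assume e: "(r2,s2) = (1,0)"
    have o: "idx la 1 0 < idx la 0 0" using idx_lt_iff[of 1 la 0 0 0] c2 e c00 by simp
    have "f12 w = [w ! idx la 1 0, w ! idx la 0 0]"
      unfolding f12_def
    proof (rule filter_positions2[OF dw o])
      show "idx la 0 0 < length w" using idx_less_sum[of 0 la 0] c00 lw by auto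
      fix q assume q: "q < length w"
      have i0: "idx la 1 0 < length w" "idx la 0 0 < length w"
        using idx_less_sum[of 0 la 0] idx_less_sum[of 1 la 0] c00 c2 e lw by auto
      have u: "w!q = w!q' \<longleftrightarrow> q = q'" if "q' < length w" for q'
        using nth_eq_iff_index_eq[OF dw q that] .
      show "(w!q = 1 \<or> w!q = 2) \<longleftrightarrow> q = idx la 1 0 \<or> q = idx la 0 0"
        using u[OF i0(1)] u[OF i0(2)] c00 c2 e by auto
    qed
    thus ?thesis using c00 c2 e by auto
  qed
qed

lemma flip12:
  assumes st: "standard N S" and N2: "2 \<le> N" and f: "f12 (snd S) = [1,2]"
  shows "f12 (snd (transpose_tab S)) = [2,1]"
proof -
  obtain la w where S: "S = (la, w)" by (cases S)
  have st': "standard N (la, w)" using st S by simp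
  have lw: "length w = sum_list la" using st' by (simp add: standard_iff)
  have a: "1 < la!0" "w ! idx la 0 1 = 2" "0 < length la" using std_two[OF st' N2] f S by auto
  obtain mu v where T: "transpose_tab (la, w) = (mu, v)" by (cases "transpose_tab (la, w)")
  have stt: "standard N (mu, v)" using transpose_standard[OF st'] T by simp
  have lv: "length v = sum_list mu" using stt by (simp add: standard_iff)
  have c10: "1 < length mu" "0 < mu!1"
    using transpose_cells[OF st', of 1 0] T a by (auto simp: cells_def)
  have "entry (mu, v) 1 0 = entry (la, w) 0 1" using transpose_entry[OF st', of 0 1] a T by simp
  hence v10: "v ! idx mu 1 0 = 2" using entry_idx[of "(mu,v)" 1 0] entry_idx[of "(la,w)" 0 1] lv lw a c10 by simp
  have "\<not> (1 < mu!0 \<and> v ! idx mu 0 1 = 2)"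
  proof
    assume h: "1 < mu!0 \<and> v ! idx mu 0 1 = 2"
    have m0: "0 < length mu" using c10(1) by linarith
    have "(1::nat) = 0" using std_inj[of N mu v 1 0 0 1] stt c10 m0 h v10 by auto
    thus False by simp
  qed
  thus ?thesis using std_two[OF stt N2] T S by auto
qed

lemma flip21:
  assumes st: "standard N S" and N2: "2 \<le> N" and f: "f12 (snd S) = [2,1]"
  shows "f12 (snd (transpose_tab S)) = [1,2]"
proof -
  obtain la w where S: "S = (la, w)" by (cases S)
  have st': "standard N (la, w)" using st S by simp
  have lw: "length w = sum_list la" using st' by (simp add: standard_iff)
  have a: "1 < length la" "0 < la!1" "w ! idx la 1 0 = 2" "0 < length la" "0 < la!0" using std_two[OF st' N2] f S by auto
  obtain mu v where T: "transpose_tab (la, w) = (mu, v)" by (cases "transpose_tab (la, w)")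
  have stt: "standard N (mu, v)" using transpose_standard[OF st'] T by simp
  have lv: "length v = sum_list mu" using stt by (simp add: standard_iff)
  have c01: "0 < length mu" "1 < mu!0"
    using transpose_cells[OF st', of 0 1] T a by (auto simp: cells_def)
  have "entry (mu, v) 0 1 = entry (la, w) 1 0" using transpose_entry[OF st', of 1 0] a T by simp
  hence v01: "v ! idx mu 0 1 = 2" using entry_idx[of "(mu,v)" 0 1] entry_idx[of "(la,w)" 1 0] lv lw a c01 by simp
  have "\<not> (1 < length mu \<and> 0 < mu!1 \<and> v ! idx mu 1 0 = 2)"
  proof
    assume h: "1 < length mu \<and> 0 < mu!1 \<and> v ! idx mu 1 0 = 2"
    have "(0::nat) = 1" using std_inj[of N mu v 0 1 1 0] stt c01 h v01 by auto
    thus False by simp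
  qed
  thus ?thesis using std_two[OF stt N2] T S by auto
qed

lemma transpose_standard': "standard n T \<Longrightarrow> standard n (transpose_tab T)"
  using transpose_standard[of n "fst T" "snd T"] by simp

definition flipo :: "nat list \<Rightarrow> nat list" where
  "flipo o' = (if o' = [1,2] then [2,1] else [1,2])"

lemma f12_two: "standard N T \<Longrightarrow> 2 \<le> N \<Longrightarrow> f12 (snd T) = [1,2] \<or> f12 (snd T) = [2,1]"
  using std_two[of N "fst T" "snd T"] by auto

lemma flip_iff:
  assumes st: "standard N T" and N2: "2 \<le> N" and o: "o' = [1,2] \<or> o' = [2,1]"
  shows "f12 (snd (transpose_tab T)) = flipo o' \<longleftrightarrow> f12 (snd T) = o'"
proof -
  consider "f12 (snd T) = [1,2]" | "f12 (snd T) = [2,1]" using f12_two[OF st N2] by blast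
  thus ?thesis
  proof cases
    case 1
    hence "f12 (snd (transpose_tab T)) = [2,1]" using flip12[OF st N2] by simp
    thus ?thesis using 1 o by (auto simp: flipo_def)
  next
    case 2
    hence "f12 (snd (transpose_tab T)) = [1,2]" using flip21[OF st N2] by simp
    thus ?thesis using 2 o by (auto simp: flipo_def)
  qed
qed

lemma supp_B1_Sigma:
  "lin B1 (Sigma_std m) t' \<noteq> 0 \<longleftrightarrow> standard (Suc (Suc m)) t' \<and> f12 (snd t') = [2,1]"
proof -
  have "lin B1 (Sigma_std m) t' \<noteq> 0 \<longleftrightarrow> (\<exists>t. Sigma_std m t \<noteq> 0 \<and> B1 t t' \<noteq> 0)"
    by (rule lin_B1_props(3)[OF Sigma_fin Sigma_nonneg])
  also have "\<dots> \<longleftrightarrow> (\<exists>t. standard m t \<and> (\<exists>s. B0 (transpose_tab t) s \<noteq> 0 \<and> transpose_tab s = t'))"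
    using Sigma_ne B1_ne by metis
  also have "\<dots> \<longleftrightarrow> standard (Suc (Suc m)) t' \<and> f12 (snd t') = [2,1]"
  proof
    assume "\<exists>t. standard m t \<and> (\<exists>s. B0 (transpose_tab t) s \<noteq> 0 \<and> transpose_tab s = t')"
    then obtain t s where t: "standard m t" "B0 (transpose_tab t) s \<noteq> 0" "transpose_tab s = t'" by blast
    have stt: "standard m (transpose_tab t)" using transpose_standard'[OF t(1)] .
    obtain u where u: "u \<in> A_set (transpose_tab t)" "Fw m u = s" using t(2) B0_std_ne[OF stt] by blast
    have s: "standard (Suc (Suc m)) s" "f12 (snd s) = [1,2]" using B0_forward[OF stt u(1)] u(2) by auto
    show "standard (Suc (Suc m)) t' \<and> f12 (snd t') = [2,1]"
      using transpose_standard'[OF s(1)] flip12[OF s(1) _ s(2)] t(3) by auto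
  next
    assume a: "standard (Suc (Suc m)) t' \<and> f12 (snd t') = [2,1]"
    let ?s = "transpose_tab t'"
    have s: "standard (Suc (Suc m)) ?s" "f12 (snd ?s) = [1,2]"
      using transpose_standard'[of _ t'] flip21[of _ t'] a by auto
    obtain T u where Tu: "standard m T" "u \<in> A_set T" "?s = Fw m u" using B0_backward[OF s] by blast
    let ?t = "transpose_tab T"
    have "standard m ?t" using transpose_standard'[OF Tu(1)] .
    moreover have "transpose_tab ?t = T" using transpose_invol[OF Tu(1)] .
    moreover have "B0 T ?s \<noteq> 0"
    proof -
      have "\<exists>s\<in>A_set T. Fw m s = ?s" by (rule bexI[of _ u]) (use Tu(2,3) in simp_all)
      thus ?thesis by (simp only: B0_std_ne[OF Tu(1)])
    qed
    moreover have "transpose_tab ?s = t'" using transpose_invol[of _ t'] a by blast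
    ultimately show "\<exists>t. standard m t \<and> (\<exists>s. B0 (transpose_tab t) s \<noteq> 0 \<and> transpose_tab s = t')" by metis
  qed
  finally show ?thesis .
qed

lemma supp_B0_Sigma':
  "lin B0 (Sigma_std m) t' \<noteq> 0 \<longleftrightarrow> standard (Suc (Suc m)) t' \<and> f12 (snd t') = [1,2]"
  by (rule supp_B0_Sigma)

lemma outer_B0:
  assumes fin: "finite {t. X t \<noteq> 0}" and nn: "\<And>t. 0 \<le> X t"
    and supp: "\<And>t. X t \<noteq> 0 \<longleftrightarrow> standard (Suc (Suc m)) t \<and> f12 (snd t) = o'"
  shows "lin B0 X T' \<noteq> 0 \<longleftrightarrow> f12 (snd T') = [1,2] \<and> standard (Suc (Suc (Suc (Suc m)))) T' \<and>
           f12 (inv_word (Suc (Suc m)) (snd T')) = o'"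
proof -
  have "lin B0 X T' \<noteq> 0 \<longleftrightarrow> (\<exists>t. X t \<noteq> 0 \<and> B0 t T' \<noteq> 0)" by (rule lin_B0_props(3)[OF fin nn])
  also have "\<dots> \<longleftrightarrow> (\<exists>t. standard (Suc (Suc m)) t \<and> f12 (snd t) = o' \<and> (\<exists>s\<in>A_set t. Fw (Suc (Suc m)) s = T'))"
    using supp B0_std_ne by metis
  also have "\<dots> \<longleftrightarrow> f12 (snd T') = [1,2] \<and> standard (Suc (Suc (Suc (Suc m)))) T' \<and>
           f12 (inv_word (Suc (Suc m)) (snd T')) = o'"
  proof
    assume "\<exists>t. standard (Suc (Suc m)) t \<and> f12 (snd t) = o' \<and> (\<exists>s\<in>A_set t. Fw (Suc (Suc m)) s = T')"
    then obtain t s where t: "standard (Suc (Suc m)) t" "f12 (snd t) = o'" "s \<in> A_set t" "Fw (Suc (Suc m)) s = T'" by blast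
    show "f12 (snd T') = [1,2] \<and> standard (Suc (Suc (Suc (Suc m)))) T' \<and> f12 (inv_word (Suc (Suc m)) (snd T')) = o'"
      using B0_forward[OF t(1,3)] t by auto
  next
    assume a: "f12 (snd T') = [1,2] \<and> standard (Suc (Suc (Suc (Suc m)))) T' \<and> f12 (inv_word (Suc (Suc m)) (snd T')) = o'"
    obtain t s where ts: "standard (Suc (Suc m)) t" "s \<in> A_set t" "T' = Fw (Suc (Suc m)) s"
      using B0_backward[of "Suc (Suc m)" T'] a by blast
    have "snd t = inv_word (Suc (Suc m)) (snd T')" using B0_forward[OF ts(1,2)] ts(3) by simp
    hence h1: "f12 (snd t) = o'" using a by simp
    have h2: "\<exists>s'\<in>A_set t. Fw (Suc (Suc m)) s' = T'" by (rule bexI[of _ s]) (use ts in simp_all)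
    show "\<exists>t. standard (Suc (Suc m)) t \<and> f12 (snd t) = o' \<and> (\<exists>s\<in>A_set t. Fw (Suc (Suc m)) s = T')"
      using ts(1) h1 h2 by blast
  qed
  finally show ?thesis .
qed

lemma outer_B1:
  assumes fin: "finite {t. X t \<noteq> 0}" and nn: "\<And>t. 0 \<le> X t"
    and supp: "\<And>t. X t \<noteq> 0 \<longleftrightarrow> standard (Suc (Suc m)) t \<and> f12 (snd t) = o'"
    and o: "o' = [1,2] \<or> o' = [2,1]"
    and st: "standard (Suc (Suc (Suc (Suc m)))) T'"
  shows "lin B1 X T' \<noteq> 0 \<longleftrightarrow> f12 (snd (transpose_tab T')) = [1,2] \<and>
           f12 (inv_word (Suc (Suc m)) (snd (transpose_tab T'))) = flipo o'"
proof -
  let ?V = "transpose_tab T'"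
  have stV: "standard (Suc (Suc (Suc (Suc m)))) ?V" using transpose_standard'[OF st] .
  have VV: "transpose_tab ?V = T'" using transpose_invol[OF st] .
  have "lin B1 X T' \<noteq> 0 \<longleftrightarrow> (\<exists>t. X t \<noteq> 0 \<and> B1 t T' \<noteq> 0)" by (rule lin_B1_props(3)[OF fin nn])
  also have "\<dots> \<longleftrightarrow> (\<exists>t. standard (Suc (Suc m)) t \<and> f12 (snd t) = o' \<and> (\<exists>s. B0 (transpose_tab t) s \<noteq> 0 \<and> transpose_tab s = T'))"
    using supp B1_ne by metis
  also have "\<dots> \<longleftrightarrow> f12 (snd ?V) = [1,2] \<and> f12 (inv_word (Suc (Suc m)) (snd ?V)) = flipo o'"
  proof
    assume "\<exists>t. standard (Suc (Suc m)) t \<and> f12 (snd t) = o' \<and> (\<exists>s. B0 (transpose_tab t) s \<noteq> 0 \<and> transpose_tab s = T')"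
    then obtain t s where t: "standard (Suc (Suc m)) t" "f12 (snd t) = o'" "B0 (transpose_tab t) s \<noteq> 0" "transpose_tab s = T'"
      by blast
    have stt: "standard (Suc (Suc m)) (transpose_tab t)" using transpose_standard'[OF t(1)] .
    obtain u where u: "u \<in> A_set (transpose_tab t)" "Fw (Suc (Suc m)) u = s" using t(3) B0_std_ne[OF stt] by blast
    have fw: "standard (Suc (Suc (Suc (Suc m)))) s" "f12 (snd s) = [1,2]"
      "snd (transpose_tab t) = inv_word (Suc (Suc m)) (snd s)"
      using B0_forward[OF stt u(1)] u(2) by auto
    have sV: "s = ?V" using transpose_invol[OF fw(1)] t(4) by simp
    have "f12 (snd (transpose_tab t)) = flipo o'" using flip_iff[OF t(1) _ o] t(2) by simp
    thus "f12 (snd ?V) = [1,2] \<and> f12 (inv_word (Suc (Suc m)) (snd ?V)) = flipo o'"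
      using fw sV by simp
  next
    assume a: "f12 (snd ?V) = [1,2] \<and> f12 (inv_word (Suc (Suc m)) (snd ?V)) = flipo o'"
    obtain W u where Wu: "standard (Suc (Suc m)) W" "u \<in> A_set W" "?V = Fw (Suc (Suc m)) u"
      using B0_backward[OF stV] a by blast
    have sW: "snd W = inv_word (Suc (Suc m)) (snd ?V)" using B0_forward[OF Wu(1,2)] Wu(3) by simp
    let ?t = "transpose_tab W"
    have stt: "standard (Suc (Suc m)) ?t" using transpose_standard'[OF Wu(1)] .
    have tt: "transpose_tab ?t = W" using transpose_invol[OF Wu(1)] .
    have "f12 (snd (transpose_tab ?t)) = flipo o'" using tt sW a by simp
    hence ft: "f12 (snd ?t) = o'" using flip_iff[OF stt _ o] by simp
    have "B0 W ?V \<noteq> 0"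
    proof -
      have "\<exists>s\<in>A_set W. Fw (Suc (Suc m)) s = ?V" by (rule bexI[of _ u]) (use Wu(2,3) in simp_all)
      thus ?thesis by (simp only: B0_std_ne[OF Wu(1)])
    qed
    thus "\<exists>t. standard (Suc (Suc m)) t \<and> f12 (snd t) = o' \<and> (\<exists>s. B0 (transpose_tab t) s \<noteq> 0 \<and> transpose_tab s = T')"
      using stt ft tt VV by metis
  qed
  finally show ?thesis .
qed

definition gord :: "nat list \<Rightarrow> nat list" where
  "gord p = f12 (sigma 2 (sigma 1 (map ush p)))"

lemma f12_fold_high: "\<forall>a\<in>set as. 3 \<le> a \<Longrightarrow> f12 (fold sigma as y) = f12 y"
proof (induction as arbitrary: y)
  case Nil thus ?case by simp
next
  case (Cons a as)
  have "f12 (sigma a y) = f12 y" unfolding f12_def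
    by (rule filter_sigma_out) (use Cons.prems in auto)
  thus ?case using Cons by (simp add: f12_def)
qed

lemma f12_inv:
  assumes st: "standard (Suc (Suc m)) W" and m2: "2 \<le> m"
  shows "f12 (inv_word m (snd W)) = gord (filter (\<lambda>x. 1 \<le> x \<and> x \<le> 4) (snd W))"
proof -
  let ?w = "snd W"
  have pos: "1 \<le> x" if "x \<in> set ?w" for x using st that by (cases W) (auto simp: standard_iff)
  have e1: "[1..<Suc m] = 1 # 2 # [3..<Suc m]"
  proof -
    have "[1..<Suc m] = 1 # [Suc 1..<Suc m]" by (rule upt_conv_Cons) (use m2 in simp)
    moreover have "[Suc 1..<Suc m] = Suc 1 # [Suc (Suc 1)..<Suc m]" by (rule upt_conv_Cons) (use m2 in simp)
    ultimately show ?thesis by (simp add: numeral_eq_Suc)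
  qed
  have "f12 (inv_word m ?w) = f12 (fold sigma [1..<Suc m] (map ush ?w))"
  proof -
    have "f12 (filter (\<lambda>v. v \<noteq> Suc m) y) = f12 y" for y
      unfolding f12_def by (simp add: filter_filter) (rule filter_cong, use m2 in auto)
    thus ?thesis by (simp add: inv_word_def)
  qed
  also have "\<dots> = f12 (fold sigma [3..<Suc m] (sigma 2 (sigma 1 (map ush ?w))))"
    by (simp only: e1 fold_Cons o_apply)
  also have "\<dots> = f12 (sigma 2 (sigma 1 (map ush ?w)))"
    by (rule f12_fold_high) auto
  also have "\<dots> = f12 (filter (\<lambda>v. v \<le> 3) (sigma 2 (sigma 1 (map ush ?w))))"
    unfolding f12_def by (simp add: filter_filter) (rule filter_cong, auto)
  also have "filter (\<lambda>v. v \<le> 3) (sigma 2 (sigma 1 (map ush ?w))) = sigma 2 (sigma 1 (filter (\<lambda>v. v \<le> 3) (map ush ?w)))"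
  proof -
    have A: "filter (\<lambda>v. v \<le> 3) (sigma 2 y) = sigma 2 (filter (\<lambda>v. v \<le> 3) y)" for y
      by (rule filter_sigma_in) auto
    have B: "filter (\<lambda>v. v \<le> 3) (sigma 1 y) = sigma 1 (filter (\<lambda>v. v \<le> 3) y)" for y
      by (rule filter_sigma_in) auto
    show ?thesis by (simp only: A B)
  qed
  also have "filter (\<lambda>v. v \<le> 3) (map ush ?w) = map ush (filter (\<lambda>x. 1 \<le> x \<and> x \<le> 4) ?w)"
  proof -
    have "filter (\<lambda>v. v \<le> 3) (map ush ?w) = map ush (filter (\<lambda>x. ush x \<le> 3) ?w)" by (simp add: filter_map o_def)
    also have "filter (\<lambda>x. ush x \<le> 3) ?w = filter (\<lambda>x. 1 \<le> x \<and> x \<le> 4) ?w"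
      by (rule filter_cong) (use pos in \<open>auto simp: ush_def\<close>)
    finally show ?thesis .
  qed
  finally show ?thesis by (simp add: gord_def)
qed

lemma cfg_swap:
  assumes st: "standard n (la, w)" and okp: "cfg_ok la w p"
    and tr: "transpose_tab (la, w) = (mu, v)" and okq: "cfg_ok mu v q" and k: "k < 4"
  shows "cfg q ! k = prod.swap (cfg p ! k)"
proof -
  obtain a b where ab: "cfg p ! k = (a,b)" by (cases "cfg p ! k")
  have pa: "a < length la" "b < la!a" "w ! idx la a b = Suc k" using cfg_ok_D[OF okp k] ab by auto
  obtain c d where cd: "cfg q ! k = (c,d)" by (cases "cfg q ! k")
  have qc: "c < length mu" "d < mu!c" "v ! idx mu c d = Suc k" using cfg_ok_D[OF okq k] cd by auto
  have stt: "standard n (mu, v)" using transpose_standard[OF st] tr by simp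
  have lw: "length w = sum_list la" and lv: "length v = sum_list mu" using st stt by (auto simp: standard_iff)
  have cba: "b < length mu" "a < mu!b" using transpose_cells[OF st, of b a] tr pa by (auto simp: cells_def)
  have "entry (mu, v) b a = entry (la, w) a b" using transpose_entry[OF st pa(1,2)] tr by simp
  hence "v ! idx mu b a = Suc k" using entry_idx[of "(mu,v)" b a] entry_idx[of "(la,w)" a b] lv lw pa cba by simp
  hence "c = b \<and> d = a" using std_inj[OF stt qc(1,2) cba] qc(3) by simp
  thus ?thesis using ab cd by simp
qed

lemma std10_cases:
  "p \<in> set std10 \<Longrightarrow> p = [1,2,3,4] \<or> p = [4,1,2,3] \<or> p = [3,1,2,4] \<or> p = [2,1,3,4] \<or> p = [3,4,1,2] \<or> p = [2,4,1,3] \<or> p = [4,3,1,2] \<or> p = [4,2,1,3] \<or> p = [3,2,1,4] \<or> p = [4,3,2,1]"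
  by (simp add: std10_def)

lemma table_ab:
  assumes "p \<in> set std10"
  shows "((f12 p = [1,2] \<and> gord p = [1,2]) \<longleftrightarrow> p \<in> {[1,2,3,4], [4,1,2,3], [3,4,1,2]}) \<and>
    ((f12 p = [1,2] \<and> gord p = [2,1]) \<longleftrightarrow> p \<in> {[4,3,1,2], [3,1,2,4]})"
  using std10_cases[OF assms]
proof (elim disjE)
    assume e: "p = [1,2,3,4]"
    show ?thesis unfolding e by (simp add: gord_def sigma_def sw3_def ush_def f12_def)
  next
    assume e: "p = [4,1,2,3]"
    show ?thesis unfolding e by (simp add: gord_def sigma_def sw3_def ush_def f12_def)
  next
    assume e: "p = [3,1,2,4]"
    show ?thesis unfolding e by (simp add: gord_def sigma_def sw3_def ush_def f12_def)
  next
    assume e: "p = [2,1,3,4]"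
    show ?thesis unfolding e by (simp add: gord_def sigma_def sw3_def ush_def f12_def)
  next
    assume e: "p = [3,4,1,2]"
    show ?thesis unfolding e by (simp add: gord_def sigma_def sw3_def ush_def f12_def)
  next
    assume e: "p = [2,4,1,3]"
    show ?thesis unfolding e by (simp add: gord_def sigma_def sw3_def ush_def f12_def)
  next
    assume e: "p = [4,3,1,2]"
    show ?thesis unfolding e by (simp add: gord_def sigma_def sw3_def ush_def f12_def)
  next
    assume e: "p = [4,2,1,3]"
    show ?thesis unfolding e by (simp add: gord_def sigma_def sw3_def ush_def f12_def)
  next
    assume e: "p = [3,2,1,4]"
    show ?thesis unfolding e by (simp add: gord_def sigma_def sw3_def ush_def f12_def)
  next
    assume e: "p = [4,3,2,1]"
    show ?thesis unfolding e by (simp add: gord_def sigma_def sw3_def ush_def f12_def)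
qed

lemma table_cd:
  assumes p: "p \<in> set std10" and q: "q \<in> set std10"
    and H: "\<And>k. k < 4 \<Longrightarrow> cfg q ! k = prod.swap (cfg p ! k)"
  shows "((f12 q = [1,2] \<and> gord q = [2,1]) \<longleftrightarrow> p \<in> {[4,2,1,3], [2,1,3,4]}) \<and>
    ((f12 q = [1,2] \<and> gord q = [1,2]) \<longleftrightarrow> p \<in> {[4,3,2,1], [3,2,1,4], [2,4,1,3]})"
proof -
  have H4: "cfg q = map prod.swap (cfg p)"
  proof -
    have l: "length (cfg p) = 4" "length (cfg q) = 4" by (simp_all add: cfg_def)
    show ?thesis by (rule nth_equalityI) (use l H in auto)
  qed
  from std10_cases[OF p] show ?thesis
  proof (elim disjE)
    assume e: "p = [1,2,3,4]"
    have "cfg q = map prod.swap (cfg [1,2,3,4])" using H4 e by simp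
    hence "q = [4,3,2,1]" using q by (simp add: cfg_def std10_def split: if_splits)
    thus ?thesis using e by (simp add: gord_def sigma_def sw3_def ush_def f12_def)
  next
    assume e: "p = [4,1,2,3]"
    have "cfg q = map prod.swap (cfg [4,1,2,3])" using H4 e by simp
    hence "q = [3,2,1,4]" using q by (simp add: cfg_def std10_def split: if_splits)
    thus ?thesis using e by (simp add: gord_def sigma_def sw3_def ush_def f12_def)
  next
    assume e: "p = [3,1,2,4]"
    have "cfg q = map prod.swap (cfg [3,1,2,4])" using H4 e by simp
    hence "q = [4,2,1,3]" using q by (simp add: cfg_def std10_def split: if_splits)
    thus ?thesis using e by (simp add: gord_def sigma_def sw3_def ush_def f12_def)
  next
    assume e: "p = [2,1,3,4]"
    have "cfg q = map prod.swap (cfg [2,1,3,4])" using H4 e by simp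
    hence "q = [4,3,1,2]" using q by (simp add: cfg_def std10_def split: if_splits)
    thus ?thesis using e by (simp add: gord_def sigma_def sw3_def ush_def f12_def)
  next
    assume e: "p = [3,4,1,2]"
    have "cfg q = map prod.swap (cfg [3,4,1,2])" using H4 e by simp
    hence "q = [2,4,1,3]" using q by (simp add: cfg_def std10_def split: if_splits)
    thus ?thesis using e by (simp add: gord_def sigma_def sw3_def ush_def f12_def)
  next
    assume e: "p = [2,4,1,3]"
    have "cfg q = map prod.swap (cfg [2,4,1,3])" using H4 e by simp
    hence "q = [3,4,1,2]" using q by (simp add: cfg_def std10_def split: if_splits)
    thus ?thesis using e by (simp add: gord_def sigma_def sw3_def ush_def f12_def)
  next
    assume e: "p = [4,3,1,2]"
    have "cfg q = map prod.swap (cfg [4,3,1,2])" using H4 e by simp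
    hence "q = [2,1,3,4]" using q by (simp add: cfg_def std10_def split: if_splits)
    thus ?thesis using e by (simp add: gord_def sigma_def sw3_def ush_def f12_def)
  next
    assume e: "p = [4,2,1,3]"
    have "cfg q = map prod.swap (cfg [4,2,1,3])" using H4 e by simp
    hence "q = [3,1,2,4]" using q by (simp add: cfg_def std10_def split: if_splits)
    thus ?thesis using e by (simp add: gord_def sigma_def sw3_def ush_def f12_def)
  next
    assume e: "p = [3,2,1,4]"
    have "cfg q = map prod.swap (cfg [3,2,1,4])" using H4 e by simp
    hence "q = [4,1,2,3]" using q by (simp add: cfg_def std10_def split: if_splits)
    thus ?thesis using e by (simp add: gord_def sigma_def sw3_def ush_def f12_def)
  next
    assume e: "p = [4,3,2,1]"
    have "cfg q = map prod.swap (cfg [4,3,2,1])" using H4 e by simp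
    hence "q = [1,2,3,4]" using q by (simp add: cfg_def std10_def split: if_splits)
    thus ?thesis using e by (simp add: gord_def sigma_def sw3_def ush_def f12_def)
  qed
qed

theorem lemma19:
  fixes T' :: tab and n :: nat
  assumes "4 \<le> n" and "standard n T'"
  shows "(lin B0 (lin B0 (Sigma_std (n - 4))) T' \<noteq> 0 \<longleftrightarrow>
            filter (\<lambda>x. 1 \<le> x \<and> x \<le> 4) (snd T') \<in> {[1,2,3,4], [4,1,2,3], [3,4,1,2]}) \<and>
         (lin B0 (lin B1 (Sigma_std (n - 4))) T' \<noteq> 0 \<longleftrightarrow>
            filter (\<lambda>x. 1 \<le> x \<and> x \<le> 4) (snd T') \<in> {[4,3,1,2], [3,1,2,4]}) \<and>
         (lin B1 (lin B0 (Sigma_std (n - 4))) T' \<noteq> 0 \<longleftrightarrow>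
            filter (\<lambda>x. 1 \<le> x \<and> x \<le> 4) (snd T') \<in> {[4,2,1,3], [2,1,3,4]}) \<and>
         (lin B1 (lin B1 (Sigma_std (n - 4))) T' \<noteq> 0 \<longleftrightarrow>
            filter (\<lambda>x. 1 \<le> x \<and> x \<le> 4) (snd T') \<in> {[4,3,2,1], [3,2,1,4], [2,4,1,3]})"
proof -
  define m where "m = n - 4"
  have nm: "n = Suc (Suc (Suc (Suc m)))" using assms(1) by (simp add: m_def)
  have st: "standard (Suc (Suc (Suc (Suc m)))) T'" using assms(2) nm by simp
  let ?X0 = "lin B0 (Sigma_std m)" and ?X1 = "lin B1 (Sigma_std m)"
  have f0: "finite {t. ?X0 t \<noteq> 0}" "\<And>t. 0 \<le> ?X0 t" using lin_B0_props[OF Sigma_fin Sigma_nonneg] by auto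
  have f1: "finite {t. ?X1 t \<noteq> 0}" "\<And>t. 0 \<le> ?X1 t" using lin_B1_props[OF Sigma_fin Sigma_nonneg] by auto
  have s0: "\<And>t. ?X0 t \<noteq> 0 \<longleftrightarrow> standard (Suc (Suc m)) t \<and> f12 (snd t) = [1,2]" by (rule supp_B0_Sigma)
  have s1: "\<And>t. ?X1 t \<noteq> 0 \<longleftrightarrow> standard (Suc (Suc m)) t \<and> f12 (snd t) = [2,1]" by (rule supp_B1_Sigma)
  obtain la w where T': "T' = (la, w)" by (cases T')
  let ?p = "filter (\<lambda>x. 1 \<le> x \<and> x \<le> 4) w"
  have pc: "?p \<in> set std10" "cfg_ok la w ?p" using std_config[of _ la w] st T' by auto
  have f12p: "f12 (snd T') = f12 ?p" using T' unfolding f12_def by (simp add: filter_filter) (rule filter_cong, auto)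
  have gp: "f12 (inv_word (Suc (Suc m)) (snd T')) = gord ?p" using f12_inv[OF st] T' by simp
  let ?V = "transpose_tab T'"
  obtain mu v where V: "?V = (mu, v)" by (cases ?V)
  have stV: "standard (Suc (Suc (Suc (Suc m)))) (mu, v)" using transpose_standard'[OF st] V by simp
  let ?q = "filter (\<lambda>x. 1 \<le> x \<and> x \<le> 4) v"
  have qc: "?q \<in> set std10" "cfg_ok mu v ?q" using std_config[OF stV] by auto
  have f12q: "f12 (snd ?V) = f12 ?q" using V unfolding f12_def by (simp add: filter_filter) (rule filter_cong, auto)
  have gq: "f12 (inv_word (Suc (Suc m)) (snd ?V)) = gord ?q" using f12_inv[OF stV] V by simp
  have H: "cfg ?q ! k = prod.swap (cfg ?p ! k)" if "k < 4" for k
    using cfg_swap[of _ la w ?p mu v ?q k] st T' V pc qc that by simp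
  have a: "lin B0 ?X0 T' \<noteq> 0 \<longleftrightarrow> f12 ?p = [1,2] \<and> gord ?p = [1,2]"
    using outer_B0[OF f0 s0, of T'] st f12p gp by simp
  have b: "lin B0 ?X1 T' \<noteq> 0 \<longleftrightarrow> f12 ?p = [1,2] \<and> gord ?p = [2,1]"
    using outer_B0[OF f1 s1, of T'] st f12p gp by simp
  have c: "lin B1 ?X0 T' \<noteq> 0 \<longleftrightarrow> f12 ?q = [1,2] \<and> gord ?q = [2,1]"
    using outer_B1[OF f0 s0 _ st] f12q gq by (simp add: flipo_def)
  have d: "lin B1 ?X1 T' \<noteq> 0 \<longleftrightarrow> f12 ?q = [1,2] \<and> gord ?q = [1,2]"
    using outer_B1[OF f1 s1 _ st] f12q gq by (simp add: flipo_def)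
  show ?thesis
    unfolding m_def[symmetric] T' snd_conv
    using a b c d table_ab[OF pc(1)] table_cd[OF pc(1) qc(1) H] T' by blast
qed


end
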